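(* Let $\alpha,\beta,\gamma\in\{1,-1\}$, $u_1,\dots,u_4\in\Bbbk^\times$, and let $D(\mathfrak{D}_8)$ act on $B$ as in the context. Then the group-grade component of the homological determinant $\mathrm{hdet}_B$ is trivial (i.e. $\mathrm{hdet}_B(\phi_g)=\delta_{g,e}$), and $$\mathrm{hdet}_B(r)=1,\qquad \mathrm{hdet}_B(s)=\beta\gamma.$$ In particular the homological determinant is trivial if and only if $\beta=\gamma$.
   Context: Let $\Bbbk=\mathbb{C}$, $i=\sqrt{-1}$, $\omega=e^{\pi i/4}$, $\mathfrak{D}_8=\langle r,s\mid r^8=e,\ s^2=r^4,\ rsrs^{-1}=e\rangle$. The Drinfeld double $D(G)$ has basis $\{\phi_gh\}$, multiplication $(\phi_g h)(\phi_{g'}h')=\delta_{g,hg'h^{-1}}\phi_g hh'$, comultiplication $\Delta(\phi_gh)=\sum_x\phi_xh\otimes\phi_{x^{-1}g}h$, counit $\epsilon(\phi_gh)=\delta_{g,e}$. A right $D(G)$-module algebra is a $G$-graded algebra with a right $G$-action by algebra automorphisms with $A_x\cdot g\subseteq A_{g^{-1}xg}$, $\phi_x$ projecting onto $A_x$. The homological determinant $\mathrm{hdet}_B$ of a Hopf action on an AS regular algebra is that of Kirkman–Kuzmanovich–Zhang; for a Koszul AS regular algebra $B$ it is the character by which $D(G)$ acts on the one-dimensional span of the twisted superpotential of $B$. $B$ is the (Koszul, AS regular of dimension 8) quotient of $\Bbbk\langle x_1,x_2,x_3,x_4,y_1,y_2,z_1,z_2\rangle$ by the relations $y_1y_2-\beta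 y_2y_1$, $z_1z_2-\gamma z_2z_1$, $y_1x_1+u_3x_1y_2$, $y_2x_1-u_3x_1y_1$, $y_1x_2-u_3x_2y_2$, $y_2x_2+u_3x_2y_1$, $y_1x_3+u_3x_3y_2$, $y_2x_3-u_3x_3y_1$, $y_1x_4-u_3x_4y_2$, $y_2x_4+u_3x_4y_1$, $z_1x_1+iu_4x_1z_2$, $z_2x_1-u_4x_1z_1$, $z_1x_2-u_4x_2z_2$, $z_2x_2+iu_4x_2z_1$, $z_1x_3-iu_4x_3z_2$, $z_2x_3+u_4x_3z_1$, $z_1x_4+u_4x_4z_2$, $z_2x_4-iu_4x_4z_1$, $z_1y_1-u_2y_1z_1$, $z_2y_1-u_1y_1z_2$, $z_1y_2-u_1y_2z_1$, $z_2y_2-u_2y_2z_2$, $x_1x_3+x_3x_1$, $x_2x_4+x_4x_2$, $x_2x_1-\frac{\alpha}{\sqrt2}(\omega^3x_3x_2+\omega x_1x_4)$, $x_4x_1-\frac{\alpha}{\sqrt2}(\omega x_1x_2+\omega^7x_3x_4)$, $x_2x_3-\frac{\alpha}{\sqrt2}(\omega^3x_1x_2+\omega^5x_3x_4)$, $x_4x_3-\frac{\alpha}{\sqrt2}(\omega^5x_3x_2+\omega^7x_1x_4)$. The $D(\mathfrak{D}_8)$-structure on generators: $y_1$: grade $r^3$, $y_1\cdot r=\omega^2y_1$, $y_1\cdot s=y_2$; $y_2$: grade $r^5$, $y_2\cdot r=\omega^6y_2$, $y_2\cdot s=y_1$; $z_1$: grade $r^3$, $z_1\cdot r=\omega^7z_1$,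 $z_1\cdot s=z_2$; $z_2$: grade $r^5$, $z_2\cdot r=\omega z_2$, $z_2\cdot s=-z_1$; $x_1,x_2,x_3,x_4$ of grades $sr,sr^3,sr^5,sr^7$, with $x_1\cdot r=x_2$, $x_2\cdot r=x_3$, $x_3\cdot r=x_4$, $x_4\cdot r=-x_1$, $x_1\cdot s=ix_4$, $x_2\cdot s=ix_3$, $x_3\cdot s=ix_2$, $x_4\cdot s=ix_1$. *)

theory Defs
  imports Complex_Main
begin

section \<open>The group D_8 = <r,s | r^8 = e, s^2 = r^4, r s r s^-1 = e>\<close>

text \<open>An element (a,b) with a < 8, b < 2 represents r^a s^b.  Using s r = r^-1 s
  and s^2 = r^4 (central) one gets
  (r^a s^b)(r^c s^d) = r^(a +- c + [b=d=1]*4) s^(b+d).\<close>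

type_synonym d8 = "nat \<times> nat"

definition D8 :: "d8 set" where
  "D8 = {0..<8} \<times> {0..<2}"

definition d8_e :: d8 where "d8_e = (0, 0)"
definition d8_r :: d8 where "d8_r = (1, 0)"
definition d8_s :: d8 where "d8_s = (0, 1)"

fun d8_mul :: "d8 \<Rightarrow> d8 \<Rightarrow> d8" where
  "d8_mul (a, b) (c, d) =
     ((a + (if b = 1 then 8 - c mod 8 else c) + (if b = 1 \<and> d = 1 then 4 else 0)) mod 8,
      (b + d) mod 2)"

text \<open>Generators are indexed 0..7:
  x1 = 0, x2 = 1, x3 = 2, x4 = 3, y1 = 4, y2 = 5, z1 = 6, z2 = 7.\<close>

definition omega :: complex where "omega = cis (pi / 4)"

text \<open>G-grades of the generators: x1,...,x4 have grades
  s r = r^7 s, s r^3 = r^5 s, s r^5 = r^3 s, s r^7 = r s;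
  y1, z1 have grade r^3 and y2, z2 have grade r^5.\<close>
definition gen_grade :: "nat \<Rightarrow> d8" where
  "gen_grade j = (if j = 0 then (7,1) else if j = 1 then (5,1) else if j = 2 then (3,1)
     else if j = 3 then (1,1) else if j = 4 then (3,0) else if j = 5 then (5,0)
     else if j = 6 then (3,0) else (5,0))"

text \<open>Right action of r and s on generators as matrices: e_j . g = sum_k M j k e_k.\<close>
definition Mr :: "nat \<Rightarrow> nat \<Rightarrow> complex" where
  "Mr j k = (if j = 0 \<and> k = 1 then 1 else if j = 1 \<and> k = 2 then 1
     else if j = 2 \<and> k = 3 then 1 else if j = 3 \<and> k = 0 then -1
     else if j = 4 \<and> k = 4 then omega ^ 2 else if j = 5 \<and> k = 5 then omega ^ 6
     else if j = 6 \<and> k = 6 then omega ^ 7 else if j = 7 \<and> k = 7 then omega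
     else 0)"

definition Ms :: "nat \<Rightarrow> nat \<Rightarrow> complex" where
  "Ms j k = (if j = 0 \<and> k = 3 then \<i> else if j = 1 \<and> k = 2 then \<i>
     else if j = 2 \<and> k = 1 then \<i> else if j = 3 \<and> k = 0 then \<i>
     else if j = 4 \<and> k = 5 then 1 else if j = 5 \<and> k = 4 then 1
     else if j = 6 \<and> k = 7 then 1 else if j = 7 \<and> k = 6 then -1
     else 0)"

text \<open>An element of V^(tensor n) (V = span of the 8 generators) is a coefficient
  function on words; only words of length n over {0..<8} are relevant.\<close>

definition words :: "nat \<Rightarrow> nat list set" where
  "words n = {xs. length xs = n \<and> set xs \<subseteq> {..<8}}"

text \<open>Diagonal right action of a linear map M on V on tensors
  (coproduct Delta(h) = h tensor h).\<close>
definition tact :: "(nat \<Rightarrow> nat \<Rightarrow> complex) \<Rightarrow> (nat list \<Rightarrow> complex) \<Rightarrow> (nat list \<Rightarrow> complex)" where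
  "tact M t = (\<lambda>ls. if ls \<in> words (length ls)
       then (\<Sum>js\<in>words (length ls). t js * prod_list (map2 M js ls)) else 0)"

fun grp_act :: "d8 \<Rightarrow> (nat list \<Rightarrow> complex) \<Rightarrow> (nat list \<Rightarrow> complex)" where
  "grp_act (a, b) t = (tact Ms ^^ b) ((tact Mr ^^ a) t)"

text \<open>Grade of a word: product of the generator grades, left to right
  (iterated coproduct of phi_g).\<close>
definition word_grade :: "nat list \<Rightarrow> d8" where
  "word_grade ws = foldl d8_mul d8_e (map gen_grade ws)"

definition phi_act :: "d8 \<Rightarrow> (nat list \<Rightarrow> complex) \<Rightarrow> (nat list \<Rightarrow> complex)" where
  "phi_act g t = (\<lambda>ws. if word_grade ws = g then t ws else 0)"

text \<open>Action of the basis element phi_g h of D(D_8): t . (phi_g h) = (t . phi_g) . h.\<close>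
definition DG_act :: "d8 \<times> d8 \<Rightarrow> (nat list \<Rightarrow> complex) \<Rightarrow> (nat list \<Rightarrow> complex)" where
  "DG_act gh t = grp_act (snd gh) (phi_act (fst gh) t)"

text \<open>A quadratic relation as a list of monomials (coefficient, first index, second index).\<close>
definition rel2 :: "(complex \<times> nat \<times> nat) list \<Rightarrow> nat \<Rightarrow> nat \<Rightarrow> complex" where
  "rel2 l x y = sum_list (map (\<lambda>(c, a, b). if a = x \<and> b = y then c else 0) l)"

definition rels :: "complex \<Rightarrow> complex \<Rightarrow> complex \<Rightarrow> complex \<Rightarrow> complex \<Rightarrow> complex \<Rightarrow> complex
    \<Rightarrow> (complex \<times> nat \<times> nat) list list" where
  "rels \<alpha> \<beta> \<gamma> u1 u2 u3 u4 =
    (let a = \<alpha> / complex_of_real (sqrt 2); w = omega in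
    [ [(1,4,5), (-\<beta>,5,4)],
      [(1,6,7), (-\<gamma>,7,6)],
      [(1,4,0), (u3,0,5)],
      [(1,5,0), (-u3,0,4)],
      [(1,4,1), (-u3,1,5)],
      [(1,5,1), (u3,1,4)],
      [(1,4,2), (u3,2,5)],
      [(1,5,2), (-u3,2,4)],
      [(1,4,3), (-u3,3,5)],
      [(1,5,3), (u3,3,4)],
      [(1,6,0), (\<i>*u4,0,7)],
      [(1,7,0), (-u4,0,6)],
      [(1,6,1), (-u4,1,7)],
      [(1,7,1), (\<i>*u4,1,6)],
      [(1,6,2), (-\<i>*u4,2,7)],
      [(1,7,2), (u4,2,6)],
      [(1,6,3), (u4,3,7)],
      [(1,7,3), (-\<i>*u4,3,6)],
      [(1,6,4), (-u2,4,6)],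
      [(1,7,4), (-u1,4,7)],
      [(1,6,5), (-u1,5,6)],
      [(1,7,5), (-u2,5,7)],
      [(1,0,2), (1,2,0)],
      [(1,1,3), (1,3,1)],
      [(1,1,0), (-a*w^3,2,1), (-a*w,0,3)],
      [(1,3,0), (-a*w,0,1), (-a*w^7,2,3)],
      [(1,1,2), (-a*w^3,0,1), (-a*w^5,2,3)],
      [(1,3,2), (-a*w^5,2,1), (-a*w^7,0,3)] ])"

definition in_R :: "(complex \<times> nat \<times> nat) list list \<Rightarrow> (nat \<Rightarrow> nat \<Rightarrow> complex) \<Rightarrow> bool" where
  "in_R R t \<longleftrightarrow> (\<exists>c :: nat \<Rightarrow> complex. \<forall>x<8. \<forall>y<8.
      t x y = (\<Sum>k<length R. c k * rel2 (R ! k) x y))"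

text \<open>The space W_d = intersection over i of V^i (x) R (x) V^(d-2-i) inside V^(x) d;
  for a Koszul AS regular algebra of dimension d it is the one-dimensional span of
  the twisted superpotential.\<close>
definition superpot_space :: "nat \<Rightarrow> (complex \<times> nat \<times> nat) list list \<Rightarrow> (nat list \<Rightarrow> complex) set" where
  "superpot_space d R = {w. (\<forall>xs. w xs \<noteq> 0 \<longrightarrow> xs \<in> words d) \<and>
      (\<forall>i. i + 2 \<le> d \<longrightarrow> (\<forall>p\<in>words i. \<forall>q\<in>words (d - 2 - i).
          in_R R (\<lambda>x y. w (p @ [x, y] @ q))))}"

text \<open>Homological determinant: the scalar by which phi_g h acts on the span of the
  twisted superpotential of B (dimension 8).\<close>
definition hdet :: "complex \<Rightarrow> complex \<Rightarrow> complex \<Rightarrow> complex \<Rightarrow> complex \<Rightarrow> complex \<Rightarrow> complex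
    \<Rightarrow> d8 \<times> d8 \<Rightarrow> complex" where
  "hdet \<alpha> \<beta> \<gamma> u1 u2 u3 u4 gh =
     (THE c. \<forall>w\<in>superpot_space 8 (rels \<alpha> \<beta> \<gamma> u1 u2 u3 u4).
        DG_act gh w = (\<lambda>xs. c * w xs))"

end

theory Submission
  imports Defs
begin


lemma omega_div_sqrt2: "omega / complex_of_real (sqrt 2) = (1 + \<i>) / 2"
proof -
  have "omega = complex_of_real (sqrt 2 / 2) * (1 + \<i>)"
    by (simp add: omega_def cis.ctr complex_eq_iff cos_45 sin_45 real_sqrt_divide)
  moreover have "complex_of_real (sqrt 2) \<noteq> 0" by simp
  ultimately show ?thesis by (simp add: field_simps)
qed

lemma omega_sq: "omega ^ 2 = \<i>"
  by (simp add: omega_def DeMoivre)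

lemma omega_pows: "omega ^ 3 = \<i> * omega" "omega ^ 5 = - omega" "omega ^ 6 = - \<i>"
  "omega ^ 7 = - \<i> * omega" "omega ^ 8 = 1" "omega ^ 4 = -1"
proof -
  have h: "omega ^ 2 = \<i>" by (rule omega_sq)
  have "omega ^ 3 = omega^2 * omega" by (simp add: power_numeral_reduce)
  then show "omega ^ 3 = \<i> * omega" by (simp add: h)
  have "omega ^ 4 = (omega^2)^2" by (simp flip: power_mult)
  then show h4: "omega ^ 4 = -1" by (simp add: h)
  have "omega ^ 5 = omega^4 * omega" by (simp add: power_numeral_reduce)
  then show "omega ^ 5 = - omega" by (simp add: h4)
  have "omega ^ 6 = omega^4 * omega^2" by (simp flip: power_add)
  then show "omega ^ 6 = - \<i>" by (simp add: h4 h)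
  have "omega ^ 7 = omega^4 * omega^3" by (simp flip: power_add)
  moreover have "omega ^ 3 = omega^2 * omega" by (simp add: power_numeral_reduce)
  ultimately show "omega ^ 7 = - \<i> * omega" by (simp add: h4 h)
  have "omega ^ 8 = (omega^4)^2" by (simp flip: power_mult)
  then show "omega ^ 8 = 1" by (simp add: h4)
qed

definition XXeq :: "complex \<Rightarrow> (nat \<Rightarrow> nat \<Rightarrow> complex) \<Rightarrow> bool" where
  "XXeq al t \<longleftrightarrow> t 0 0 = 0 \<and> t 1 1 = 0 \<and> t 2 2 = 0 \<and> t 3 3 = 0 \<and> t 0 2 = t 2 0 \<and> t 1 3 = t 3 1
    \<and> t 2 1 = - (al*(-1+\<i>)/2) * t 1 0 - (al*(-1-\<i>)/2) * t 3 2
    \<and> t 0 3 = - (al*(1+\<i>)/2) * t 1 0 - (al*(1-\<i>)/2) * t 3 2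
    \<and> t 0 1 = - (al*(1+\<i>)/2) * t 3 0 - (al*(-1+\<i>)/2) * t 1 2
    \<and> t 2 3 = - (al*(1-\<i>)/2) * t 3 0 - (al*(-1-\<i>)/2) * t 1 2"

definition OEq :: "complex \<Rightarrow> complex \<Rightarrow> complex \<Rightarrow> complex \<Rightarrow> complex \<Rightarrow> complex \<Rightarrow> (nat \<Rightarrow> nat \<Rightarrow> complex) \<Rightarrow> bool" where
  "OEq be ga u1 u2 u3 u4 t \<longleftrightarrow>
    t 4 4 = 0 \<and> t 5 5 = 0 \<and> t 5 4 = - be * t 4 5 \<and>
    t 6 6 = 0 \<and> t 7 7 = 0 \<and> t 7 6 = - ga * t 6 7 \<and>
    t 0 5 = u3 * t 4 0 \<and> t 0 4 = - u3 * t 5 0 \<and> t 1 5 = - u3 * t 4 1 \<and> t 1 4 = u3 * t 5 1 \<and>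
    t 2 5 = u3 * t 4 2 \<and> t 2 4 = - u3 * t 5 2 \<and> t 3 5 = - u3 * t 4 3 \<and> t 3 4 = u3 * t 5 3 \<and>
    t 0 7 = \<i> * u4 * t 6 0 \<and> t 0 6 = - u4 * t 7 0 \<and> t 1 7 = - u4 * t 6 1 \<and> t 1 6 = \<i> * u4 * t 7 1 \<and>
    t 2 7 = - \<i> * u4 * t 6 2 \<and> t 2 6 = u4 * t 7 2 \<and> t 3 7 = u4 * t 6 3 \<and> t 3 6 = - \<i> * u4 * t 7 3 \<and>
    t 4 6 = - u2 * t 6 4 \<and> t 4 7 = - u1 * t 7 4 \<and> t 5 6 = - u1 * t 6 5 \<and> t 5 7 = - u2 * t 7 5"

definition EQ where "EQ al be ga u1 u2 u3 u4 t \<longleftrightarrow> XXeq al t \<and> OEq be ga u1 u2 u3 u4 t"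

lemma aw_vals: fixes al :: complex shows "al / complex_of_real (sqrt 2) * omega = al*(1+\<i>)/2" "al / complex_of_real (sqrt 2) * omega^3 = al*(-1+\<i>)/2" "al / complex_of_real (sqrt 2) * omega^5 = al*(-1-\<i>)/2" "al / complex_of_real (sqrt 2) * omega^7 = al*(1-\<i>)/2"
proof -
  have w: "omega / complex_of_real (sqrt 2) = (1 + \<i>) / 2" by (rule omega_div_sqrt2)
  have a1 [simp]: "al / complex_of_real (sqrt 2) * omega = al*(1+\<i>)/2"
  proof -
    have "al / complex_of_real (sqrt 2) * omega = al * (omega / complex_of_real (sqrt 2))" by simp
    then show ?thesis using w by simp
  qed
  have a3[simp]: "al / complex_of_real (sqrt 2) * omega^3 = al*(-1+\<i>)/2"
  proof -
    have "al / complex_of_real (sqrt 2) * omega^3 = (al / complex_of_real (sqrt 2) * omega) * \<i>" by (simp add: omega_pows)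
    also have "\<dots> = al*(-1+\<i>)/2" by (simp only: a1) (simp add: field_simps)
    finally show ?thesis .
  qed
  have a5[simp]: "al / complex_of_real (sqrt 2) * omega^5 = al*(-1-\<i>)/2"
  proof -
    have "al / complex_of_real (sqrt 2) * omega^5 = - (al / complex_of_real (sqrt 2) * omega)" by (simp add: omega_pows)
    also have "\<dots> = al*(-1-\<i>)/2" by (simp only: a1) (simp add: field_simps)
    finally show ?thesis .
  qed
  have a7[simp]: "al / complex_of_real (sqrt 2) * omega^7 = al*(1-\<i>)/2"
  proof -
    have "al / complex_of_real (sqrt 2) * omega^7 = - (al / complex_of_real (sqrt 2) * omega) * \<i>" by (simp add: omega_pows)
    also have "\<dots> = al*(1-\<i>)/2" by (simp only: a1) (simp add: field_simps)
    finally show ?thesis .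
  qed
  show "al / complex_of_real (sqrt 2) * omega = al*(1+\<i>)/2" "al / complex_of_real (sqrt 2) * omega^3 = al*(-1+\<i>)/2" "al / complex_of_real (sqrt 2) * omega^5 = al*(-1-\<i>)/2" "al / complex_of_real (sqrt 2) * omega^7 = al*(1-\<i>)/2" by (fact a1 a3 a5 a7)+
qed

lemma aw_vals2: fixes x :: complex shows
  "x * omega * 2 / complex_of_real (sqrt 2) = x*(1+\<i>)"
  "x * omega^3 * 2 / complex_of_real (sqrt 2) = x*(\<i> - 1)"
  "x * omega^5 * 2 / complex_of_real (sqrt 2) = x*(-1-\<i>)"
  "x * omega^7 * 2 / complex_of_real (sqrt 2) = x*(1-\<i>)"
proof -
  have e: "\<And>y. x * y * 2 / complex_of_real (sqrt 2) = 2 * (x / complex_of_real (sqrt 2) * y)" by simp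
  show "x * omega * 2 / complex_of_real (sqrt 2) = x*(1+\<i>)" unfolding e aw_vals by simp
  show "x * omega^3 * 2 / complex_of_real (sqrt 2) = x*(\<i> - 1)" unfolding e aw_vals by simp
  show "x * omega^5 * 2 / complex_of_real (sqrt 2) = x*(-1-\<i>)" unfolding e aw_vals by simp
  show "x * omega^7 * 2 / complex_of_real (sqrt 2) = x*(1-\<i>)" unfolding e aw_vals by simp
qed

lemma rels_simp: "rels al be ga u1 u2 u3 u4 =
    [ [(1,4,5), (-be,5,4)],
      [(1,6,7), (-ga,7,6)],
      [(1,4,0), (u3,0,5)],
      [(1,5,0), (-u3,0,4)],
      [(1,4,1), (-u3,1,5)],
      [(1,5,1), (u3,1,4)],
      [(1,4,2), (u3,2,5)],
      [(1,5,2), (-u3,2,4)],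
      [(1,4,3), (-u3,3,5)],
      [(1,5,3), (u3,3,4)],
      [(1,6,0), (\<i>*u4,0,7)],
      [(1,7,0), (-u4,0,6)],
      [(1,6,1), (-u4,1,7)],
      [(1,7,1), (\<i>*u4,1,6)],
      [(1,6,2), (-\<i>*u4,2,7)],
      [(1,7,2), (u4,2,6)],
      [(1,6,3), (u4,3,7)],
      [(1,7,3), (-\<i>*u4,3,6)],
      [(1,6,4), (-u2,4,6)],
      [(1,7,4), (-u1,4,7)],
      [(1,6,5), (-u1,5,6)],
      [(1,7,5), (-u2,5,7)],
      [(1,0,2), (1,2,0)],
      [(1,1,3), (1,3,1)],
      [(1,1,0), (-(al*(-1+\<i>)/2),2,1), (-(al*(1+\<i>)/2),0,3)],
      [(1,3,0), (-(al*(1+\<i>)/2),0,1), (-(al*(1-\<i>)/2),2,3)],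
      [(1,1,2), (-(al*(-1+\<i>)/2),0,1), (-(al*(-1-\<i>)/2),2,3)],
      [(1,3,2), (-(al*(-1-\<i>)/2),2,1), (-(al*(1-\<i>)/2),0,3)] ]"
proof -
  show ?thesis unfolding rels_def Let_def by (simp add: aw_vals2)
qed


lemma sum_len_Cons: "(\<Sum>k<length (a#L). c k * f ((a#L)!k)) = c 0 * f a + (\<Sum>k<length L. c (Suc k) * f (L!k))"
  unfolding length_Cons sum.lessThan_Suc_shift by simp

lemma sum_len_Nil: "(\<Sum>k<length []. c k * f ([]!k)) = 0" by simp


lemma less8: "(x::nat) < 8 \<longleftrightarrow> x = 0 \<or> x = 1 \<or> x = 2 \<or> x = 3 \<or> x = 4 \<or> x = 5 \<or> x = 6 \<or> x = 7" by auto

lemma in_R_imp_EQ: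
  assumes "in_R (rels al be ga u1 u2 u3 u4) t"
  shows "EQ al be ga u1 u2 u3 u4 t"
proof -
  obtain c where h: "\<And>x y. x < 8 \<Longrightarrow> y < 8 \<Longrightarrow> t x y =
     (\<Sum>k<length (rels al be ga u1 u2 u3 u4). c k * rel2 (rels al be ga u1 u2 u3 u4 ! k) x y)"
    using assms unfolding in_R_def by blast
  show ?thesis unfolding EQ_def XXeq_def OEq_def
    by (simp add: h rels_simp sum_len_Cons rel2_def algebra_simps)
qed

lemma EQ_imp_in_R:
  assumes "EQ al be ga u1 u2 u3 u4 t"
  shows "in_R (rels al be ga u1 u2 u3 u4) t"
proof -
  note e = assms[unfolded EQ_def XXeq_def OEq_def]
  define cl where "cl = [t 4 5, t 6 7, t 4 0, t 5 0, t 4 1, t 5 1, t 4 2, t 5 2, t 4 3, t 5 3,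
     t 6 0, t 7 0, t 6 1, t 7 1, t 6 2, t 7 2, t 6 3, t 7 3, t 6 4, t 7 4, t 6 5, t 7 5,
     t 0 2, t 1 3, t 1 0, t 3 0, t 1 2, t 3 2]"
  have "\<forall>x<8. \<forall>y<8. t x y = (\<Sum>k<length (rels al be ga u1 u2 u3 u4). (\<lambda>k. cl ! k) k * rel2 (rels al be ga u1 u2 u3 u4 ! k) x y)"
    unfolding less8 rels_simp sum_len_Cons sum_len_Nil
    using e by (auto simp: cl_def rel2_def algebra_simps)
  then show ?thesis unfolding in_R_def by blast
qed

lemma in_R_iff: "in_R (rels al be ga u1 u2 u3 u4) t \<longleftrightarrow> EQ al be ga u1 u2 u3 u4 t"
  using in_R_imp_EQ EQ_imp_in_R by blast


definition pr :: "nat \<Rightarrow> nat" where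
  "pr l = (if l = 0 then 3 else if l = 1 then 0 else if l = 2 then 1 else if l = 3 then 2 else l)"
definition ps :: "nat \<Rightarrow> nat" where
  "ps l = (if l = 0 then 3 else if l = 1 then 2 else if l = 2 then 1 else if l = 3 then 0
     else if l = 4 then 5 else if l = 5 then 4 else if l = 6 then 7 else if l = 7 then 6 else l)"

lemma map2_map_self: "map2 f (map g xs) xs = map (\<lambda>x. f (g x) x) xs"
  by (induction xs) auto

lemma prod_list_zero_nth:
  assumes "length js = length ls" "k < length ls" "M (js!k) (ls!k) = (0::complex)"
  shows "prod_list (map2 M js ls) = 0"
proof -
  have "(js!k, ls!k) \<in> set (zip js ls)" using assms by (metis in_set_zip fst_conv snd_conv)
  then have "0 \<in> set (map2 M js ls)" using assms(3) by force
  then show ?thesis by (simp add: prod_list_zero_iff)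
qed

lemma tact_mono:
  assumes pi8: "\<And>l. l < 8 \<Longrightarrow> \<pi> l < 8"
    and mono: "\<And>j l. l < 8 \<Longrightarrow> j < 8 \<Longrightarrow> M j l \<noteq> 0 \<Longrightarrow> j = \<pi> l"
  shows "tact M t ls = (if ls \<in> words (length ls)
      then t (map \<pi> ls) * prod_list (map (\<lambda>l. M (\<pi> l) l) ls) else 0)"
proof (cases "ls \<in> words (length ls)")
  case False then show ?thesis by (simp add: tact_def)
next
  case True
  let ?n = "length ls"
  have lsw: "set ls \<subseteq> {..<8}" using True by (simp add: words_def)
  have mw: "map \<pi> ls \<in> words ?n" using lsw pi8 by (auto simp: words_def)
  have fin: "finite (words ?n)"
  proof -
    have "words ?n \<subseteq> {xs. set xs \<subseteq> {..<8} \<and> length xs = ?n}" by (auto simp: words_def)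
    moreover have "finite {xs. set xs \<subseteq> {..<8::nat} \<and> length xs = ?n}"
      by (rule finite_lists_length_eq) simp
    ultimately show ?thesis by (rule finite_subset)
  qed
  have z: "t js * prod_list (map2 M js ls) = 0" if jw: "js \<in> words ?n" and jn: "js \<noteq> map \<pi> ls" for js
  proof -
    have lj: "length js = ?n" using jw by (simp add: words_def)
    then obtain k where k: "k < ?n" "js ! k \<noteq> \<pi> (ls ! k)"
      using jn by (metis length_map nth_equalityI nth_map)
    have "js ! k < 8" using jw k lj by (auto simp: words_def) (metis lessThan_iff nth_mem subsetD)
    moreover have "ls ! k < 8" using lsw k by (metis lessThan_iff nth_mem subsetD)
    ultimately have "M (js!k) (ls!k) = 0" using mono k(2) by blast
    then show ?thesis using prod_list_zero_nth[OF lj k(1)] by simp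
  qed
  have "(\<Sum>js\<in>words ?n. t js * prod_list (map2 M js ls)) = t (map \<pi> ls) * prod_list (map2 M (map \<pi> ls) ls)"
  proof -
    have "(\<Sum>js\<in>words ?n. t js * prod_list (map2 M js ls)) = t (map \<pi> ls) * prod_list (map2 M (map \<pi> ls) ls)
       + (\<Sum>js\<in>words ?n - {map \<pi> ls}. t js * prod_list (map2 M js ls))"
      using sum.remove[OF fin mw] by blast
    moreover have "(\<Sum>js\<in>words ?n - {map \<pi> ls}. t js * prod_list (map2 M js ls)) = 0"
      using z by (intro sum.neutral) auto
    ultimately show ?thesis by simp
  qed
  then show ?thesis using True by (simp add: tact_def map2_map_self)
qed

lemma tact_Mr: "tact Mr t ls = (if ls \<in> words (length ls)
      then t (map pr ls) * prod_list (map (\<lambda>l. Mr (pr l) l) ls) else 0)"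
  by (rule tact_mono) (auto simp: pr_def Mr_def less8)

lemma tact_Ms: "tact Ms t ls = (if ls \<in> words (length ls)
      then t (map ps ls) * prod_list (map (\<lambda>l. Ms (ps l) l) ls) else 0)"
  by (rule tact_mono) (auto simp: ps_def Ms_def less8 split: if_splits)

lemma EQ_cong: "(\<And>x y. x < 8 \<Longrightarrow> y < 8 \<Longrightarrow> t x y = t' x y) \<Longrightarrow> EQ al be ga u1 u2 u3 u4 t = EQ al be ga u1 u2 u3 u4 t'"
  unfolding EQ_def XXeq_def OEq_def by simp

lemma pm1_cases: "(x::complex) \<in> {1, -1} \<Longrightarrow> (x = 1 \<Longrightarrow> P) \<Longrightarrow> (x = -1 \<Longrightarrow> P) \<Longrightarrow> P" by auto

lemma EQ_r:
  assumes "EQ al be ga u1 u2 u3 u4 t" "al \<in> {1,-1}" "be \<in> {1,-1}" "ga \<in> {1,-1}"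
  shows "EQ al be ga u1 u2 u3 u4 (\<lambda>x y. K * (Mr (pr x) x * Mr (pr y) y) * t (pr x) (pr y))"
proof -
  have c: "al = 1 \<or> al = -1" using assms(2-4) by auto
  show ?thesis using assms(1) c unfolding EQ_def XXeq_def OEq_def
    apply (elim disjE)
     apply (simp_all add: Mr_def pr_def omega_pows omega_sq)
    apply (simp_all add: field_simps)
    done
qed

lemma EQ_s:
  assumes "EQ al be ga u1 u2 u3 u4 t" "al \<in> {1,-1}" "be \<in> {1,-1}" "ga \<in> {1,-1}"
  shows "EQ al be ga u1 u2 u3 u4 (\<lambda>x y. K * (Ms (ps x) x * Ms (ps y) y) * t (ps x) (ps y))"
proof -
  have c: "al = 1 \<or> al = -1" "be = 1 \<or> be = -1" "ga = 1 \<or> ga = -1" using assms(2-4) by auto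
  show ?thesis using assms(1) c unfolding EQ_def XXeq_def OEq_def
    apply (elim disjE)
           apply (simp_all add: Ms_def ps_def)
    apply (simp_all add: field_simps)
    done
qed


lemma d8_mul_D8: "d8_mul x y \<in> D8"
  by (cases x; cases y) (auto simp: D8_def)

lemma D8_cases: "g \<in> D8 \<Longrightarrow> g \<in> {(0,0),(1,0),(2,0),(3,0),(4,0),(5,0),(6,0),(7,0),(0,1),(1,1),(2,1),(3,1),(4,1),(5,1),(6,1),(7,1)}"
  by (cases g) (auto simp: D8_def less8 less_2_cases_iff)

lemma foldl_D8: "a \<in> D8 \<Longrightarrow> foldl d8_mul a L \<in> D8"
  by (induction L arbitrary: a) (auto simp: d8_mul_D8)

lemma grade_pair0: "G \<in> D8 \<Longrightarrow> d8_mul (d8_mul G (gen_grade 1)) (gen_grade 0) = d8_mul (d8_mul G (gen_grade 0)) (gen_grade 3)"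
  apply (drule D8_cases)
  apply (simp add: gen_grade_def)
  apply (elim disjE; simp)?
  done

lemma grade_pair1: "G \<in> D8 \<Longrightarrow> d8_mul (d8_mul G (gen_grade 1)) (gen_grade 2) = d8_mul (d8_mul G (gen_grade 0)) (gen_grade 1)"
  apply (drule D8_cases)
  apply (simp add: gen_grade_def)
  apply (elim disjE; simp)?
  done

lemma grade_pair2: "G \<in> D8 \<Longrightarrow> d8_mul (d8_mul G (gen_grade 2)) (gen_grade 0) = d8_mul (d8_mul G (gen_grade 0)) (gen_grade 2)"
  apply (drule D8_cases)
  apply (simp add: gen_grade_def)
  apply (elim disjE; simp)?
  done

lemma grade_pair3: "G \<in> D8 \<Longrightarrow> d8_mul (d8_mul G (gen_grade 2)) (gen_grade 1) = d8_mul (d8_mul G (gen_grade 0)) (gen_grade 3)"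
  apply (drule D8_cases)
  apply (simp add: gen_grade_def)
  apply (elim disjE; simp)?
  done

lemma grade_pair4: "G \<in> D8 \<Longrightarrow> d8_mul (d8_mul G (gen_grade 2)) (gen_grade 3) = d8_mul (d8_mul G (gen_grade 0)) (gen_grade 1)"
  apply (drule D8_cases)
  apply (simp add: gen_grade_def)
  apply (elim disjE; simp)?
  done

lemma grade_pair5: "G \<in> D8 \<Longrightarrow> d8_mul (d8_mul G (gen_grade 3)) (gen_grade 0) = d8_mul (d8_mul G (gen_grade 0)) (gen_grade 1)"
  apply (drule D8_cases)
  apply (simp add: gen_grade_def)
  apply (elim disjE; simp)?
  done

lemma grade_pair6: "G \<in> D8 \<Longrightarrow> d8_mul (d8_mul G (gen_grade 3)) (gen_grade 1) = d8_mul (d8_mul G (gen_grade 1)) (gen_grade 3)"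
  apply (drule D8_cases)
  apply (simp add: gen_grade_def)
  apply (elim disjE; simp)?
  done

lemma grade_pair7: "G \<in> D8 \<Longrightarrow> d8_mul (d8_mul G (gen_grade 3)) (gen_grade 2) = d8_mul (d8_mul G (gen_grade 0)) (gen_grade 3)"
  apply (drule D8_cases)
  apply (simp add: gen_grade_def)
  apply (elim disjE; simp)?
  done

lemma grade_pair8: "G \<in> D8 \<Longrightarrow> d8_mul (d8_mul G (gen_grade 4)) (gen_grade 0) = d8_mul (d8_mul G (gen_grade 0)) (gen_grade 5)"
  apply (drule D8_cases)
  apply (simp add: gen_grade_def)
  apply (elim disjE; simp)?
  done

lemma grade_pair9: "G \<in> D8 \<Longrightarrow> d8_mul (d8_mul G (gen_grade 4)) (gen_grade 1) = d8_mul (d8_mul G (gen_grade 1)) (gen_grade 5)"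
  apply (drule D8_cases)
  apply (simp add: gen_grade_def)
  apply (elim disjE; simp)?
  done

lemma grade_pair10: "G \<in> D8 \<Longrightarrow> d8_mul (d8_mul G (gen_grade 4)) (gen_grade 2) = d8_mul (d8_mul G (gen_grade 2)) (gen_grade 5)"
  apply (drule D8_cases)
  apply (simp add: gen_grade_def)
  apply (elim disjE; simp)?
  done

lemma grade_pair11: "G \<in> D8 \<Longrightarrow> d8_mul (d8_mul G (gen_grade 4)) (gen_grade 3) = d8_mul (d8_mul G (gen_grade 3)) (gen_grade 5)"
  apply (drule D8_cases)
  apply (simp add: gen_grade_def)
  apply (elim disjE; simp)?
  done

lemma grade_pair12: "G \<in> D8 \<Longrightarrow> d8_mul (d8_mul G (gen_grade 5)) (gen_grade 0) = d8_mul (d8_mul G (gen_grade 0)) (gen_grade 4)"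
  apply (drule D8_cases)
  apply (simp add: gen_grade_def)
  apply (elim disjE; simp)?
  done

lemma grade_pair13: "G \<in> D8 \<Longrightarrow> d8_mul (d8_mul G (gen_grade 5)) (gen_grade 1) = d8_mul (d8_mul G (gen_grade 1)) (gen_grade 4)"
  apply (drule D8_cases)
  apply (simp add: gen_grade_def)
  apply (elim disjE; simp)?
  done

lemma grade_pair14: "G \<in> D8 \<Longrightarrow> d8_mul (d8_mul G (gen_grade 5)) (gen_grade 2) = d8_mul (d8_mul G (gen_grade 2)) (gen_grade 4)"
  apply (drule D8_cases)
  apply (simp add: gen_grade_def)
  apply (elim disjE; simp)?
  done

lemma grade_pair15: "G \<in> D8 \<Longrightarrow> d8_mul (d8_mul G (gen_grade 5)) (gen_grade 3) = d8_mul (d8_mul G (gen_grade 3)) (gen_grade 4)"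
  apply (drule D8_cases)
  apply (simp add: gen_grade_def)
  apply (elim disjE; simp)?
  done

lemma grade_pair16: "G \<in> D8 \<Longrightarrow> d8_mul (d8_mul G (gen_grade 5)) (gen_grade 4) = d8_mul (d8_mul G (gen_grade 4)) (gen_grade 5)"
  apply (drule D8_cases)
  apply (simp add: gen_grade_def)
  apply (elim disjE; simp)?
  done

lemma grade_pair17: "G \<in> D8 \<Longrightarrow> d8_mul (d8_mul G (gen_grade 6)) (gen_grade 0) = d8_mul (d8_mul G (gen_grade 0)) (gen_grade 7)"
  apply (drule D8_cases)
  apply (simp add: gen_grade_def)
  apply (elim disjE; simp)?
  done

lemma grade_pair18: "G \<in> D8 \<Longrightarrow> d8_mul (d8_mul G (gen_grade 6)) (gen_grade 1) = d8_mul (d8_mul G (gen_grade 1)) (gen_grade 7)"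
  apply (drule D8_cases)
  apply (simp add: gen_grade_def)
  apply (elim disjE; simp)?
  done

lemma grade_pair19: "G \<in> D8 \<Longrightarrow> d8_mul (d8_mul G (gen_grade 6)) (gen_grade 2) = d8_mul (d8_mul G (gen_grade 2)) (gen_grade 7)"
  apply (drule D8_cases)
  apply (simp add: gen_grade_def)
  apply (elim disjE; simp)?
  done

lemma grade_pair20: "G \<in> D8 \<Longrightarrow> d8_mul (d8_mul G (gen_grade 6)) (gen_grade 3) = d8_mul (d8_mul G (gen_grade 3)) (gen_grade 7)"
  apply (drule D8_cases)
  apply (simp add: gen_grade_def)
  apply (elim disjE; simp)?
  done

lemma grade_pair21: "G \<in> D8 \<Longrightarrow> d8_mul (d8_mul G (gen_grade 6)) (gen_grade 4) = d8_mul (d8_mul G (gen_grade 4)) (gen_grade 6)"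
  apply (drule D8_cases)
  apply (simp add: gen_grade_def)
  apply (elim disjE; simp)?
  done

lemma grade_pair22: "G \<in> D8 \<Longrightarrow> d8_mul (d8_mul G (gen_grade 6)) (gen_grade 5) = d8_mul (d8_mul G (gen_grade 5)) (gen_grade 6)"
  apply (drule D8_cases)
  apply (simp add: gen_grade_def)
  apply (elim disjE; simp)?
  done

lemma grade_pair23: "G \<in> D8 \<Longrightarrow> d8_mul (d8_mul G (gen_grade 7)) (gen_grade 0) = d8_mul (d8_mul G (gen_grade 0)) (gen_grade 6)"
  apply (drule D8_cases)
  apply (simp add: gen_grade_def)
  apply (elim disjE; simp)?
  done

lemma grade_pair24: "G \<in> D8 \<Longrightarrow> d8_mul (d8_mul G (gen_grade 7)) (gen_grade 1) = d8_mul (d8_mul G (gen_grade 1)) (gen_grade 6)"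
  apply (drule D8_cases)
  apply (simp add: gen_grade_def)
  apply (elim disjE; simp)?
  done

lemma grade_pair25: "G \<in> D8 \<Longrightarrow> d8_mul (d8_mul G (gen_grade 7)) (gen_grade 2) = d8_mul (d8_mul G (gen_grade 2)) (gen_grade 6)"
  apply (drule D8_cases)
  apply (simp add: gen_grade_def)
  apply (elim disjE; simp)?
  done

lemma grade_pair26: "G \<in> D8 \<Longrightarrow> d8_mul (d8_mul G (gen_grade 7)) (gen_grade 3) = d8_mul (d8_mul G (gen_grade 3)) (gen_grade 6)"
  apply (drule D8_cases)
  apply (simp add: gen_grade_def)
  apply (elim disjE; simp)?
  done

lemma grade_pair27: "G \<in> D8 \<Longrightarrow> d8_mul (d8_mul G (gen_grade 7)) (gen_grade 4) = d8_mul (d8_mul G (gen_grade 4)) (gen_grade 7)"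
  apply (drule D8_cases)
  apply (simp add: gen_grade_def)
  apply (elim disjE; simp)?
  done

lemma grade_pair28: "G \<in> D8 \<Longrightarrow> d8_mul (d8_mul G (gen_grade 7)) (gen_grade 5) = d8_mul (d8_mul G (gen_grade 5)) (gen_grade 7)"
  apply (drule D8_cases)
  apply (simp add: gen_grade_def)
  apply (elim disjE; simp)?
  done

lemma grade_pair29: "G \<in> D8 \<Longrightarrow> d8_mul (d8_mul G (gen_grade 7)) (gen_grade 6) = d8_mul (d8_mul G (gen_grade 6)) (gen_grade 7)"
  apply (drule D8_cases)
  apply (simp add: gen_grade_def)
  apply (elim disjE; simp)?
  done

lemmas grade_pairs = grade_pair0 grade_pair1 grade_pair2 grade_pair3 grade_pair4 grade_pair5 grade_pair6 grade_pair7 grade_pair8 grade_pair9 grade_pair10 grade_pair11 grade_pair12 grade_pair13 grade_pair14 grade_pair15 grade_pair16 grade_pair17 grade_pair18 grade_pair19 grade_pair20 grade_pair21 grade_pair22 grade_pair23 grade_pair24 grade_pair25 grade_pair26 grade_pair27 grade_pair28 grade_pair29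

lemma EQ_grade:
  assumes "EQ al be ga u1 u2 u3 u4 t" "G \<in> D8"
  shows "EQ al be ga u1 u2 u3 u4 (\<lambda>x y. if P (d8_mul (d8_mul G (gen_grade x)) (gen_grade y)) then t x y else 0)"
  using assms(1) unfolding EQ_def XXeq_def OEq_def
  apply (simp only: grade_pairs[OF assms(2)])
  apply (simp split: if_split)
  done

lemma EQ_lin:
  assumes "EQ al be ga u1 u2 u3 u4 t1" "EQ al be ga u1 u2 u3 u4 t2"
  shows "EQ al be ga u1 u2 u3 u4 (\<lambda>x y. t1 x y - c * t2 x y)"
  using assms unfolding EQ_def XXeq_def OEq_def
  apply simp
  apply (simp add: field_simps)
  done

definition Sp where "Sp al be ga u1 u2 u3 u4 w \<longleftrightarrow> (\<forall>xs. w xs \<noteq> 0 \<longrightarrow> xs \<in> words 8) \<and>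
  (\<forall>p q. set p \<subseteq> {..<8} \<longrightarrow> set q \<subseteq> {..<8} \<longrightarrow> length p + length q = 6 \<longrightarrow>
     EQ al be ga u1 u2 u3 u4 (\<lambda>x y. w (p @ [x,y] @ q)))"

lemma S_iff: "w \<in> superpot_space 8 (rels al be ga u1 u2 u3 u4) \<longleftrightarrow> Sp al be ga u1 u2 u3 u4 w"
proof
  assume a: "w \<in> superpot_space 8 (rels al be ga u1 u2 u3 u4)"
  show "Sp al be ga u1 u2 u3 u4 w" unfolding Sp_def
  proof (intro conjI allI impI)
    show "w xs \<noteq> 0 \<Longrightarrow> xs \<in> words 8" for xs using a by (simp add: superpot_space_def)
    fix p q :: "nat list" assume h: "set p \<subseteq> {..<8}" "set q \<subseteq> {..<8}" "length p + length q = 6"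
    have "p \<in> words (length p)" "q \<in> words (8 - 2 - length p)" using h by (auto simp: words_def)
    moreover have "length p + 2 \<le> 8" using h by simp
    ultimately have "in_R (rels al be ga u1 u2 u3 u4) (\<lambda>x y. w (p @ [x, y] @ q))"
      using a unfolding superpot_space_def by blast
    then show "EQ al be ga u1 u2 u3 u4 (\<lambda>x y. w (p @ [x, y] @ q))" by (simp add: in_R_iff)
  qed
next
  assume a: "Sp al be ga u1 u2 u3 u4 w"
  show "w \<in> superpot_space 8 (rels al be ga u1 u2 u3 u4)" unfolding superpot_space_def
  proof (intro CollectI conjI allI impI ballI)
    show "w xs \<noteq> 0 \<Longrightarrow> xs \<in> words 8" for xs using a by (simp add: Sp_def)
    fix i p q assume h: "i + 2 \<le> 8" "p \<in> words i" "q \<in> words (8 - 2 - i)"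
    then have "set p \<subseteq> {..<8}" "set q \<subseteq> {..<8}" "length p + length q = 6" by (auto simp: words_def)
    then show "in_R (rels al be ga u1 u2 u3 u4) (\<lambda>x y. w (p @ [x, y] @ q))"
      using a by (simp add: Sp_def in_R_iff)
  qed
qed

lemma Sp_lin:
  assumes "Sp al be ga u1 u2 u3 u4 w1" "Sp al be ga u1 u2 u3 u4 w2"
  shows "Sp al be ga u1 u2 u3 u4 (\<lambda>xs. w1 xs - c * w2 xs)"
  unfolding Sp_def
proof (intro conjI allI impI)
  fix xs assume "w1 xs - c * w2 xs \<noteq> 0"
  then have "w1 xs \<noteq> 0 \<or> w2 xs \<noteq> 0" by auto
  then show "xs \<in> words 8" using assms unfolding Sp_def by blast
next
  fix p q :: "nat list" assume h: "set p \<subseteq> {..<8}" "set q \<subseteq> {..<8}" "length p + length q = 6"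
  have e1: "EQ al be ga u1 u2 u3 u4 (\<lambda>x y. w1 (p @ [x,y] @ q))" using assms(1) h unfolding Sp_def by blast
  have e2: "EQ al be ga u1 u2 u3 u4 (\<lambda>x y. w2 (p @ [x,y] @ q))" using assms(2) h unfolding Sp_def by blast
  show "EQ al be ga u1 u2 u3 u4 (\<lambda>x y. w1 (p @ [x, y] @ q) - c * w2 (p @ [x, y] @ q))"
    by (rule EQ_lin[OF e1 e2])
qed

lemma words_map:
  assumes "\<And>l. l < 8 \<Longrightarrow> f l < 8" "set p \<subseteq> {..<8}" shows "set (map f p) \<subseteq> {..<8}"
  using assms by auto

lemma Sp_r:
  assumes w: "Sp al be ga u1 u2 u3 u4 w" and pm: "al \<in> {1,-1}" "be \<in> {1,-1}" "ga \<in> {1,-1}"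
  shows "Sp al be ga u1 u2 u3 u4 (tact Mr w)"
  unfolding Sp_def
proof (intro conjI allI impI)
  fix xs assume "tact Mr w xs \<noteq> 0"
  then have "xs \<in> words (length xs)" "w (map pr xs) \<noteq> 0" by (auto simp: tact_Mr split: if_splits)
  then show "xs \<in> words 8" using w by (auto simp: Sp_def words_def)
next
  fix p q :: "nat list" assume h: "set p \<subseteq> {..<8}" "set q \<subseteq> {..<8}" "length p + length q = 6"
  have pr8: "\<And>l. l < 8 \<Longrightarrow> pr l < 8" by (auto simp: pr_def)
  let ?m = "\<lambda>l. Mr (pr l) l"
  let ?K = "prod_list (map ?m p) * prod_list (map ?m q)"
  have "set (map pr p) \<subseteq> {..<8}" "set (map pr q) \<subseteq> {..<8}" using h pr8 by auto
  then have e0: "EQ al be ga u1 u2 u3 u4 (\<lambda>x y. w (map pr p @ [x,y] @ map pr q))"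
    using w h unfolding Sp_def by simp
  have e1: "EQ al be ga u1 u2 u3 u4 (\<lambda>x y. ?K * (?m x * ?m y) * w (map pr p @ [pr x, pr y] @ map pr q))"
    using EQ_r[OF e0 pm] by simp
  show "EQ al be ga u1 u2 u3 u4 (\<lambda>x y. tact Mr w (p @ [x, y] @ q))"
  proof (subst EQ_cong)
    show "tact Mr w (p @ [x, y] @ q) = ?K * (?m x * ?m y) * w (map pr p @ [pr x, pr y] @ map pr q)"
      if "x < 8" "y < 8" for x y using h that by (simp add: tact_Mr words_def algebra_simps)
  qed (rule e1)
qed

lemma Sp_s:
  assumes w: "Sp al be ga u1 u2 u3 u4 w" and pm: "al \<in> {1,-1}" "be \<in> {1,-1}" "ga \<in> {1,-1}"
  shows "Sp al be ga u1 u2 u3 u4 (tact Ms w)"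
  unfolding Sp_def
proof (intro conjI allI impI)
  fix xs assume "tact Ms w xs \<noteq> 0"
  then have "xs \<in> words (length xs)" "w (map ps xs) \<noteq> 0" by (auto simp: tact_Ms split: if_splits)
  then show "xs \<in> words 8" using w by (auto simp: Sp_def words_def)
next
  fix p q :: "nat list" assume h: "set p \<subseteq> {..<8}" "set q \<subseteq> {..<8}" "length p + length q = 6"
  have ps8: "\<And>l. l < 8 \<Longrightarrow> ps l < 8" by (auto simp: ps_def)
  let ?m = "\<lambda>l. Ms (ps l) l"
  let ?K = "prod_list (map ?m p) * prod_list (map ?m q)"
  have "set (map ps p) \<subseteq> {..<8}" "set (map ps q) \<subseteq> {..<8}" using h ps8 by auto
  then have e0: "EQ al be ga u1 u2 u3 u4 (\<lambda>x y. w (map ps p @ [x,y] @ map ps q))"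
    using w h unfolding Sp_def by simp
  have e1: "EQ al be ga u1 u2 u3 u4 (\<lambda>x y. ?K * (?m x * ?m y) * w (map ps p @ [ps x, ps y] @ map ps q))"
    using EQ_s[OF e0 pm] by simp
  show "EQ al be ga u1 u2 u3 u4 (\<lambda>x y. tact Ms w (p @ [x, y] @ q))"
  proof (subst EQ_cong)
    show "tact Ms w (p @ [x, y] @ q) = ?K * (?m x * ?m y) * w (map ps p @ [ps x, ps y] @ map ps q)"
      if "x < 8" "y < 8" for x y using h that by (simp add: tact_Ms words_def algebra_simps)
  qed (rule e1)
qed

lemma Sp_phi:
  assumes w: "Sp al be ga u1 u2 u3 u4 w"
  shows "Sp al be ga u1 u2 u3 u4 (phi_act g w)"
  unfolding Sp_def
proof (intro conjI allI impI)
  fix xs assume "phi_act g w xs \<noteq> 0"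
  then show "xs \<in> words 8" using w by (auto simp: Sp_def phi_act_def split: if_splits)
next
  fix p q :: "nat list" assume h: "set p \<subseteq> {..<8}" "set q \<subseteq> {..<8}" "length p + length q = 6"
  let ?G = "foldl d8_mul d8_e (map gen_grade p)"
  have GD: "?G \<in> D8" by (rule foldl_D8) (simp add: D8_def d8_e_def)
  have e0: "EQ al be ga u1 u2 u3 u4 (\<lambda>x y. w (p @ [x,y] @ q))" using w h unfolding Sp_def by simp
  have e1: "EQ al be ga u1 u2 u3 u4 (\<lambda>x y. if (\<lambda>z. foldl d8_mul z (map gen_grade q) = g) (d8_mul (d8_mul ?G (gen_grade x)) (gen_grade y)) then w (p @ [x,y] @ q) else 0)"
    by (rule EQ_grade[OF e0 GD])
  have "(\<lambda>x y. phi_act g w (p @ [x, y] @ q)) = (\<lambda>x y. if (\<lambda>z. foldl d8_mul z (map gen_grade q) = g) (d8_mul (d8_mul ?G (gen_grade x)) (gen_grade y)) then w (p @ [x,y] @ q) else 0)"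
    by (simp add: phi_act_def word_grade_def fun_eq_iff)
  then show "EQ al be ga u1 u2 u3 u4 (\<lambda>x y. phi_act g w (p @ [x, y] @ q))"
    using e1 by simp
qed


definition X0tab :: "(nat list \<times> complex \<times> complex) list" where
  "X0tab = [([0,1,0,3], (-1, 0)),
 ([0,1,2,1], (\<i>, 0)),
 ([0,1,3,2], (0, 1+\<i>)),
 ([0,2,1,3], (0, -1+\<i>)),
 ([0,2,3,1], (0, -1+\<i>)),
 ([0,3,0,1], (1, 0)),
 ([0,3,1,2], (0, 1+\<i>)),
 ([0,3,2,3], (\<i>, 0)),
 ([1,0,1,2], (-1, 0)),
 ([1,0,2,3], (0, -1-\<i>)),
 ([1,0,3,0], (\<i>, 0)),
 ([1,2,0,3], (0, -1-\<i>)),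
 ([1,2,1,0], (1, 0)),
 ([1,2,3,2], (\<i>, 0)),
 ([1,3,0,2], (0, 1-\<i>)),
 ([1,3,2,0], (0, 1-\<i>)),
 ([2,0,1,3], (0, -1+\<i>)),
 ([2,0,3,1], (0, -1+\<i>)),
 ([2,1,0,1], (-\<i>, 0)),
 ([2,1,2,3], (-1, 0)),
 ([2,1,3,0], (0, 1+\<i>)),
 ([2,3,0,3], (-\<i>, 0)),
 ([2,3,1,0], (0, 1+\<i>)),
 ([2,3,2,1], (1, 0)),
 ([3,0,1,0], (-\<i>, 0)),
 ([3,0,2,1], (0, -1-\<i>)),
 ([3,0,3,2], (-1, 0)),
 ([3,1,0,2], (0, 1-\<i>)),
 ([3,1,2,0], (0, 1-\<i>)),
 ([3,2,0,1], (0, -1-\<i>)),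
 ([3,2,1,2], (-\<i>, 0)),
 ([3,2,3,0], (1, 0))]"

definition X0 :: "complex \<Rightarrow> nat list \<Rightarrow> complex" where
  "X0 al xs = (case map_of X0tab xs of None \<Rightarrow> 0 | Some (a, b) \<Rightarrow> a + al * b)"

lemma X0tab_len: "\<forall>k\<in>fst ` set X0tab. length k = 4" by (simp add: X0tab_def)
lemma X0_len: "length xs \<noteq> 4 \<Longrightarrow> X0 al xs = 0"
proof -
  assume a: "length xs \<noteq> 4"
  have "xs \<notin> fst ` set X0tab" using X0tab_len a by blast
  then have "map_of X0tab xs = None" by (simp add: map_of_eq_None_iff)
  then show ?thesis by (simp add: X0_def)
qed
lemma XXeq_zero: "XXeq al (\<lambda>x y. 0)" by (simp add: XXeq_def)

lemma less4: "(x::nat) < 4 \<longleftrightarrow> x = 0 \<or> x = 1 \<or> x = 2 \<or> x = 3" by auto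

lemma xxs1: assumes "al \<in> {1,-1}" "b1 < 4" "b2 < 4" shows "XXeq al (\<lambda>x y. X0 al [x, y, b1, b2])"
proof -
  have "al = 1 \<or> al = -1" using assms(1) by auto
  then show ?thesis using assms(2,3) unfolding less4
    apply (elim disjE)
    apply (simp_all add: XXeq_def X0_def X0tab_def)
    apply (simp_all add: field_simps)
    done
qed

lemma xxs2: assumes "al \<in> {1,-1}" "b1 < 4" "b2 < 4" shows "XXeq al (\<lambda>x y. X0 al [b1, x, y, b2])"
proof -
  have "al = 1 \<or> al = -1" using assms(1) by auto
  then show ?thesis using assms(2,3) unfolding less4
    apply (elim disjE)
    apply (simp_all add: XXeq_def X0_def X0tab_def)
    apply (simp_all add: field_simps)
    done
qed

lemma xxs3: assumes "al \<in> {1,-1}" "b1 < 4" "b2 < 4" shows "XXeq al (\<lambda>x y. X0 al [b1, b2, x, y])"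
proof -
  have "al = 1 \<or> al = -1" using assms(1) by auto
  then show ?thesis using assms(2,3) unfolding less4
    apply (elim disjE)
    apply (simp_all add: XXeq_def X0_def X0tab_def)
    apply (simp_all add: field_simps)
    done
qed

lemma XXeq_X0:
  assumes "al \<in> {1,-1}" "set A \<subseteq> {..<4}" "set B \<subseteq> {..<4}"
  shows "XXeq al (\<lambda>x y. X0 al (A @ [x,y] @ B))"
proof (cases "length A + length B = 2")
  case False
  then have "\<And>x y. X0 al (A @ [x,y] @ B) = 0" by (intro X0_len) simp
  then show ?thesis by (simp add: XXeq_zero)
next
  case True
  have "length A = 0 \<and> length B = 2 \<or> length A = 1 \<and> length B = 1 \<or> length A = 2 \<and> length B = 0" using True by presburger
  then consider (c1) b1 b2 where "A = []" "B = [b1,b2]" "b1 < 4" "b2 < 4" | (c2) a1 b1 where "A = [a1]" "B = [b1]" "a1 < 4" "b1 < 4"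
    | (c3) a1 a2 where "A = [a1,a2]" "B = []" "a1 < 4" "a2 < 4"
    using assms(2,3) by (auto simp: length_Suc_conv numeral_2_eq_2)
  then show ?thesis
  proof cases
    case c1 then show ?thesis using xxs1[OF assms(1)] by simp
  next
    case c2 then show ?thesis using xxs2[OF assms(1)] by simp
  next
    case c3 then show ?thesis using xxs3[OF assms(1)] by simp
  qed
qed


definition isX :: "nat \<Rightarrow> bool" where "isX a \<longleftrightarrow> a < 4"
definition isY :: "nat \<Rightarrow> bool" where "isY a \<longleftrightarrow> a = 4 \<or> a = 5"
definition isZ :: "nat \<Rightarrow> bool" where "isZ a \<longleftrightarrow> a = 6 \<or> a = 7"
definition flip :: "nat \<Rightarrow> nat" where
  "flip a = (if a = 4 then 5 else if a = 5 then 4 else if a = 6 then 7 else if a = 7 then 6 else a)"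
definition par :: "nat \<Rightarrow> nat \<Rightarrow> nat" where "par n a = (if even n then a else flip a)"
definition nX :: "nat list \<Rightarrow> nat" where "nX r = length (filter isX r)"

fun sel :: "(nat \<Rightarrow> bool) \<Rightarrow> nat \<Rightarrow> nat list \<Rightarrow> nat list" where
  "sel P k [] = []"
| "sel P k (a # r) = (if P a then [par (nX r + k) a] else []) @ sel P k r"

lemma flip_flip[simp]: "flip (flip a) = a" by (simp add: flip_def)
lemma isX_flip[simp]: "isX (flip a) = isX a" by (auto simp: flip_def isX_def)
lemma isY_flip[simp]: "isY (flip a) = isY a" by (auto simp: flip_def isY_def)
lemma isZ_flip[simp]: "isZ (flip a) = isZ a" by (auto simp: flip_def isZ_def)
lemma flip_X: "isX a \<Longrightarrow> flip a = a" by (auto simp: flip_def isX_def)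
lemma par_X: "isX a \<Longrightarrow> par n a = a" by (simp add: par_def flip_X)
lemma par_0[simp]: "par 0 a = a" by (simp add: par_def)
lemma par_add: "par m (par n a) = par (n + m) a" by (auto simp: par_def)
lemma par_Suc: "par (Suc n) a = par n (flip a)" by (auto simp: par_def)
lemma nX_append[simp]: "nX (xs @ ys) = nX xs + nX ys" by (simp add: nX_def)
lemma nX_Nil[simp]: "nX [] = 0" by (simp add: nX_def)
lemma nX_Cons[simp]: "nX (a # r) = (if isX a then Suc (nX r) else nX r)" by (simp add: nX_def)

lemma sel_append: "sel P k (p @ m) = sel P (nX m + k) p @ sel P k m"
  by (induction p) (auto simp: add.assoc)

locale wz =
  fixes al be ga u1 u2 u3 u4 :: complex
  assumes al: "al \<in> {1,-1}" and be: "be \<in> {1,-1}" and ga: "ga \<in> {1,-1}"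
    and u1: "u1 \<noteq> 0" and u2: "u2 \<noteq> 0" and u3: "u3 \<noteq> 0" and u4: "u4 \<noteq> 0"
begin

definition kap :: "nat \<Rightarrow> nat \<Rightarrow> complex" where
  "kap a b = (if a = 4 then (-1)^b / u3 else if a = 5 then - ((-1)^b) / u3
     else if a = 6 then - \<i> * (- \<i>)^b / u4 else if a = 7 then - (\<i>^b) / u4 else 1)"

definition mu :: "nat \<Rightarrow> nat \<Rightarrow> complex" where
  "mu a b = (if a = 6 \<and> b = 4 then -1/u2 else if a = 7 \<and> b = 4 then -1/u1
     else if a = 6 \<and> b = 5 then -1/u1 else if a = 7 \<and> b = 5 then -1/u2 else 1)"

fun pass :: "nat \<Rightarrow> nat list \<Rightarrow> complex" where
  "pass a [] = 1"
| "pass a (b # r) = (if isX a then 1 else if isX b then kap a b * pass (flip a) r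
     else if isZ a \<and> isY b then mu a b * pass a r else pass a r)"

fun Fac :: "nat list \<Rightarrow> complex" where
  "Fac [] = 1"
| "Fac (a # r) = pass a r * Fac r"

fun Dp :: "nat list \<Rightarrow> nat list \<Rightarrow> complex" where
  "Dp [] s = 1"
| "Dp (c # p) s = pass (par (nX p) c) s * Dp p s"

fun Ep :: "nat list \<Rightarrow> nat \<Rightarrow> nat list \<Rightarrow> complex" where
  "Ep [] n q = 1"
| "Ep (c # p) n q = pass c p * pass (par (nX p + n) c) q * Ep p n q"

definition Yv :: "nat list \<Rightarrow> complex" where
  "Yv l = (if l = [4,5] then 1 else if l = [5,4] then - be else 0)"
definition Zv :: "nat list \<Rightarrow> complex" where
  "Zv l = (if l = [6,7] then 1 else if l = [7,6] then - ga else 0)"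

definition w0 :: "nat list \<Rightarrow> complex" where
  "w0 ws = (if ws \<in> words 8 then Fac ws * X0 al (filter isX ws) * Yv (sel isY 0 ws) * Zv (sel isZ 0 ws) else 0)"

lemma pass_X: "isX a \<Longrightarrow> pass a r = 1"
  by (cases r) auto

lemma pass_append: "pass a (s @ m) = pass a s * pass (par (nX s) a) m"
proof (induction s arbitrary: a)
  case Nil then show ?case by simp
next
  case (Cons b s)
  show ?case
  proof (cases "isX a")
    case True then show ?thesis by (simp add: pass_X par_X)
  next
    case False
    then show ?thesis using Cons by (simp add: par_Suc)
  qed
qed

lemma Fac_split: "Fac (p @ s @ q) = Dp p s * Fac (s @ q) * Ep p (nX s) q"
proof (induction p)
  case Nil then show ?case by simp
next
  case (Cons c p)
  have "pass c (p @ s @ q) = pass c p * pass (par (nX p) c) s * pass (par (nX p + nX s) c) q"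
    by (simp add: pass_append par_add add.commute)
  then show ?case using Cons by (simp add: algebra_simps)
qed

lemma w0_split: "w0 (p @ s @ q) = (if p @ s @ q \<in> words 8 then
   Dp p s * Fac (s @ q) * Ep p (nX s) q * X0 al (filter isX p @ filter isX s @ filter isX q) *
   Yv (sel isY (nX s + nX q) p @ sel isY (nX q) s @ sel isY 0 q) *
   Zv (sel isZ (nX s + nX q) p @ sel isZ (nX q) s @ sel isZ 0 q) else 0)"
  unfolding w0_def Fac_split by (simp add: sel_append add.commute)

lemma Dp_cong: "(\<And>d. pass d s = pass d s') \<Longrightarrow> Dp p s = Dp p s'"
  by (induction p) auto

lemma w0_swap:
  assumes "\<And>d. pass d s = pass d s'" "nX s = nX s'" "Fac (s @ q) = K * Fac (s' @ q)"
    "filter isX s = filter isX s'" "sel isY (nX q) s = sel isY (nX q) s'" "sel isZ (nX q) s = sel isZ (nX q) s'"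
    "length s = length s'" "set s \<subseteq> {..<8}" "set s' \<subseteq> {..<8}"
  shows "w0 (p @ s @ q) = K * w0 (p @ s' @ q)"
proof -
  have w: "p @ s @ q \<in> words 8 \<longleftrightarrow> p @ s' @ q \<in> words 8" using assms(7-9) by (auto simp: words_def)
  show ?thesis unfolding w0_split w Dp_cong[OF assms(1)] assms(2-6) by simp
qed

lemma pass_kap_swap: "a \<in> {4,5,6,7} \<Longrightarrow> b < 4 \<Longrightarrow> pass d [a,b] = pass d [b, flip a]"
  by (cases "isX d") (auto simp: isZ_def isY_def mu_def flip_def isX_def)

lemma swap_kap: assumes "a \<in> {4,5,6,7}" "b < 4"
  shows "w0 (p @ a # b # q) = kap a b * w0 (p @ b # flip a # q)"
proof -
  have "w0 (p @ [a,b] @ q) = kap a b * w0 (p @ [b, flip a] @ q)"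
  proof (rule w0_swap)
    show "pass d [a, b] = pass d [b, flip a]" for d using pass_kap_swap assms by blast
    have xb: "isX b" "\<not> isX a" "\<not> isY b" "\<not> isZ b" using assms by (auto simp: isX_def isY_def isZ_def)
    show "Fac ([a, b] @ q) = kap a b * Fac ([b, flip a] @ q)" using xb by (simp add: pass_X)
    show "nX [a, b] = nX [b, flip a]" using xb by simp
    show "filter isX [a, b] = filter isX [b, flip a]" using xb by simp
    show "sel isY (nX q) [a, b] = sel isY (nX q) [b, flip a]" using xb by (simp add: par_Suc)
    show "sel isZ (nX q) [a, b] = sel isZ (nX q) [b, flip a]" using xb by (simp add: par_Suc)
    show "length [a,b] = length [b, flip a]" by simp
    show "set [a, b] \<subseteq> {..<8}" "set [b, flip a] \<subseteq> {..<8}" using assms by (auto simp: flip_def)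
  qed
  then show ?thesis by simp
qed

lemma swap_mu: assumes "a \<in> {6,7}" "b \<in> {4,5}"
  shows "w0 (p @ a # b # q) = mu a b * w0 (p @ b # a # q)"
proof -
  have ab: "isZ a" "isY b" "\<not> isX a" "\<not> isX b" "\<not> isY a" "\<not> isZ b" using assms by (auto simp: isX_def isY_def isZ_def)
  have "w0 (p @ [a,b] @ q) = mu a b * w0 (p @ [b, a] @ q)"
  proof (rule w0_swap)
    show "pass d [a, b] = pass d [b, a]" for d using ab by (cases "isX d") auto
    show "Fac ([a, b] @ q) = mu a b * Fac ([b, a] @ q)" using ab by simp
    show "nX [a, b] = nX [b, a]" using ab by simp
    show "filter isX [a, b] = filter isX [b, a]" using ab by simp
    show "sel isY (nX q) [a, b] = sel isY (nX q) [b, a]" using ab by simp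
    show "sel isZ (nX q) [a, b] = sel isZ (nX q) [b, a]" using ab by simp
    show "length [a,b] = length [b, a]" by simp
    show "set [a, b] \<subseteq> {..<8}" "set [b, a] \<subseteq> {..<8}" using assms by auto
  qed
  then show ?thesis by simp
qed

lemma Yv_dup: "Yv (A @ c # c # B) = 0"
  by (cases A; cases B) (auto simp: Yv_def)
lemma Zv_dup: "Zv (A @ c # c # B) = 0"
  by (cases A; cases B) (auto simp: Zv_def)

lemma Yv_swap: "Yv (A @ [par k 5, par k 4] @ B) = - be * Yv (A @ [par k 4, par k 5] @ B)"
proof -
  have b2: "be * be = 1" using be by auto
  show ?thesis
  proof (cases "A = [] \<and> B = []")
    case True then show ?thesis using b2 by (auto simp: Yv_def par_def flip_def)
  next
    case False
    then have "length (A @ [x,y] @ B) \<noteq> 2" for x y by auto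
    moreover have "Yv l \<noteq> 0 \<Longrightarrow> length l = 2" for l by (auto simp: Yv_def split: if_splits)
    ultimately have "Yv (A @ [x,y] @ B) = 0" for x y by blast
    then show ?thesis by simp
  qed
qed

lemma Zv_swap: "Zv (A @ [par k 7, par k 6] @ B) = - ga * Zv (A @ [par k 6, par k 7] @ B)"
proof -
  have b2: "ga * ga = 1" using ga by auto
  show ?thesis
  proof (cases "A = [] \<and> B = []")
    case True then show ?thesis using b2 by (auto simp: Zv_def par_def flip_def)
  next
    case False
    then have "length (A @ [x,y] @ B) \<noteq> 2" for x y by auto
    moreover have "Zv l \<noteq> 0 \<Longrightarrow> length l = 2" for l by (auto simp: Zv_def split: if_splits)
    ultimately have "Zv (A @ [x,y] @ B) = 0" for x y by blast
    then show ?thesis by simp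
  qed
qed

lemma dupY: assumes "a \<in> {4,5}" shows "w0 (p @ a # a # q) = 0"
proof -
  have "\<not> isX a" "isY a" "\<not> isZ a" using assms by (auto simp: isX_def isY_def isZ_def)
  then show ?thesis using w0_split[of p "[a,a]" q] by (simp add: Yv_dup)
qed

lemma dupZ: assumes "a \<in> {6,7}" shows "w0 (p @ a # a # q) = 0"
proof -
  have "\<not> isX a" "\<not> isY a" "isZ a" using assms by (auto simp: isX_def isY_def isZ_def)
  then show ?thesis using w0_split[of p "[a,a]" q] by (simp add: Zv_dup)
qed

lemma swapY: "w0 (p @ 5 # 4 # q) = - be * w0 (p @ 4 # 5 # q)"
proof -
  have x: "\<not> isX 4" "\<not> isX 5" "isY 4" "isY 5" "\<not> isZ 4" "\<not> isZ 5" by (auto simp: isX_def isY_def isZ_def)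
  have d: "Dp p [5,4] = Dp p [4,5]"
  proof (rule Dp_cong)
    fix d show "pass d [5, 4] = pass d [4, 5]" using x by (cases "isX d") auto
  qed
  have w: "p @ [5,4] @ q \<in> words 8 \<longleftrightarrow> p @ [4,5] @ q \<in> words 8" by (auto simp: words_def)
  show ?thesis using w0_split[of p "[5,4]" q] w0_split[of p "[4,5]" q] d w x
    Yv_swap[of "sel isY (nX q) p" "nX q" "sel isY 0 q"]
    by (simp add: algebra_simps)
qed

lemma swapZ: "w0 (p @ 7 # 6 # q) = - ga * w0 (p @ 6 # 7 # q)"
proof -
  have x: "\<not> isX 6" "\<not> isX 7" "isZ 6" "isZ 7" "\<not> isY 6" "\<not> isY 7" by (auto simp: isX_def isY_def isZ_def)
  have d: "Dp p [7,6] = Dp p [6,7]"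
  proof (rule Dp_cong)
    fix d show "pass d [7, 6] = pass d [6, 7]" using x by (cases "isX d") auto
  qed
  have w: "p @ [7,6] @ q \<in> words 8 \<longleftrightarrow> p @ [6,7] @ q \<in> words 8" by (auto simp: words_def)
  show ?thesis using w0_split[of p "[7,6]" q] w0_split[of p "[6,7]" q] d w x
    Zv_swap[of "sel isZ (nX q) p" "nX q" "sel isZ 0 q"]
    by (simp add: algebra_simps)
qed

end


lemma XXeq_scale: "XXeq al f \<Longrightarrow> XXeq al (\<lambda>x y. c * f x y)"
  unfolding XXeq_def
  apply simp
  apply (simp add: field_simps)
  done

lemma XXeq_cong4: "(\<And>x y. x < 4 \<Longrightarrow> y < 4 \<Longrightarrow> f x y = g x y) \<Longrightarrow> XXeq al f = XXeq al g"
  unfolding XXeq_def by simp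

lemma i_pows: "\<i>^2 = -1" "\<i>^3 = -\<i>" "(-\<i>)^2 = -1" "(-\<i>)^3 = \<i>" "(-1::complex)^2 = 1" "(-1::complex)^3 = -1"
  by (simp_all add: power2_eq_square power3_eq_cube)

context wz begin

lemma pass_XX_other: assumes "d \<notin> {4,5,6,7}" "x < 4" "y < 4" shows "pass d [x,y] = 1"
proof (cases "isX d")
  case True then show ?thesis by (simp add: pass_X)
next
  case False
  then have "flip d = d" using assms(1) by (simp add: flip_def)
  then show ?thesis using assms False by (simp add: isX_def kap_def)
qed

lemma XXeq_tw: assumes "XXeq al f" shows "XXeq al (\<lambda>x y. pass d [x,y] * f x y)"
proof (cases "d \<in> {4,5,6,7}")
  case False
  have "XXeq al (\<lambda>x y. pass d [x,y] * f x y) = XXeq al f"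
    by (rule XXeq_cong4) (subst pass_XX_other[OF False], simp_all)
  then show ?thesis using assms by simp
next
  case True
  then have "d = 4 \<or> d = 5 \<or> d = 6 \<or> d = 7" by simp
  then show ?thesis using assms unfolding XXeq_def
    apply (elim disjE)
       apply (simp_all add: isX_def kap_def flip_def i_pows)
       apply (simp_all add: field_simps u3 u4)
    done
qed

lemma XXeq_Dp: "XXeq al f \<Longrightarrow> XXeq al (\<lambda>x y. Dp p [x,y] * f x y)"
proof (induction p)
  case Nil then show ?case by simp
next
  case (Cons c p)
  have "XXeq al (\<lambda>x y. pass (par (nX p) c) [x,y] * (Dp p [x,y] * f x y))"
    by (rule XXeq_tw) (rule Cons.IH[OF Cons.prems])
  then show ?case by (simp add: mult.assoc)
qed

definition CC :: "nat list \<Rightarrow> nat list \<Rightarrow> complex" where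
  "CC p q = (if p @ [0,0] @ q \<in> words 8 then Fac q * Ep p 2 q * Yv (sel isY (2 + nX q) p @ sel isY 0 q)
      * Zv (sel isZ (2 + nX q) p @ sel isZ 0 q) else 0)"

lemma w0_XX: assumes "x < 4" "y < 4"
  shows "w0 (p @ [x,y] @ q) = CC p q * (Dp p [x,y] * X0 al (filter isX p @ [x,y] @ filter isX q))"
proof -
  have xy: "isX x" "isX y" "\<not> isY x" "\<not> isY y" "\<not> isZ x" "\<not> isZ y" using assms by (auto simp: isX_def isY_def isZ_def)
  have w: "p @ [x,y] @ q \<in> words 8 \<longleftrightarrow> p @ [0,0] @ q \<in> words 8" using assms by (auto simp: words_def)
  show ?thesis unfolding w0_split w CC_def using xy by (simp add: pass_X algebra_simps numeral_2_eq_2)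
qed

lemma w0_XXeq: assumes "set p \<subseteq> {..<8}" "set q \<subseteq> {..<8}"
  shows "XXeq al (\<lambda>x y. w0 (p @ [x,y] @ q))"
proof -
  have a: "set (filter isX p) \<subseteq> {..<4}" "set (filter isX q) \<subseteq> {..<4}" by (auto simp: isX_def)
  have "XXeq al (\<lambda>x y. CC p q * (Dp p [x,y] * X0 al (filter isX p @ [x,y] @ filter isX q)))"
    by (rule XXeq_scale, rule XXeq_Dp, rule XXeq_X0[OF al a])
  moreover have "XXeq al (\<lambda>x y. w0 (p @ [x,y] @ q)) = XXeq al (\<lambda>x y. CC p q * (Dp p [x,y] * X0 al (filter isX p @ [x,y] @ filter isX q)))"
    by (rule XXeq_cong4) (rule w0_XX)
  ultimately show ?thesis by simp
qed

lemma w0_OEq: "OEq be ga u1 u2 u3 u4 (\<lambda>x y. w0 (p @ [x,y] @ q))"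
  unfolding OEq_def using u1 u2 u3 u4
  by (simp add: swap_kap swap_mu dupY dupZ swapY swapZ kap_def mu_def flip_def i_pows field_simps)

lemma w0_Sp: "Sp al be ga u1 u2 u3 u4 w0"
  unfolding Sp_def EQ_def
  using w0_XXeq w0_OEq by (auto simp: w0_def)

lemma w0_b0: "w0 [1,2,1,0,4,5,6,7] = 1"
  by (simp add: w0_def words_def isX_def isY_def isZ_def kap_def mu_def X0_def X0tab_def Yv_def Zv_def par_def)

end


lemma XXe0_0: assumes "XXeq al t" "al \<in> {1,-1}" shows "t 0 0 = 0"
proof -
  have "al = 1 \<or> al = -1" using assms(2) by auto
  then show ?thesis using assms(1) unfolding XXeq_def
    by (elim disjE conjE; simp; (simp add: field_simps)?)
qed

lemma XXe1_0: assumes "XXeq al t" "al \<in> {1,-1}" shows "t 1 1 = 0"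
proof -
  have "al = 1 \<or> al = -1" using assms(2) by auto
  then show ?thesis using assms(1) unfolding XXeq_def
    by (elim disjE conjE; simp; (simp add: field_simps)?)
qed

lemma XXe2_0: assumes "XXeq al t" "al \<in> {1,-1}" shows "t 2 2 = 0"
proof -
  have "al = 1 \<or> al = -1" using assms(2) by auto
  then show ?thesis using assms(1) unfolding XXeq_def
    by (elim disjE conjE; simp; (simp add: field_simps)?)
qed

lemma XXe3_0: assumes "XXeq al t" "al \<in> {1,-1}" shows "t 3 3 = 0"
proof -
  have "al = 1 \<or> al = -1" using assms(2) by auto
  then show ?thesis using assms(1) unfolding XXeq_def
    by (elim disjE conjE; simp; (simp add: field_simps)?)
qed

lemma XXe4_0: assumes "XXeq al t" "al \<in> {1,-1}" shows "t 0 2 = t 2 0"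
proof -
  have "al = 1 \<or> al = -1" using assms(2) by auto
  then show ?thesis using assms(1) unfolding XXeq_def
    by (elim disjE conjE; simp; (simp add: field_simps)?)
qed

lemma XXe4_1: assumes "XXeq al t" "al \<in> {1,-1}" shows "t 2 0 = t 0 2"
proof -
  have "al = 1 \<or> al = -1" using assms(2) by auto
  then show ?thesis using assms(1) unfolding XXeq_def
    by (elim disjE conjE; simp; (simp add: field_simps)?)
qed

lemma XXe5_0: assumes "XXeq al t" "al \<in> {1,-1}" shows "t 1 3 = t 3 1"
proof -
  have "al = 1 \<or> al = -1" using assms(2) by auto
  then show ?thesis using assms(1) unfolding XXeq_def
    by (elim disjE conjE; simp; (simp add: field_simps)?)
qed

lemma XXe5_1: assumes "XXeq al t" "al \<in> {1,-1}" shows "t 3 1 = t 1 3"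
proof -
  have "al = 1 \<or> al = -1" using assms(2) by auto
  then show ?thesis using assms(1) unfolding XXeq_def
    by (elim disjE conjE; simp; (simp add: field_simps)?)
qed

lemma XXe6_0: assumes "XXeq al t" "al \<in> {1,-1}" shows "t 2 1 = - (al*(-1+\<i>)/2) * t 1 0 - (al*(-1-\<i>)/2) * t 3 2"
proof -
  have "al = 1 \<or> al = -1" using assms(2) by auto
  then show ?thesis using assms(1) unfolding XXeq_def
    by (elim disjE conjE; simp; (simp add: field_simps)?)
qed

lemma XXe6_1: assumes "XXeq al t" "al \<in> {1,-1}" shows "t 1 0 = al*(-1-\<i>) * (- t 2 1 - (al*(-1-\<i>)/2) * t 3 2)"
proof -
  have "al = 1 \<or> al = -1" using assms(2) by auto
  then show ?thesis using assms(1) unfolding XXeq_def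
    by (elim disjE conjE; simp; (simp add: field_simps)?)
qed

lemma XXe6_2: assumes "XXeq al t" "al \<in> {1,-1}" shows "t 3 2 = al*(-1+\<i>) * (- t 2 1 - (al*(-1+\<i>)/2) * t 1 0)"
proof -
  have "al = 1 \<or> al = -1" using assms(2) by auto
  then show ?thesis using assms(1) unfolding XXeq_def
    by (elim disjE conjE; simp; (simp add: field_simps)?)
qed

lemma XXe7_0: assumes "XXeq al t" "al \<in> {1,-1}" shows "t 0 3 = - (al*(1+\<i>)/2) * t 1 0 - (al*(1-\<i>)/2) * t 3 2"
proof -
  have "al = 1 \<or> al = -1" using assms(2) by auto
  then show ?thesis using assms(1) unfolding XXeq_def
    by (elim disjE conjE; simp; (simp add: field_simps)?)
qed

lemma XXe7_1: assumes "XXeq al t" "al \<in> {1,-1}" shows "t 1 0 = al*(1-\<i>) * (- t 0 3 - (al*(1-\<i>)/2) * t 3 2)"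
proof -
  have "al = 1 \<or> al = -1" using assms(2) by auto
  then show ?thesis using assms(1) unfolding XXeq_def
    by (elim disjE conjE; simp; (simp add: field_simps)?)
qed

lemma XXe7_2: assumes "XXeq al t" "al \<in> {1,-1}" shows "t 3 2 = al*(1+\<i>) * (- t 0 3 - (al*(1+\<i>)/2) * t 1 0)"
proof -
  have "al = 1 \<or> al = -1" using assms(2) by auto
  then show ?thesis using assms(1) unfolding XXeq_def
    by (elim disjE conjE; simp; (simp add: field_simps)?)
qed

lemma XXe8_0: assumes "XXeq al t" "al \<in> {1,-1}" shows "t 0 1 = - (al*(1+\<i>)/2) * t 3 0 - (al*(-1+\<i>)/2) * t 1 2"
proof -
  have "al = 1 \<or> al = -1" using assms(2) by auto
  then show ?thesis using assms(1) unfolding XXeq_def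
    by (elim disjE conjE; simp; (simp add: field_simps)?)
qed

lemma XXe8_1: assumes "XXeq al t" "al \<in> {1,-1}" shows "t 3 0 = al*(1-\<i>) * (- t 0 1 - (al*(-1+\<i>)/2) * t 1 2)"
proof -
  have "al = 1 \<or> al = -1" using assms(2) by auto
  then show ?thesis using assms(1) unfolding XXeq_def
    by (elim disjE conjE; simp; (simp add: field_simps)?)
qed

lemma XXe8_2: assumes "XXeq al t" "al \<in> {1,-1}" shows "t 1 2 = al*(-1-\<i>) * (- t 0 1 - (al*(1+\<i>)/2) * t 3 0)"
proof -
  have "al = 1 \<or> al = -1" using assms(2) by auto
  then show ?thesis using assms(1) unfolding XXeq_def
    by (elim disjE conjE; simp; (simp add: field_simps)?)
qed

lemma XXe9_0: assumes "XXeq al t" "al \<in> {1,-1}" shows "t 2 3 = - (al*(1-\<i>)/2) * t 3 0 - (al*(-1-\<i>)/2) * t 1 2"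
proof -
  have "al = 1 \<or> al = -1" using assms(2) by auto
  then show ?thesis using assms(1) unfolding XXeq_def
    by (elim disjE conjE; simp; (simp add: field_simps)?)
qed

lemma XXe9_1: assumes "XXeq al t" "al \<in> {1,-1}" shows "t 3 0 = al*(1+\<i>) * (- t 2 3 - (al*(-1-\<i>)/2) * t 1 2)"
proof -
  have "al = 1 \<or> al = -1" using assms(2) by auto
  then show ?thesis using assms(1) unfolding XXeq_def
    by (elim disjE conjE; simp; (simp add: field_simps)?)
qed

lemma XXe9_2: assumes "XXeq al t" "al \<in> {1,-1}" shows "t 1 2 = al*(-1+\<i>) * (- t 2 3 - (al*(1-\<i>)/2) * t 3 0)"
proof -
  have "al = 1 \<or> al = -1" using assms(2) by auto
  then show ?thesis using assms(1) unfolding XXeq_def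
    by (elim disjE conjE; simp; (simp add: field_simps)?)
qed

lemma XU_core_p:
  fixes h :: "nat list \<Rightarrow> complex"
  assumes A: "\<And>a b. XXeq (1) (\<lambda>x y. h [x,y,a,b])"
    and B: "\<And>a b. XXeq (1) (\<lambda>x y. h [a,x,y,b])"
    and C: "\<And>a b. XXeq (1) (\<lambda>x y. h [a,b,x,y])"
  shows "\<forall>a<4. \<forall>b<4. \<forall>c<4. \<forall>d<4. h [a,b,c,d] = X0 (1) [a,b,c,d] * h [1,2,1,0]"
proof -
  have alpm: "(1::complex) \<in> {1,-1}" by simp
  have k0: "h [0,0,0,0] = 0" using XXe0_0[OF A[of 0 0] alpm]  by (simp; (simp add: field_simps)?)
  have k1: "h [Suc 0,Suc 0,0,0] = 0" using XXe1_0[OF A[of 0 0] alpm]  by (simp; (simp add: field_simps)?)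
  have k2: "h [2,2,0,0] = 0" using XXe2_0[OF A[of 0 0] alpm]  by (simp; (simp add: field_simps)?)
  have k3: "h [3,3,0,0] = 0" using XXe3_0[OF A[of 0 0] alpm]  by (simp; (simp add: field_simps)?)
  have k4: "h [0,0,0,Suc 0] = 0" using XXe0_0[OF A[of 0 1] alpm]  by (simp; (simp add: field_simps)?)
  have k5: "h [Suc 0,Suc 0,0,Suc 0] = 0" using XXe1_0[OF A[of 0 1] alpm]  by (simp; (simp add: field_simps)?)
  have k6: "h [2,2,0,Suc 0] = 0" using XXe2_0[OF A[of 0 1] alpm]  by (simp; (simp add: field_simps)?)
  have k7: "h [3,3,0,Suc 0] = 0" using XXe3_0[OF A[of 0 1] alpm]  by (simp; (simp add: field_simps)?)
  have k8: "h [0,0,0,2] = 0" using XXe0_0[OF A[of 0 2] alpm]  by (simp; (simp add: field_simps)?)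
  have k9: "h [Suc 0,Suc 0,0,2] = 0" using XXe1_0[OF A[of 0 2] alpm]  by (simp; (simp add: field_simps)?)
  have k10: "h [2,2,0,2] = 0" using XXe2_0[OF A[of 0 2] alpm]  by (simp; (simp add: field_simps)?)
  have k11: "h [3,3,0,2] = 0" using XXe3_0[OF A[of 0 2] alpm]  by (simp; (simp add: field_simps)?)
  have k12: "h [0,0,0,3] = 0" using XXe0_0[OF A[of 0 3] alpm]  by (simp; (simp add: field_simps)?)
  have k13: "h [Suc 0,Suc 0,0,3] = 0" using XXe1_0[OF A[of 0 3] alpm]  by (simp; (simp add: field_simps)?)
  have k14: "h [2,2,0,3] = 0" using XXe2_0[OF A[of 0 3] alpm]  by (simp; (simp add: field_simps)?)
  have k15: "h [3,3,0,3] = 0" using XXe3_0[OF A[of 0 3] alpm]  by (simp; (simp add: field_simps)?)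
  have k16: "h [0,0,Suc 0,0] = 0" using XXe0_0[OF A[of 1 0] alpm]  by (simp; (simp add: field_simps)?)
  have k17: "h [Suc 0,Suc 0,Suc 0,0] = 0" using XXe1_0[OF A[of 1 0] alpm]  by (simp; (simp add: field_simps)?)
  have k18: "h [2,2,Suc 0,0] = 0" using XXe2_0[OF A[of 1 0] alpm]  by (simp; (simp add: field_simps)?)
  have k19: "h [3,3,Suc 0,0] = 0" using XXe3_0[OF A[of 1 0] alpm]  by (simp; (simp add: field_simps)?)
  have k20: "h [0,0,Suc 0,Suc 0] = 0" using XXe0_0[OF A[of 1 1] alpm]  by (simp; (simp add: field_simps)?)
  have k21: "h [Suc 0,Suc 0,Suc 0,Suc 0] = 0" using XXe1_0[OF A[of 1 1] alpm]  by (simp; (simp add: field_simps)?)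
  have k22: "h [2,2,Suc 0,Suc 0] = 0" using XXe2_0[OF A[of 1 1] alpm]  by (simp; (simp add: field_simps)?)
  have k23: "h [3,3,Suc 0,Suc 0] = 0" using XXe3_0[OF A[of 1 1] alpm]  by (simp; (simp add: field_simps)?)
  have k24: "h [0,0,Suc 0,2] = 0" using XXe0_0[OF A[of 1 2] alpm]  by (simp; (simp add: field_simps)?)
  have k25: "h [Suc 0,Suc 0,Suc 0,2] = 0" using XXe1_0[OF A[of 1 2] alpm]  by (simp; (simp add: field_simps)?)
  have k26: "h [2,2,Suc 0,2] = 0" using XXe2_0[OF A[of 1 2] alpm]  by (simp; (simp add: field_simps)?)
  have k27: "h [3,3,Suc 0,2] = 0" using XXe3_0[OF A[of 1 2] alpm]  by (simp; (simp add: field_simps)?)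
  have k28: "h [0,0,Suc 0,3] = 0" using XXe0_0[OF A[of 1 3] alpm]  by (simp; (simp add: field_simps)?)
  have k29: "h [Suc 0,Suc 0,Suc 0,3] = 0" using XXe1_0[OF A[of 1 3] alpm]  by (simp; (simp add: field_simps)?)
  have k30: "h [2,2,Suc 0,3] = 0" using XXe2_0[OF A[of 1 3] alpm]  by (simp; (simp add: field_simps)?)
  have k31: "h [3,3,Suc 0,3] = 0" using XXe3_0[OF A[of 1 3] alpm]  by (simp; (simp add: field_simps)?)
  have k32: "h [0,0,2,0] = 0" using XXe0_0[OF A[of 2 0] alpm]  by (simp; (simp add: field_simps)?)
  have k33: "h [Suc 0,Suc 0,2,0] = 0" using XXe1_0[OF A[of 2 0] alpm]  by (simp; (simp add: field_simps)?)
  have k34: "h [2,2,2,0] = 0" using XXe2_0[OF A[of 2 0] alpm]  by (simp; (simp add: field_simps)?)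
  have k35: "h [3,3,2,0] = 0" using XXe3_0[OF A[of 2 0] alpm]  by (simp; (simp add: field_simps)?)
  have k36: "h [0,0,2,Suc 0] = 0" using XXe0_0[OF A[of 2 1] alpm]  by (simp; (simp add: field_simps)?)
  have k37: "h [Suc 0,Suc 0,2,Suc 0] = 0" using XXe1_0[OF A[of 2 1] alpm]  by (simp; (simp add: field_simps)?)
  have k38: "h [2,2,2,Suc 0] = 0" using XXe2_0[OF A[of 2 1] alpm]  by (simp; (simp add: field_simps)?)
  have k39: "h [3,3,2,Suc 0] = 0" using XXe3_0[OF A[of 2 1] alpm]  by (simp; (simp add: field_simps)?)
  have k40: "h [0,0,2,2] = 0" using XXe0_0[OF A[of 2 2] alpm]  by (simp; (simp add: field_simps)?)
  have k41: "h [Suc 0,Suc 0,2,2] = 0" using XXe1_0[OF A[of 2 2] alpm]  by (simp; (simp add: field_simps)?)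
  have k42: "h [2,2,2,2] = 0" using XXe2_0[OF A[of 2 2] alpm]  by (simp; (simp add: field_simps)?)
  have k43: "h [3,3,2,2] = 0" using XXe3_0[OF A[of 2 2] alpm]  by (simp; (simp add: field_simps)?)
  have k44: "h [0,0,2,3] = 0" using XXe0_0[OF A[of 2 3] alpm]  by (simp; (simp add: field_simps)?)
  have k45: "h [Suc 0,Suc 0,2,3] = 0" using XXe1_0[OF A[of 2 3] alpm]  by (simp; (simp add: field_simps)?)
  have k46: "h [2,2,2,3] = 0" using XXe2_0[OF A[of 2 3] alpm]  by (simp; (simp add: field_simps)?)
  have k47: "h [3,3,2,3] = 0" using XXe3_0[OF A[of 2 3] alpm]  by (simp; (simp add: field_simps)?)
  have k48: "h [0,0,3,0] = 0" using XXe0_0[OF A[of 3 0] alpm]  by (simp; (simp add: field_simps)?)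
  have k49: "h [Suc 0,Suc 0,3,0] = 0" using XXe1_0[OF A[of 3 0] alpm]  by (simp; (simp add: field_simps)?)
  have k50: "h [2,2,3,0] = 0" using XXe2_0[OF A[of 3 0] alpm]  by (simp; (simp add: field_simps)?)
  have k51: "h [3,3,3,0] = 0" using XXe3_0[OF A[of 3 0] alpm]  by (simp; (simp add: field_simps)?)
  have k52: "h [0,0,3,Suc 0] = 0" using XXe0_0[OF A[of 3 1] alpm]  by (simp; (simp add: field_simps)?)
  have k53: "h [Suc 0,Suc 0,3,Suc 0] = 0" using XXe1_0[OF A[of 3 1] alpm]  by (simp; (simp add: field_simps)?)
  have k54: "h [2,2,3,Suc 0] = 0" using XXe2_0[OF A[of 3 1] alpm]  by (simp; (simp add: field_simps)?)
  have k55: "h [3,3,3,Suc 0] = 0" using XXe3_0[OF A[of 3 1] alpm]  by (simp; (simp add: field_simps)?)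
  have k56: "h [0,0,3,2] = 0" using XXe0_0[OF A[of 3 2] alpm]  by (simp; (simp add: field_simps)?)
  have k57: "h [Suc 0,Suc 0,3,2] = 0" using XXe1_0[OF A[of 3 2] alpm]  by (simp; (simp add: field_simps)?)
  have k58: "h [2,2,3,2] = 0" using XXe2_0[OF A[of 3 2] alpm]  by (simp; (simp add: field_simps)?)
  have k59: "h [3,3,3,2] = 0" using XXe3_0[OF A[of 3 2] alpm]  by (simp; (simp add: field_simps)?)
  have k60: "h [0,0,3,3] = 0" using XXe0_0[OF A[of 3 3] alpm]  by (simp; (simp add: field_simps)?)
  have k61: "h [Suc 0,Suc 0,3,3] = 0" using XXe1_0[OF A[of 3 3] alpm]  by (simp; (simp add: field_simps)?)
  have k62: "h [2,2,3,3] = 0" using XXe2_0[OF A[of 3 3] alpm]  by (simp; (simp add: field_simps)?)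
  have k63: "h [3,3,3,3] = 0" using XXe3_0[OF A[of 3 3] alpm]  by (simp; (simp add: field_simps)?)
  have k64: "h [0,Suc 0,Suc 0,0] = 0" using XXe1_0[OF B[of 0 0] alpm]  by (simp; (simp add: field_simps)?)
  have k65: "h [0,2,2,0] = 0" using XXe2_0[OF B[of 0 0] alpm]  by (simp; (simp add: field_simps)?)
  have k66: "h [2,0,2,0] = 0" using XXe4_1[OF A[of 2 0] alpm] k65 by (simp; (simp add: field_simps)?)
  have k67: "h [0,3,3,0] = 0" using XXe3_0[OF B[of 0 0] alpm]  by (simp; (simp add: field_simps)?)
  have k68: "h [0,2,0,0] = 0" using XXe4_1[OF B[of 0 0] alpm] k32 by (simp; (simp add: field_simps)?)
  have k69: "h [2,0,0,0] = 0" using XXe4_1[OF A[of 0 0] alpm] k68 by (simp; (simp add: field_simps)?)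
  have k70: "h [0,Suc 0,Suc 0,Suc 0] = 0" using XXe1_0[OF B[of 0 1] alpm]  by (simp; (simp add: field_simps)?)
  have k71: "h [0,2,2,Suc 0] = 0" using XXe2_0[OF B[of 0 1] alpm]  by (simp; (simp add: field_simps)?)
  have k72: "h [2,0,2,Suc 0] = 0" using XXe4_1[OF A[of 2 1] alpm] k71 by (simp; (simp add: field_simps)?)
  have k73: "h [0,3,3,Suc 0] = 0" using XXe3_0[OF B[of 0 1] alpm]  by (simp; (simp add: field_simps)?)
  have k74: "h [0,2,0,Suc 0] = 0" using XXe4_1[OF B[of 0 1] alpm] k36 by (simp; (simp add: field_simps)?)
  have k75: "h [2,0,0,Suc 0] = 0" using XXe4_1[OF A[of 0 1] alpm] k74 by (simp; (simp add: field_simps)?)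
  have k76: "h [0,Suc 0,Suc 0,2] = 0" using XXe1_0[OF B[of 0 2] alpm]  by (simp; (simp add: field_simps)?)
  have k77: "h [0,2,2,2] = 0" using XXe2_0[OF B[of 0 2] alpm]  by (simp; (simp add: field_simps)?)
  have k78: "h [2,0,2,2] = 0" using XXe4_1[OF A[of 2 2] alpm] k77 by (simp; (simp add: field_simps)?)
  have k79: "h [0,3,3,2] = 0" using XXe3_0[OF B[of 0 2] alpm]  by (simp; (simp add: field_simps)?)
  have k80: "h [0,2,0,2] = 0" using XXe4_1[OF B[of 0 2] alpm] k40 by (simp; (simp add: field_simps)?)
  have k81: "h [2,0,0,2] = 0" using XXe4_1[OF A[of 0 2] alpm] k80 by (simp; (simp add: field_simps)?)
  have k82: "h [0,Suc 0,Suc 0,3] = 0" using XXe1_0[OF B[of 0 3] alpm]  by (simp; (simp add: field_simps)?)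
  have k83: "h [0,2,2,3] = 0" using XXe2_0[OF B[of 0 3] alpm]  by (simp; (simp add: field_simps)?)
  have k84: "h [2,0,2,3] = 0" using XXe4_1[OF A[of 2 3] alpm] k83 by (simp; (simp add: field_simps)?)
  have k85: "h [0,3,3,3] = 0" using XXe3_0[OF B[of 0 3] alpm]  by (simp; (simp add: field_simps)?)
  have k86: "h [0,2,0,3] = 0" using XXe4_1[OF B[of 0 3] alpm] k44 by (simp; (simp add: field_simps)?)
  have k87: "h [2,0,0,3] = 0" using XXe4_1[OF A[of 0 3] alpm] k86 by (simp; (simp add: field_simps)?)
  have k88: "h [Suc 0,0,0,0] = 0" using XXe0_0[OF B[of 1 0] alpm]  by (simp; (simp add: field_simps)?)
  have k89: "h [Suc 0,2,2,0] = 0" using XXe2_0[OF B[of 1 0] alpm]  by (simp; (simp add: field_simps)?)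
  have k90: "h [Suc 0,3,3,0] = 0" using XXe3_0[OF B[of 1 0] alpm]  by (simp; (simp add: field_simps)?)
  have k91: "h [3,Suc 0,3,0] = 0" using XXe5_1[OF A[of 3 0] alpm] k90 by (simp; (simp add: field_simps)?)
  have k92: "h [Suc 0,3,Suc 0,0] = 0" using XXe5_1[OF B[of 1 0] alpm] k49 by (simp; (simp add: field_simps)?)
  have k93: "h [3,Suc 0,Suc 0,0] = 0" using XXe5_1[OF A[of 1 0] alpm] k92 by (simp; (simp add: field_simps)?)
  have k94: "h [Suc 0,0,0,Suc 0] = 0" using XXe0_0[OF B[of 1 1] alpm]  by (simp; (simp add: field_simps)?)
  have k95: "h [Suc 0,2,2,Suc 0] = 0" using XXe2_0[OF B[of 1 1] alpm]  by (simp; (simp add: field_simps)?)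
  have k96: "h [Suc 0,3,3,Suc 0] = 0" using XXe3_0[OF B[of 1 1] alpm]  by (simp; (simp add: field_simps)?)
  have k97: "h [3,Suc 0,3,Suc 0] = 0" using XXe5_1[OF A[of 3 1] alpm] k96 by (simp; (simp add: field_simps)?)
  have k98: "h [Suc 0,3,Suc 0,Suc 0] = 0" using XXe5_1[OF B[of 1 1] alpm] k53 by (simp; (simp add: field_simps)?)
  have k99: "h [3,Suc 0,Suc 0,Suc 0] = 0" using XXe5_1[OF A[of 1 1] alpm] k98 by (simp; (simp add: field_simps)?)
  have k100: "h [Suc 0,0,0,2] = 0" using XXe0_0[OF B[of 1 2] alpm]  by (simp; (simp add: field_simps)?)
  have k101: "h [Suc 0,2,2,2] = 0" using XXe2_0[OF B[of 1 2] alpm]  by (simp; (simp add: field_simps)?)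
  have k102: "h [Suc 0,3,3,2] = 0" using XXe3_0[OF B[of 1 2] alpm]  by (simp; (simp add: field_simps)?)
  have k103: "h [3,Suc 0,3,2] = 0" using XXe5_1[OF A[of 3 2] alpm] k102 by (simp; (simp add: field_simps)?)
  have k104: "h [Suc 0,3,Suc 0,2] = 0" using XXe5_1[OF B[of 1 2] alpm] k57 by (simp; (simp add: field_simps)?)
  have k105: "h [3,Suc 0,Suc 0,2] = 0" using XXe5_1[OF A[of 1 2] alpm] k104 by (simp; (simp add: field_simps)?)
  have k106: "h [Suc 0,0,0,3] = 0" using XXe0_0[OF B[of 1 3] alpm]  by (simp; (simp add: field_simps)?)
  have k107: "h [Suc 0,2,2,3] = 0" using XXe2_0[OF B[of 1 3] alpm]  by (simp; (simp add: field_simps)?)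
  have k108: "h [Suc 0,3,3,3] = 0" using XXe3_0[OF B[of 1 3] alpm]  by (simp; (simp add: field_simps)?)
  have k109: "h [3,Suc 0,3,3] = 0" using XXe5_1[OF A[of 3 3] alpm] k108 by (simp; (simp add: field_simps)?)
  have k110: "h [Suc 0,3,Suc 0,3] = 0" using XXe5_1[OF B[of 1 3] alpm] k61 by (simp; (simp add: field_simps)?)
  have k111: "h [3,Suc 0,Suc 0,3] = 0" using XXe5_1[OF A[of 1 3] alpm] k110 by (simp; (simp add: field_simps)?)
  have k112: "h [2,Suc 0,Suc 0,0] = 0" using XXe1_0[OF B[of 2 0] alpm]  by (simp; (simp add: field_simps)?)
  have k113: "h [2,3,3,0] = 0" using XXe3_0[OF B[of 2 0] alpm]  by (simp; (simp add: field_simps)?)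
  have k114: "h [2,Suc 0,Suc 0,Suc 0] = 0" using XXe1_0[OF B[of 2 1] alpm]  by (simp; (simp add: field_simps)?)
  have k115: "h [2,3,3,Suc 0] = 0" using XXe3_0[OF B[of 2 1] alpm]  by (simp; (simp add: field_simps)?)
  have k116: "h [2,Suc 0,Suc 0,2] = 0" using XXe1_0[OF B[of 2 2] alpm]  by (simp; (simp add: field_simps)?)
  have k117: "h [2,3,3,2] = 0" using XXe3_0[OF B[of 2 2] alpm]  by (simp; (simp add: field_simps)?)
  have k118: "h [2,Suc 0,Suc 0,3] = 0" using XXe1_0[OF B[of 2 3] alpm]  by (simp; (simp add: field_simps)?)
  have k119: "h [2,3,3,3] = 0" using XXe3_0[OF B[of 2 3] alpm]  by (simp; (simp add: field_simps)?)
  have k120: "h [3,0,0,0] = 0" using XXe0_0[OF B[of 3 0] alpm]  by (simp; (simp add: field_simps)?)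
  have k121: "h [3,2,2,0] = 0" using XXe2_0[OF B[of 3 0] alpm]  by (simp; (simp add: field_simps)?)
  have k122: "h [3,0,0,Suc 0] = 0" using XXe0_0[OF B[of 3 1] alpm]  by (simp; (simp add: field_simps)?)
  have k123: "h [3,2,2,Suc 0] = 0" using XXe2_0[OF B[of 3 1] alpm]  by (simp; (simp add: field_simps)?)
  have k124: "h [3,0,0,2] = 0" using XXe0_0[OF B[of 3 2] alpm]  by (simp; (simp add: field_simps)?)
  have k125: "h [3,2,2,2] = 0" using XXe2_0[OF B[of 3 2] alpm]  by (simp; (simp add: field_simps)?)
  have k126: "h [3,0,0,3] = 0" using XXe0_0[OF B[of 3 3] alpm]  by (simp; (simp add: field_simps)?)
  have k127: "h [3,2,2,3] = 0" using XXe2_0[OF B[of 3 3] alpm]  by (simp; (simp add: field_simps)?)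
  have k128: "h [0,Suc 0,0,0] = 0" using XXe0_0[OF C[of 0 1] alpm]  by (simp; (simp add: field_simps)?)
  have k129: "h [0,Suc 0,2,2] = 0" using XXe2_0[OF C[of 0 1] alpm]  by (simp; (simp add: field_simps)?)
  have k130: "h [0,Suc 0,3,3] = 0" using XXe3_0[OF C[of 0 1] alpm]  by (simp; (simp add: field_simps)?)
  have k131: "h [0,3,Suc 0,3] = 0" using XXe5_1[OF B[of 0 3] alpm] k130 by (simp; (simp add: field_simps)?)
  have k132: "h [0,Suc 0,3,Suc 0] = 0" using XXe5_1[OF C[of 0 1] alpm] k82 by (simp; (simp add: field_simps)?)
  have k133: "h [0,3,Suc 0,Suc 0] = 0" using XXe5_1[OF B[of 0 1] alpm] k132 by (simp; (simp add: field_simps)?)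
  have k134: "h [0,2,Suc 0,Suc 0] = 0" using XXe1_0[OF C[of 0 2] alpm]  by (simp; (simp add: field_simps)?)
  have k135: "h [2,0,Suc 0,Suc 0] = 0" using XXe4_1[OF A[of 1 1] alpm] k134 by (simp; (simp add: field_simps)?)
  have k136: "h [0,2,3,3] = 0" using XXe3_0[OF C[of 0 2] alpm]  by (simp; (simp add: field_simps)?)
  have k137: "h [2,0,3,3] = 0" using XXe4_1[OF A[of 3 3] alpm] k136 by (simp; (simp add: field_simps)?)
  have k138: "h [0,3,0,0] = 0" using XXe0_0[OF C[of 0 3] alpm]  by (simp; (simp add: field_simps)?)
  have k139: "h [0,3,2,2] = 0" using XXe2_0[OF C[of 0 3] alpm]  by (simp; (simp add: field_simps)?)
  have k140: "h [Suc 0,0,Suc 0,Suc 0] = 0" using XXe1_0[OF C[of 1 0] alpm]  by (simp; (simp add: field_simps)?)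
  have k141: "h [Suc 0,0,2,2] = 0" using XXe2_0[OF C[of 1 0] alpm]  by (simp; (simp add: field_simps)?)
  have k142: "h [2,Suc 0,2,2] = 0" using XXe6_0[OF A[of 2 2] alpm] k141 k125 by (simp; (simp add: field_simps)?)
  have k143: "h [Suc 0,2,0,2] = 0" using XXe4_1[OF B[of 1 2] alpm] k141 by (simp; (simp add: field_simps)?)
  have k144: "h [0,Suc 0,0,2] = 0" using XXe8_0[OF A[of 0 2] alpm] k124 k143 by (simp; (simp add: field_simps)?)
  have k145: "h [2,3,0,2] = 0" using XXe9_0[OF A[of 0 2] alpm] k124 k143 by (simp; (simp add: field_simps)?)
  have k146: "h [0,2,Suc 0,2] = 0" using XXe6_0[OF B[of 0 2] alpm] k144 k139 by (simp; (simp add: field_simps)?)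
  have k147: "h [2,0,Suc 0,2] = 0" using XXe4_1[OF A[of 1 2] alpm] k146 by (simp; (simp add: field_simps)?)
  have k148: "h [0,Suc 0,2,0] = 0" using XXe4_1[OF C[of 0 1] alpm] k144 by (simp; (simp add: field_simps)?)
  have k149: "h [0,2,3,0] = 0" using XXe9_0[OF B[of 0 0] alpm] k138 k148 by (simp; (simp add: field_simps)?)
  have k150: "h [2,0,3,0] = 0" using XXe4_1[OF A[of 3 0] alpm] k149 by (simp; (simp add: field_simps)?)
  have k151: "h [Suc 0,0,3,3] = 0" using XXe3_0[OF C[of 1 0] alpm]  by (simp; (simp add: field_simps)?)
  have k152: "h [Suc 0,0,2,0] = 0" using XXe4_1[OF C[of 1 0] alpm] k100 by (simp; (simp add: field_simps)?)
  have k153: "h [2,Suc 0,2,0] = 0" using XXe6_0[OF A[of 2 0] alpm] k152 k121 by (simp; (simp add: field_simps)?)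
  have k154: "h [0,3,2,0] = 0" using XXe7_0[OF A[of 2 0] alpm] k152 k121 by (simp; (simp add: field_simps)?)
  have k155: "h [0,2,Suc 0,0] = 0" using XXe6_0[OF B[of 0 0] alpm] k128 k154 by (simp; (simp add: field_simps)?)
  have k156: "h [2,0,Suc 0,0] = 0" using XXe4_1[OF A[of 1 0] alpm] k155 by (simp; (simp add: field_simps)?)
  have k157: "h [Suc 0,2,0,0] = 0" using XXe4_1[OF B[of 1 0] alpm] k152 by (simp; (simp add: field_simps)?)
  have k158: "h [2,3,0,0] = 0" using XXe9_0[OF A[of 0 0] alpm] k120 k157 by (simp; (simp add: field_simps)?)
  have k159: "h [0,3,0,2] = 0" using XXe4_0[OF C[of 0 3] alpm] k154 by (simp; (simp add: field_simps)?)
  have k160: "h [0,2,3,2] = 0" using XXe9_0[OF B[of 0 2] alpm] k159 k129 by (simp; (simp add: field_simps)?)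
  have k161: "h [2,0,3,2] = 0" using XXe4_1[OF A[of 3 2] alpm] k160 by (simp; (simp add: field_simps)?)
  have k162: "h [Suc 0,2,Suc 0,Suc 0] = 0" using XXe1_0[OF C[of 1 2] alpm]  by (simp; (simp add: field_simps)?)
  have k163: "h [Suc 0,2,3,3] = 0" using XXe3_0[OF C[of 1 2] alpm]  by (simp; (simp add: field_simps)?)
  have k164: "h [Suc 0,3,0,0] = 0" using XXe0_0[OF C[of 1 3] alpm]  by (simp; (simp add: field_simps)?)
  have k165: "h [3,Suc 0,0,0] = 0" using XXe5_1[OF A[of 0 0] alpm] k164 by (simp; (simp add: field_simps)?)
  have k166: "h [Suc 0,0,Suc 0,0] = 0" using XXe8_0[OF B[of 1 0] alpm] k164 k33 by (simp; (simp add: field_simps)?)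
  have k167: "h [Suc 0,2,3,0] = 0" using XXe9_0[OF B[of 1 0] alpm] k164 k33 by (simp; (simp add: field_simps)?)
  have k168: "h [3,2,Suc 0,0] = 0" using XXe6_0[OF B[of 3 0] alpm] k165 k35 by (simp; (simp add: field_simps)?)
  have k169: "h [0,3,Suc 0,0] = 0" using XXe7_0[OF A[of 1 0] alpm] k166 k168 by (simp; (simp add: field_simps)?)
  have k170: "h [0,Suc 0,3,0] = 0" using XXe5_0[OF B[of 0 0] alpm] k169 by (simp; (simp add: field_simps)?)
  have k171: "h [3,0,3,0] = 0" using XXe7_0[OF B[of 3 0] alpm] k165 k35 by (simp; (simp add: field_simps)?)
  have k172: "h [0,Suc 0,0,Suc 0] = 0" using XXe8_0[OF C[of 0 1] alpm] k170 k76 by (simp; (simp add: field_simps)?)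
  have k173: "h [0,Suc 0,2,3] = 0" using XXe9_0[OF C[of 0 1] alpm] k170 k76 by (simp; (simp add: field_simps)?)
  have k174: "h [0,3,2,Suc 0] = 0" using XXe6_0[OF C[of 0 3] alpm] k169 k79 by (simp; (simp add: field_simps)?)
  have k175: "h [0,3,0,3] = 0" using XXe7_0[OF C[of 0 3] alpm] k169 k79 by (simp; (simp add: field_simps)?)
  have k176: "h [Suc 0,3,2,2] = 0" using XXe2_0[OF C[of 1 3] alpm]  by (simp; (simp add: field_simps)?)
  have k177: "h [3,Suc 0,2,2] = 0" using XXe5_1[OF A[of 2 2] alpm] k176 by (simp; (simp add: field_simps)?)
  have k178: "h [Suc 0,2,Suc 0,2] = 0" using XXe6_0[OF B[of 1 2] alpm] k9 k176 by (simp; (simp add: field_simps)?)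
  have k179: "h [Suc 0,0,3,2] = 0" using XXe7_0[OF B[of 1 2] alpm] k9 k176 by (simp; (simp add: field_simps)?)
  have k180: "h [3,0,Suc 0,2] = 0" using XXe8_0[OF B[of 3 2] alpm] k11 k177 by (simp; (simp add: field_simps)?)
  have k181: "h [2,3,Suc 0,2] = 0" using XXe9_0[OF A[of 1 2] alpm] k180 k178 by (simp; (simp add: field_simps)?)
  have k182: "h [2,Suc 0,3,2] = 0" using XXe5_0[OF B[of 2 2] alpm] k181 by (simp; (simp add: field_simps)?)
  have k183: "h [3,2,3,2] = 0" using XXe9_0[OF B[of 3 2] alpm] k11 k177 by (simp; (simp add: field_simps)?)
  have k184: "h [Suc 0,0,2,Suc 0] = 0" using XXe6_0[OF C[of 1 0] alpm] k166 k179 by (simp; (simp add: field_simps)?)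
  have k185: "h [2,Suc 0,2,Suc 0] = 0" using XXe6_0[OF A[of 2 1] alpm] k184 k123 by (simp; (simp add: field_simps)?)
  have k186: "h [Suc 0,2,0,Suc 0] = 0" using XXe4_1[OF B[of 1 1] alpm] k184 by (simp; (simp add: field_simps)?)
  have k187: "h [2,3,0,Suc 0] = 0" using XXe9_0[OF A[of 0 1] alpm] k122 k186 by (simp; (simp add: field_simps)?)
  have k188: "h [Suc 0,3,2,Suc 0] = 0" using XXe6_0[OF C[of 1 3] alpm] k92 k102 by (simp; (simp add: field_simps)?)
  have k189: "h [3,Suc 0,2,Suc 0] = 0" using XXe5_1[OF A[of 2 1] alpm] k188 by (simp; (simp add: field_simps)?)
  have k190: "h [Suc 0,0,3,Suc 0] = 0" using XXe7_0[OF B[of 1 1] alpm] k5 k188 by (simp; (simp add: field_simps)?)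
  have k191: "h [3,0,Suc 0,Suc 0] = 0" using XXe8_0[OF B[of 3 1] alpm] k7 k189 by (simp; (simp add: field_simps)?)
  have k192: "h [2,3,Suc 0,Suc 0] = 0" using XXe9_0[OF A[of 1 1] alpm] k191 k162 by (simp; (simp add: field_simps)?)
  have k193: "h [2,Suc 0,3,Suc 0] = 0" using XXe5_0[OF B[of 2 1] alpm] k192 by (simp; (simp add: field_simps)?)
  have k194: "h [3,2,3,Suc 0] = 0" using XXe9_0[OF B[of 3 1] alpm] k7 k189 by (simp; (simp add: field_simps)?)
  have k195: "h [Suc 0,0,Suc 0,3] = 0" using XXe5_0[OF C[of 1 0] alpm] k190 by (simp; (simp add: field_simps)?)
  have k196: "h [Suc 0,3,0,3] = 0" using XXe7_0[OF C[of 1 3] alpm] k92 k102 by (simp; (simp add: field_simps)?)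
  have k197: "h [3,Suc 0,0,3] = 0" using XXe5_1[OF A[of 0 3] alpm] k196 by (simp; (simp add: field_simps)?)
  have k198: "h [3,2,Suc 0,3] = 0" using XXe6_0[OF B[of 3 3] alpm] k197 k47 by (simp; (simp add: field_simps)?)
  have k199: "h [3,0,3,3] = 0" using XXe7_0[OF B[of 3 3] alpm] k197 k47 by (simp; (simp add: field_simps)?)
  have k200: "h [Suc 0,3,0,Suc 0] = 0" using XXe8_0[OF C[of 1 3] alpm] k90 k104 by (simp; (simp add: field_simps)?)
  have k201: "h [3,Suc 0,0,Suc 0] = 0" using XXe5_1[OF A[of 0 1] alpm] k200 by (simp; (simp add: field_simps)?)
  have k202: "h [Suc 0,2,3,Suc 0] = 0" using XXe9_0[OF B[of 1 1] alpm] k200 k37 by (simp; (simp add: field_simps)?)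
  have k203: "h [3,2,Suc 0,Suc 0] = 0" using XXe6_0[OF B[of 3 1] alpm] k201 k39 by (simp; (simp add: field_simps)?)
  have k204: "h [3,0,3,Suc 0] = 0" using XXe7_0[OF B[of 3 1] alpm] k201 k39 by (simp; (simp add: field_simps)?)
  have k205: "h [Suc 0,2,Suc 0,3] = 0" using XXe5_0[OF C[of 1 2] alpm] k202 by (simp; (simp add: field_simps)?)
  have k206: "h [Suc 0,3,2,3] = 0" using XXe9_0[OF C[of 1 3] alpm] k90 k104 by (simp; (simp add: field_simps)?)
  have k207: "h [3,Suc 0,2,3] = 0" using XXe5_1[OF A[of 2 3] alpm] k206 by (simp; (simp add: field_simps)?)
  have k208: "h [3,0,Suc 0,3] = 0" using XXe8_0[OF B[of 3 3] alpm] k15 k207 by (simp; (simp add: field_simps)?)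
  have k209: "h [2,3,Suc 0,3] = 0" using XXe9_0[OF A[of 1 3] alpm] k208 k205 by (simp; (simp add: field_simps)?)
  have k210: "h [2,Suc 0,3,3] = 0" using XXe5_0[OF B[of 2 3] alpm] k209 by (simp; (simp add: field_simps)?)
  have k211: "h [3,2,3,3] = 0" using XXe9_0[OF B[of 3 3] alpm] k15 k207 by (simp; (simp add: field_simps)?)
  have k212: "h [2,Suc 0,0,0] = 0" using XXe0_0[OF C[of 2 1] alpm]  by (simp; (simp add: field_simps)?)
  have k213: "h [2,Suc 0,0,2] = 0" using XXe4_0[OF C[of 2 1] alpm] k153 by (simp; (simp add: field_simps)?)
  have k214: "h [2,Suc 0,0,3] = 0" using XXe7_0[OF C[of 2 1] alpm] k112 k182 by (simp; (simp add: field_simps)?)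
  have k215: "h [2,3,2,2] = 0" using XXe2_0[OF C[of 2 3] alpm]  by (simp; (simp add: field_simps)?)
  have k216: "h [2,3,2,0] = 0" using XXe4_1[OF C[of 2 3] alpm] k145 by (simp; (simp add: field_simps)?)
  have k217: "h [2,3,2,3] = 0" using XXe9_0[OF C[of 2 3] alpm] k113 k181 by (simp; (simp add: field_simps)?)
  have k218: "h [3,0,2,2] = 0" using XXe2_0[OF C[of 3 0] alpm]  by (simp; (simp add: field_simps)?)
  have k219: "h [3,2,0,2] = 0" using XXe4_1[OF B[of 3 2] alpm] k218 by (simp; (simp add: field_simps)?)
  have k220: "h [3,0,2,0] = 0" using XXe4_1[OF C[of 3 0] alpm] k124 by (simp; (simp add: field_simps)?)
  have k221: "h [3,2,0,0] = 0" using XXe4_1[OF B[of 3 0] alpm] k220 by (simp; (simp add: field_simps)?)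
  have k222: "h [3,0,2,3] = 0" using XXe9_0[OF C[of 3 0] alpm] k171 k180 by (simp; (simp add: field_simps)?)
  have k223: "h [3,2,0,3] = 0" using XXe4_1[OF B[of 3 3] alpm] k222 by (simp; (simp add: field_simps)?)
  have k224: "h [3,0,Suc 0,0] = ((0) + (-1) * \<i>) * h [Suc 0,2,Suc 0,0]" using XXe8_1[OF A[of 1 0] alpm] k64 by (simp; (simp add: field_simps)?)
  have k225: "h [2,3,Suc 0,0] = ((1) + (1) * \<i>) * h [Suc 0,2,Suc 0,0]" using XXe9_0[OF A[of 1 0] alpm] k224 by (simp; (simp add: field_simps)?)
  have k226: "h [2,Suc 0,3,0] = ((1) + (1) * \<i>) * h [Suc 0,2,Suc 0,0]" using XXe5_0[OF B[of 2 0] alpm] k225 by (simp; (simp add: field_simps)?)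
  have k227: "h [2,Suc 0,0,Suc 0] = ((0) + (-1) * \<i>) * h [Suc 0,2,Suc 0,0]" using XXe8_0[OF C[of 2 1] alpm] k226 k116 by (simp; (simp add: field_simps)?)
  have k228: "h [2,Suc 0,2,3] = ((-1) + (0) * \<i>) * h [Suc 0,2,Suc 0,0]" using XXe9_0[OF C[of 2 1] alpm] k226 k116 by (simp; (simp add: field_simps)?)
  have k229: "h [2,3,2,Suc 0] = ((1) + (0) * \<i>) * h [Suc 0,2,Suc 0,0]" using XXe6_0[OF C[of 2 3] alpm] k225 k117 by (simp; (simp add: field_simps)?)
  have k230: "h [2,0,3,Suc 0] = ((-1) + (1) * \<i>) * h [Suc 0,2,Suc 0,0]" using XXe7_0[OF B[of 2 1] alpm] k227 k229 by (simp; (simp add: field_simps)?)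
  have k231: "h [0,2,3,Suc 0] = ((-1) + (1) * \<i>) * h [Suc 0,2,Suc 0,0]" using XXe4_0[OF A[of 3 1] alpm] k230 by (simp; (simp add: field_simps)?)
  have k232: "h [0,2,Suc 0,3] = ((-1) + (1) * \<i>) * h [Suc 0,2,Suc 0,0]" using XXe5_0[OF C[of 0 2] alpm] k231 by (simp; (simp add: field_simps)?)
  have k233: "h [2,0,Suc 0,3] = ((-1) + (1) * \<i>) * h [Suc 0,2,Suc 0,0]" using XXe4_1[OF A[of 1 3] alpm] k232 by (simp; (simp add: field_simps)?)
  have k234: "h [2,3,0,3] = ((0) + (-1) * \<i>) * h [Suc 0,2,Suc 0,0]" using XXe7_0[OF C[of 2 3] alpm] k225 k117 by (simp; (simp add: field_simps)?)
  have k235: "h [3,2,0,Suc 0] = ((-1) + (-1) * \<i>) * h [Suc 0,2,Suc 0,0]" using XXe6_2[OF A[of 0 1] alpm] k227 k94 by (simp; (simp add: field_simps)?)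
  have k236: "h [0,3,0,Suc 0] = ((1) + (0) * \<i>) * h [Suc 0,2,Suc 0,0]" using XXe7_0[OF A[of 0 1] alpm] k94 k235 by (simp; (simp add: field_simps)?)
  have k237: "h [3,0,2,Suc 0] = ((-1) + (-1) * \<i>) * h [Suc 0,2,Suc 0,0]" using XXe4_0[OF B[of 3 1] alpm] k235 by (simp; (simp add: field_simps)?)
  have k238: "h [0,Suc 0,2,Suc 0] = ((0) + (1) * \<i>) * h [Suc 0,2,Suc 0,0]" using XXe8_0[OF A[of 2 1] alpm] k237 k95 by (simp; (simp add: field_simps)?)
  have k239: "h [Suc 0,2,0,3] = ((-1) + (-1) * \<i>) * h [Suc 0,2,Suc 0,0]" using XXe9_2[OF A[of 0 3] alpm] k234 k126 by (simp; (simp add: field_simps)?)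
  have k240: "h [0,Suc 0,0,3] = ((-1) + (0) * \<i>) * h [Suc 0,2,Suc 0,0]" using XXe8_0[OF A[of 0 3] alpm] k126 k239 by (simp; (simp add: field_simps)?)
  have k241: "h [Suc 0,0,2,3] = ((-1) + (-1) * \<i>) * h [Suc 0,2,Suc 0,0]" using XXe4_0[OF B[of 1 3] alpm] k239 by (simp; (simp add: field_simps)?)
  have k242: "h [0,3,2,3] = ((0) + (1) * \<i>) * h [Suc 0,2,Suc 0,0]" using XXe7_0[OF A[of 2 3] alpm] k241 k127 by (simp; (simp add: field_simps)?)
  have k243: "h [Suc 0,3,2,0] = ((1) + (-1) * \<i>) * h [Suc 0,2,Suc 0,0]" using XXe6_2[OF B[of 1 0] alpm] k1 by (simp; (simp add: field_simps)?)
  have k244: "h [3,Suc 0,2,0] = ((1) + (-1) * \<i>) * h [Suc 0,2,Suc 0,0]" using XXe5_1[OF A[of 2 0] alpm] k243 by (simp; (simp add: field_simps)?)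
  have k245: "h [Suc 0,0,3,0] = ((0) + (1) * \<i>) * h [Suc 0,2,Suc 0,0]" using XXe7_0[OF B[of 1 0] alpm] k1 k243 by (simp; (simp add: field_simps)?)
  have k246: "h [3,2,3,0] = ((1) + (0) * \<i>) * h [Suc 0,2,Suc 0,0]" using XXe9_0[OF B[of 3 0] alpm] k3 k244 by (simp; (simp add: field_simps)?)
  have k247: "h [Suc 0,3,0,2] = ((1) + (-1) * \<i>) * h [Suc 0,2,Suc 0,0]" using XXe4_0[OF C[of 1 3] alpm] k243 by (simp; (simp add: field_simps)?)
  have k248: "h [3,Suc 0,0,2] = ((1) + (-1) * \<i>) * h [Suc 0,2,Suc 0,0]" using XXe5_1[OF A[of 0 2] alpm] k247 by (simp; (simp add: field_simps)?)
  have k249: "h [Suc 0,0,Suc 0,2] = ((-1) + (0) * \<i>) * h [Suc 0,2,Suc 0,0]" using XXe8_0[OF B[of 1 2] alpm] k247 k41 by (simp; (simp add: field_simps)?)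
  have k250: "h [Suc 0,2,3,2] = ((0) + (1) * \<i>) * h [Suc 0,2,Suc 0,0]" using XXe9_0[OF B[of 1 2] alpm] k247 k41 by (simp; (simp add: field_simps)?)
  have k251: "h [3,2,Suc 0,2] = ((0) + (-1) * \<i>) * h [Suc 0,2,Suc 0,0]" using XXe6_0[OF B[of 3 2] alpm] k248 k43 by (simp; (simp add: field_simps)?)
  have k252: "h [0,3,Suc 0,2] = ((1) + (1) * \<i>) * h [Suc 0,2,Suc 0,0]" using XXe7_0[OF A[of 1 2] alpm] k249 k251 by (simp; (simp add: field_simps)?)
  have k253: "h [0,Suc 0,3,2] = ((1) + (1) * \<i>) * h [Suc 0,2,Suc 0,0]" using XXe5_0[OF B[of 0 2] alpm] k252 by (simp; (simp add: field_simps)?)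
  have k254: "h [3,0,3,2] = ((-1) + (0) * \<i>) * h [Suc 0,2,Suc 0,0]" using XXe7_0[OF B[of 3 2] alpm] k248 k43 by (simp; (simp add: field_simps)?)
  show ?thesis unfolding less4 by (simp add: k0 k1 k2 k3 k4 k5 k6 k7 k8 k9 k10 k11 k12 k13 k14 k15 k16 k17 k18 k19 k20 k21 k22 k23 k24 k25 k26 k27 k28 k29 k30 k31 k32 k33 k34 k35 k36 k37 k38 k39 k40 k41 k42 k43 k44 k45 k46 k47 k48 k49 k50 k51 k52 k53 k54 k55 k56 k57 k58 k59 k60 k61 k62 k63 k64 k65 k66 k67 k68 k69 k70 k71 k72 k73 k74 k75 k76 k77 k78 k79 k80 k81 k82 k83 k84 k85 k86 k87 k88 k89 k90 k91 k92 k93 k94 k95 k96 k97 k98 k99 k100 k101 k102 k103 k104 k105 k106 k107 k108 k109 k110 k111 k112 k113 k114 k115 k116 k117 k118 k119 k120 k121 k122 k123 k124 k125 k126 k127 k128 k129 k130 k131 k132 k133 k134 k135 k136 k137 k138 k139 k140 k141 k142 k143 k144 k145 k146 k147 k148 k149 k150 k151 k152 k153 k154 k155 k156 k157 k158 k159 k160 k161 k162 k163 k164 k165 k166 k167 k168 k169 k170 k171 k172 k173 k174 k175 k176 k177 k178 k179 k180 k181 k182 k183 k184 k185 k186 k187 k188 k189 k190 k191 k192 k193 k194 k195 k196 k197 k198 k199 k200 k201 k202 k203 k204 k205 k206 k207 k208 k209 k210 k211 k212 k213 k214 k215 k216 k217 k218 k219 k220 k221 k222 k223 k224 k225 k226 k227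 k228 k229 k230 k231 k232 k233 k234 k235 k236 k237 k238 k239 k240 k241 k242 k243 k244 k245 k246 k247 k248 k249 k250 k251 k252 k253 k254 X0_def X0tab_def; (simp add: field_simps)?)
qed

lemma XU_core_m:
  fixes h :: "nat list \<Rightarrow> complex"
  assumes A: "\<And>a b. XXeq (-1) (\<lambda>x y. h [x,y,a,b])"
    and B: "\<And>a b. XXeq (-1) (\<lambda>x y. h [a,x,y,b])"
    and C: "\<And>a b. XXeq (-1) (\<lambda>x y. h [a,b,x,y])"
  shows "\<forall>a<4. \<forall>b<4. \<forall>c<4. \<forall>d<4. h [a,b,c,d] = X0 (-1) [a,b,c,d] * h [1,2,1,0]"
proof -
  have alpm: "(-1::complex) \<in> {1,-1}" by simp
  have k0: "h [0,0,0,0] = 0" using XXe0_0[OF A[of 0 0] alpm]  by (simp; (simp add: field_simps)?)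
  have k1: "h [Suc 0,Suc 0,0,0] = 0" using XXe1_0[OF A[of 0 0] alpm]  by (simp; (simp add: field_simps)?)
  have k2: "h [2,2,0,0] = 0" using XXe2_0[OF A[of 0 0] alpm]  by (simp; (simp add: field_simps)?)
  have k3: "h [3,3,0,0] = 0" using XXe3_0[OF A[of 0 0] alpm]  by (simp; (simp add: field_simps)?)
  have k4: "h [0,0,0,Suc 0] = 0" using XXe0_0[OF A[of 0 1] alpm]  by (simp; (simp add: field_simps)?)
  have k5: "h [Suc 0,Suc 0,0,Suc 0] = 0" using XXe1_0[OF A[of 0 1] alpm]  by (simp; (simp add: field_simps)?)
  have k6: "h [2,2,0,Suc 0] = 0" using XXe2_0[OF A[of 0 1] alpm]  by (simp; (simp add: field_simps)?)
  have k7: "h [3,3,0,Suc 0] = 0" using XXe3_0[OF A[of 0 1] alpm]  by (simp; (simp add: field_simps)?)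
  have k8: "h [0,0,0,2] = 0" using XXe0_0[OF A[of 0 2] alpm]  by (simp; (simp add: field_simps)?)
  have k9: "h [Suc 0,Suc 0,0,2] = 0" using XXe1_0[OF A[of 0 2] alpm]  by (simp; (simp add: field_simps)?)
  have k10: "h [2,2,0,2] = 0" using XXe2_0[OF A[of 0 2] alpm]  by (simp; (simp add: field_simps)?)
  have k11: "h [3,3,0,2] = 0" using XXe3_0[OF A[of 0 2] alpm]  by (simp; (simp add: field_simps)?)
  have k12: "h [0,0,0,3] = 0" using XXe0_0[OF A[of 0 3] alpm]  by (simp; (simp add: field_simps)?)
  have k13: "h [Suc 0,Suc 0,0,3] = 0" using XXe1_0[OF A[of 0 3] alpm]  by (simp; (simp add: field_simps)?)
  have k14: "h [2,2,0,3] = 0" using XXe2_0[OF A[of 0 3] alpm]  by (simp; (simp add: field_simps)?)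
  have k15: "h [3,3,0,3] = 0" using XXe3_0[OF A[of 0 3] alpm]  by (simp; (simp add: field_simps)?)
  have k16: "h [0,0,Suc 0,0] = 0" using XXe0_0[OF A[of 1 0] alpm]  by (simp; (simp add: field_simps)?)
  have k17: "h [Suc 0,Suc 0,Suc 0,0] = 0" using XXe1_0[OF A[of 1 0] alpm]  by (simp; (simp add: field_simps)?)
  have k18: "h [2,2,Suc 0,0] = 0" using XXe2_0[OF A[of 1 0] alpm]  by (simp; (simp add: field_simps)?)
  have k19: "h [3,3,Suc 0,0] = 0" using XXe3_0[OF A[of 1 0] alpm]  by (simp; (simp add: field_simps)?)
  have k20: "h [0,0,Suc 0,Suc 0] = 0" using XXe0_0[OF A[of 1 1] alpm]  by (simp; (simp add: field_simps)?)
  have k21: "h [Suc 0,Suc 0,Suc 0,Suc 0] = 0" using XXe1_0[OF A[of 1 1] alpm]  by (simp; (simp add: field_simps)?)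
  have k22: "h [2,2,Suc 0,Suc 0] = 0" using XXe2_0[OF A[of 1 1] alpm]  by (simp; (simp add: field_simps)?)
  have k23: "h [3,3,Suc 0,Suc 0] = 0" using XXe3_0[OF A[of 1 1] alpm]  by (simp; (simp add: field_simps)?)
  have k24: "h [0,0,Suc 0,2] = 0" using XXe0_0[OF A[of 1 2] alpm]  by (simp; (simp add: field_simps)?)
  have k25: "h [Suc 0,Suc 0,Suc 0,2] = 0" using XXe1_0[OF A[of 1 2] alpm]  by (simp; (simp add: field_simps)?)
  have k26: "h [2,2,Suc 0,2] = 0" using XXe2_0[OF A[of 1 2] alpm]  by (simp; (simp add: field_simps)?)
  have k27: "h [3,3,Suc 0,2] = 0" using XXe3_0[OF A[of 1 2] alpm]  by (simp; (simp add: field_simps)?)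
  have k28: "h [0,0,Suc 0,3] = 0" using XXe0_0[OF A[of 1 3] alpm]  by (simp; (simp add: field_simps)?)
  have k29: "h [Suc 0,Suc 0,Suc 0,3] = 0" using XXe1_0[OF A[of 1 3] alpm]  by (simp; (simp add: field_simps)?)
  have k30: "h [2,2,Suc 0,3] = 0" using XXe2_0[OF A[of 1 3] alpm]  by (simp; (simp add: field_simps)?)
  have k31: "h [3,3,Suc 0,3] = 0" using XXe3_0[OF A[of 1 3] alpm]  by (simp; (simp add: field_simps)?)
  have k32: "h [0,0,2,0] = 0" using XXe0_0[OF A[of 2 0] alpm]  by (simp; (simp add: field_simps)?)
  have k33: "h [Suc 0,Suc 0,2,0] = 0" using XXe1_0[OF A[of 2 0] alpm]  by (simp; (simp add: field_simps)?)
  have k34: "h [2,2,2,0] = 0" using XXe2_0[OF A[of 2 0] alpm]  by (simp; (simp add: field_simps)?)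
  have k35: "h [3,3,2,0] = 0" using XXe3_0[OF A[of 2 0] alpm]  by (simp; (simp add: field_simps)?)
  have k36: "h [0,0,2,Suc 0] = 0" using XXe0_0[OF A[of 2 1] alpm]  by (simp; (simp add: field_simps)?)
  have k37: "h [Suc 0,Suc 0,2,Suc 0] = 0" using XXe1_0[OF A[of 2 1] alpm]  by (simp; (simp add: field_simps)?)
  have k38: "h [2,2,2,Suc 0] = 0" using XXe2_0[OF A[of 2 1] alpm]  by (simp; (simp add: field_simps)?)
  have k39: "h [3,3,2,Suc 0] = 0" using XXe3_0[OF A[of 2 1] alpm]  by (simp; (simp add: field_simps)?)
  have k40: "h [0,0,2,2] = 0" using XXe0_0[OF A[of 2 2] alpm]  by (simp; (simp add: field_simps)?)
  have k41: "h [Suc 0,Suc 0,2,2] = 0" using XXe1_0[OF A[of 2 2] alpm]  by (simp; (simp add: field_simps)?)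
  have k42: "h [2,2,2,2] = 0" using XXe2_0[OF A[of 2 2] alpm]  by (simp; (simp add: field_simps)?)
  have k43: "h [3,3,2,2] = 0" using XXe3_0[OF A[of 2 2] alpm]  by (simp; (simp add: field_simps)?)
  have k44: "h [0,0,2,3] = 0" using XXe0_0[OF A[of 2 3] alpm]  by (simp; (simp add: field_simps)?)
  have k45: "h [Suc 0,Suc 0,2,3] = 0" using XXe1_0[OF A[of 2 3] alpm]  by (simp; (simp add: field_simps)?)
  have k46: "h [2,2,2,3] = 0" using XXe2_0[OF A[of 2 3] alpm]  by (simp; (simp add: field_simps)?)
  have k47: "h [3,3,2,3] = 0" using XXe3_0[OF A[of 2 3] alpm]  by (simp; (simp add: field_simps)?)
  have k48: "h [0,0,3,0] = 0" using XXe0_0[OF A[of 3 0] alpm]  by (simp; (simp add: field_simps)?)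
  have k49: "h [Suc 0,Suc 0,3,0] = 0" using XXe1_0[OF A[of 3 0] alpm]  by (simp; (simp add: field_simps)?)
  have k50: "h [2,2,3,0] = 0" using XXe2_0[OF A[of 3 0] alpm]  by (simp; (simp add: field_simps)?)
  have k51: "h [3,3,3,0] = 0" using XXe3_0[OF A[of 3 0] alpm]  by (simp; (simp add: field_simps)?)
  have k52: "h [0,0,3,Suc 0] = 0" using XXe0_0[OF A[of 3 1] alpm]  by (simp; (simp add: field_simps)?)
  have k53: "h [Suc 0,Suc 0,3,Suc 0] = 0" using XXe1_0[OF A[of 3 1] alpm]  by (simp; (simp add: field_simps)?)
  have k54: "h [2,2,3,Suc 0] = 0" using XXe2_0[OF A[of 3 1] alpm]  by (simp; (simp add: field_simps)?)
  have k55: "h [3,3,3,Suc 0] = 0" using XXe3_0[OF A[of 3 1] alpm]  by (simp; (simp add: field_simps)?)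
  have k56: "h [0,0,3,2] = 0" using XXe0_0[OF A[of 3 2] alpm]  by (simp; (simp add: field_simps)?)
  have k57: "h [Suc 0,Suc 0,3,2] = 0" using XXe1_0[OF A[of 3 2] alpm]  by (simp; (simp add: field_simps)?)
  have k58: "h [2,2,3,2] = 0" using XXe2_0[OF A[of 3 2] alpm]  by (simp; (simp add: field_simps)?)
  have k59: "h [3,3,3,2] = 0" using XXe3_0[OF A[of 3 2] alpm]  by (simp; (simp add: field_simps)?)
  have k60: "h [0,0,3,3] = 0" using XXe0_0[OF A[of 3 3] alpm]  by (simp; (simp add: field_simps)?)
  have k61: "h [Suc 0,Suc 0,3,3] = 0" using XXe1_0[OF A[of 3 3] alpm]  by (simp; (simp add: field_simps)?)
  have k62: "h [2,2,3,3] = 0" using XXe2_0[OF A[of 3 3] alpm]  by (simp; (simp add: field_simps)?)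
  have k63: "h [3,3,3,3] = 0" using XXe3_0[OF A[of 3 3] alpm]  by (simp; (simp add: field_simps)?)
  have k64: "h [0,Suc 0,Suc 0,0] = 0" using XXe1_0[OF B[of 0 0] alpm]  by (simp; (simp add: field_simps)?)
  have k65: "h [0,2,2,0] = 0" using XXe2_0[OF B[of 0 0] alpm]  by (simp; (simp add: field_simps)?)
  have k66: "h [2,0,2,0] = 0" using XXe4_1[OF A[of 2 0] alpm] k65 by (simp; (simp add: field_simps)?)
  have k67: "h [0,3,3,0] = 0" using XXe3_0[OF B[of 0 0] alpm]  by (simp; (simp add: field_simps)?)
  have k68: "h [0,2,0,0] = 0" using XXe4_1[OF B[of 0 0] alpm] k32 by (simp; (simp add: field_simps)?)
  have k69: "h [2,0,0,0] = 0" using XXe4_1[OF A[of 0 0] alpm] k68 by (simp; (simp add: field_simps)?)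
  have k70: "h [0,Suc 0,Suc 0,Suc 0] = 0" using XXe1_0[OF B[of 0 1] alpm]  by (simp; (simp add: field_simps)?)
  have k71: "h [0,2,2,Suc 0] = 0" using XXe2_0[OF B[of 0 1] alpm]  by (simp; (simp add: field_simps)?)
  have k72: "h [2,0,2,Suc 0] = 0" using XXe4_1[OF A[of 2 1] alpm] k71 by (simp; (simp add: field_simps)?)
  have k73: "h [0,3,3,Suc 0] = 0" using XXe3_0[OF B[of 0 1] alpm]  by (simp; (simp add: field_simps)?)
  have k74: "h [0,2,0,Suc 0] = 0" using XXe4_1[OF B[of 0 1] alpm] k36 by (simp; (simp add: field_simps)?)
  have k75: "h [2,0,0,Suc 0] = 0" using XXe4_1[OF A[of 0 1] alpm] k74 by (simp; (simp add: field_simps)?)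
  have k76: "h [0,Suc 0,Suc 0,2] = 0" using XXe1_0[OF B[of 0 2] alpm]  by (simp; (simp add: field_simps)?)
  have k77: "h [0,2,2,2] = 0" using XXe2_0[OF B[of 0 2] alpm]  by (simp; (simp add: field_simps)?)
  have k78: "h [2,0,2,2] = 0" using XXe4_1[OF A[of 2 2] alpm] k77 by (simp; (simp add: field_simps)?)
  have k79: "h [0,3,3,2] = 0" using XXe3_0[OF B[of 0 2] alpm]  by (simp; (simp add: field_simps)?)
  have k80: "h [0,2,0,2] = 0" using XXe4_1[OF B[of 0 2] alpm] k40 by (simp; (simp add: field_simps)?)
  have k81: "h [2,0,0,2] = 0" using XXe4_1[OF A[of 0 2] alpm] k80 by (simp; (simp add: field_simps)?)
  have k82: "h [0,Suc 0,Suc 0,3] = 0" using XXe1_0[OF B[of 0 3] alpm]  by (simp; (simp add: field_simps)?)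
  have k83: "h [0,2,2,3] = 0" using XXe2_0[OF B[of 0 3] alpm]  by (simp; (simp add: field_simps)?)
  have k84: "h [2,0,2,3] = 0" using XXe4_1[OF A[of 2 3] alpm] k83 by (simp; (simp add: field_simps)?)
  have k85: "h [0,3,3,3] = 0" using XXe3_0[OF B[of 0 3] alpm]  by (simp; (simp add: field_simps)?)
  have k86: "h [0,2,0,3] = 0" using XXe4_1[OF B[of 0 3] alpm] k44 by (simp; (simp add: field_simps)?)
  have k87: "h [2,0,0,3] = 0" using XXe4_1[OF A[of 0 3] alpm] k86 by (simp; (simp add: field_simps)?)
  have k88: "h [Suc 0,0,0,0] = 0" using XXe0_0[OF B[of 1 0] alpm]  by (simp; (simp add: field_simps)?)
  have k89: "h [Suc 0,2,2,0] = 0" using XXe2_0[OF B[of 1 0] alpm]  by (simp; (simp add: field_simps)?)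
  have k90: "h [Suc 0,3,3,0] = 0" using XXe3_0[OF B[of 1 0] alpm]  by (simp; (simp add: field_simps)?)
  have k91: "h [3,Suc 0,3,0] = 0" using XXe5_1[OF A[of 3 0] alpm] k90 by (simp; (simp add: field_simps)?)
  have k92: "h [Suc 0,3,Suc 0,0] = 0" using XXe5_1[OF B[of 1 0] alpm] k49 by (simp; (simp add: field_simps)?)
  have k93: "h [3,Suc 0,Suc 0,0] = 0" using XXe5_1[OF A[of 1 0] alpm] k92 by (simp; (simp add: field_simps)?)
  have k94: "h [Suc 0,0,0,Suc 0] = 0" using XXe0_0[OF B[of 1 1] alpm]  by (simp; (simp add: field_simps)?)
  have k95: "h [Suc 0,2,2,Suc 0] = 0" using XXe2_0[OF B[of 1 1] alpm]  by (simp; (simp add: field_simps)?)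
  have k96: "h [Suc 0,3,3,Suc 0] = 0" using XXe3_0[OF B[of 1 1] alpm]  by (simp; (simp add: field_simps)?)
  have k97: "h [3,Suc 0,3,Suc 0] = 0" using XXe5_1[OF A[of 3 1] alpm] k96 by (simp; (simp add: field_simps)?)
  have k98: "h [Suc 0,3,Suc 0,Suc 0] = 0" using XXe5_1[OF B[of 1 1] alpm] k53 by (simp; (simp add: field_simps)?)
  have k99: "h [3,Suc 0,Suc 0,Suc 0] = 0" using XXe5_1[OF A[of 1 1] alpm] k98 by (simp; (simp add: field_simps)?)
  have k100: "h [Suc 0,0,0,2] = 0" using XXe0_0[OF B[of 1 2] alpm]  by (simp; (simp add: field_simps)?)
  have k101: "h [Suc 0,2,2,2] = 0" using XXe2_0[OF B[of 1 2] alpm]  by (simp; (simp add: field_simps)?)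
  have k102: "h [Suc 0,3,3,2] = 0" using XXe3_0[OF B[of 1 2] alpm]  by (simp; (simp add: field_simps)?)
  have k103: "h [3,Suc 0,3,2] = 0" using XXe5_1[OF A[of 3 2] alpm] k102 by (simp; (simp add: field_simps)?)
  have k104: "h [Suc 0,3,Suc 0,2] = 0" using XXe5_1[OF B[of 1 2] alpm] k57 by (simp; (simp add: field_simps)?)
  have k105: "h [3,Suc 0,Suc 0,2] = 0" using XXe5_1[OF A[of 1 2] alpm] k104 by (simp; (simp add: field_simps)?)
  have k106: "h [Suc 0,0,0,3] = 0" using XXe0_0[OF B[of 1 3] alpm]  by (simp; (simp add: field_simps)?)
  have k107: "h [Suc 0,2,2,3] = 0" using XXe2_0[OF B[of 1 3] alpm]  by (simp; (simp add: field_simps)?)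
  have k108: "h [Suc 0,3,3,3] = 0" using XXe3_0[OF B[of 1 3] alpm]  by (simp; (simp add: field_simps)?)
  have k109: "h [3,Suc 0,3,3] = 0" using XXe5_1[OF A[of 3 3] alpm] k108 by (simp; (simp add: field_simps)?)
  have k110: "h [Suc 0,3,Suc 0,3] = 0" using XXe5_1[OF B[of 1 3] alpm] k61 by (simp; (simp add: field_simps)?)
  have k111: "h [3,Suc 0,Suc 0,3] = 0" using XXe5_1[OF A[of 1 3] alpm] k110 by (simp; (simp add: field_simps)?)
  have k112: "h [2,Suc 0,Suc 0,0] = 0" using XXe1_0[OF B[of 2 0] alpm]  by (simp; (simp add: field_simps)?)
  have k113: "h [2,3,3,0] = 0" using XXe3_0[OF B[of 2 0] alpm]  by (simp; (simp add: field_simps)?)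
  have k114: "h [2,Suc 0,Suc 0,Suc 0] = 0" using XXe1_0[OF B[of 2 1] alpm]  by (simp; (simp add: field_simps)?)
  have k115: "h [2,3,3,Suc 0] = 0" using XXe3_0[OF B[of 2 1] alpm]  by (simp; (simp add: field_simps)?)
  have k116: "h [2,Suc 0,Suc 0,2] = 0" using XXe1_0[OF B[of 2 2] alpm]  by (simp; (simp add: field_simps)?)
  have k117: "h [2,3,3,2] = 0" using XXe3_0[OF B[of 2 2] alpm]  by (simp; (simp add: field_simps)?)
  have k118: "h [2,Suc 0,Suc 0,3] = 0" using XXe1_0[OF B[of 2 3] alpm]  by (simp; (simp add: field_simps)?)
  have k119: "h [2,3,3,3] = 0" using XXe3_0[OF B[of 2 3] alpm]  by (simp; (simp add: field_simps)?)
  have k120: "h [3,0,0,0] = 0" using XXe0_0[OF B[of 3 0] alpm]  by (simp; (simp add: field_simps)?)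
  have k121: "h [3,2,2,0] = 0" using XXe2_0[OF B[of 3 0] alpm]  by (simp; (simp add: field_simps)?)
  have k122: "h [3,0,0,Suc 0] = 0" using XXe0_0[OF B[of 3 1] alpm]  by (simp; (simp add: field_simps)?)
  have k123: "h [3,2,2,Suc 0] = 0" using XXe2_0[OF B[of 3 1] alpm]  by (simp; (simp add: field_simps)?)
  have k124: "h [3,0,0,2] = 0" using XXe0_0[OF B[of 3 2] alpm]  by (simp; (simp add: field_simps)?)
  have k125: "h [3,2,2,2] = 0" using XXe2_0[OF B[of 3 2] alpm]  by (simp; (simp add: field_simps)?)
  have k126: "h [3,0,0,3] = 0" using XXe0_0[OF B[of 3 3] alpm]  by (simp; (simp add: field_simps)?)
  have k127: "h [3,2,2,3] = 0" using XXe2_0[OF B[of 3 3] alpm]  by (simp; (simp add: field_simps)?)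
  have k128: "h [0,Suc 0,0,0] = 0" using XXe0_0[OF C[of 0 1] alpm]  by (simp; (simp add: field_simps)?)
  have k129: "h [0,Suc 0,2,2] = 0" using XXe2_0[OF C[of 0 1] alpm]  by (simp; (simp add: field_simps)?)
  have k130: "h [0,Suc 0,3,3] = 0" using XXe3_0[OF C[of 0 1] alpm]  by (simp; (simp add: field_simps)?)
  have k131: "h [0,3,Suc 0,3] = 0" using XXe5_1[OF B[of 0 3] alpm] k130 by (simp; (simp add: field_simps)?)
  have k132: "h [0,Suc 0,3,Suc 0] = 0" using XXe5_1[OF C[of 0 1] alpm] k82 by (simp; (simp add: field_simps)?)
  have k133: "h [0,3,Suc 0,Suc 0] = 0" using XXe5_1[OF B[of 0 1] alpm] k132 by (simp; (simp add: field_simps)?)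
  have k134: "h [0,2,Suc 0,Suc 0] = 0" using XXe1_0[OF C[of 0 2] alpm]  by (simp; (simp add: field_simps)?)
  have k135: "h [2,0,Suc 0,Suc 0] = 0" using XXe4_1[OF A[of 1 1] alpm] k134 by (simp; (simp add: field_simps)?)
  have k136: "h [0,2,3,3] = 0" using XXe3_0[OF C[of 0 2] alpm]  by (simp; (simp add: field_simps)?)
  have k137: "h [2,0,3,3] = 0" using XXe4_1[OF A[of 3 3] alpm] k136 by (simp; (simp add: field_simps)?)
  have k138: "h [0,3,0,0] = 0" using XXe0_0[OF C[of 0 3] alpm]  by (simp; (simp add: field_simps)?)
  have k139: "h [0,3,2,2] = 0" using XXe2_0[OF C[of 0 3] alpm]  by (simp; (simp add: field_simps)?)
  have k140: "h [Suc 0,0,Suc 0,Suc 0] = 0" using XXe1_0[OF C[of 1 0] alpm]  by (simp; (simp add: field_simps)?)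
  have k141: "h [Suc 0,0,2,2] = 0" using XXe2_0[OF C[of 1 0] alpm]  by (simp; (simp add: field_simps)?)
  have k142: "h [2,Suc 0,2,2] = 0" using XXe6_0[OF A[of 2 2] alpm] k141 k125 by (simp; (simp add: field_simps)?)
  have k143: "h [Suc 0,2,0,2] = 0" using XXe4_1[OF B[of 1 2] alpm] k141 by (simp; (simp add: field_simps)?)
  have k144: "h [0,Suc 0,0,2] = 0" using XXe8_0[OF A[of 0 2] alpm] k124 k143 by (simp; (simp add: field_simps)?)
  have k145: "h [2,3,0,2] = 0" using XXe9_0[OF A[of 0 2] alpm] k124 k143 by (simp; (simp add: field_simps)?)
  have k146: "h [0,2,Suc 0,2] = 0" using XXe6_0[OF B[of 0 2] alpm] k144 k139 by (simp; (simp add: field_simps)?)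
  have k147: "h [2,0,Suc 0,2] = 0" using XXe4_1[OF A[of 1 2] alpm] k146 by (simp; (simp add: field_simps)?)
  have k148: "h [0,Suc 0,2,0] = 0" using XXe4_1[OF C[of 0 1] alpm] k144 by (simp; (simp add: field_simps)?)
  have k149: "h [0,2,3,0] = 0" using XXe9_0[OF B[of 0 0] alpm] k138 k148 by (simp; (simp add: field_simps)?)
  have k150: "h [2,0,3,0] = 0" using XXe4_1[OF A[of 3 0] alpm] k149 by (simp; (simp add: field_simps)?)
  have k151: "h [Suc 0,0,3,3] = 0" using XXe3_0[OF C[of 1 0] alpm]  by (simp; (simp add: field_simps)?)
  have k152: "h [Suc 0,0,2,0] = 0" using XXe4_1[OF C[of 1 0] alpm] k100 by (simp; (simp add: field_simps)?)
  have k153: "h [2,Suc 0,2,0] = 0" using XXe6_0[OF A[of 2 0] alpm] k152 k121 by (simp; (simp add: field_simps)?)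
  have k154: "h [0,3,2,0] = 0" using XXe7_0[OF A[of 2 0] alpm] k152 k121 by (simp; (simp add: field_simps)?)
  have k155: "h [0,2,Suc 0,0] = 0" using XXe6_0[OF B[of 0 0] alpm] k128 k154 by (simp; (simp add: field_simps)?)
  have k156: "h [2,0,Suc 0,0] = 0" using XXe4_1[OF A[of 1 0] alpm] k155 by (simp; (simp add: field_simps)?)
  have k157: "h [Suc 0,2,0,0] = 0" using XXe4_1[OF B[of 1 0] alpm] k152 by (simp; (simp add: field_simps)?)
  have k158: "h [2,3,0,0] = 0" using XXe9_0[OF A[of 0 0] alpm] k120 k157 by (simp; (simp add: field_simps)?)
  have k159: "h [0,3,0,2] = 0" using XXe4_0[OF C[of 0 3] alpm] k154 by (simp; (simp add: field_simps)?)
  have k160: "h [0,2,3,2] = 0" using XXe9_0[OF B[of 0 2] alpm] k159 k129 by (simp; (simp add: field_simps)?)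
  have k161: "h [2,0,3,2] = 0" using XXe4_1[OF A[of 3 2] alpm] k160 by (simp; (simp add: field_simps)?)
  have k162: "h [Suc 0,2,Suc 0,Suc 0] = 0" using XXe1_0[OF C[of 1 2] alpm]  by (simp; (simp add: field_simps)?)
  have k163: "h [Suc 0,2,3,3] = 0" using XXe3_0[OF C[of 1 2] alpm]  by (simp; (simp add: field_simps)?)
  have k164: "h [Suc 0,3,0,0] = 0" using XXe0_0[OF C[of 1 3] alpm]  by (simp; (simp add: field_simps)?)
  have k165: "h [3,Suc 0,0,0] = 0" using XXe5_1[OF A[of 0 0] alpm] k164 by (simp; (simp add: field_simps)?)
  have k166: "h [Suc 0,0,Suc 0,0] = 0" using XXe8_0[OF B[of 1 0] alpm] k164 k33 by (simp; (simp add: field_simps)?)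
  have k167: "h [Suc 0,2,3,0] = 0" using XXe9_0[OF B[of 1 0] alpm] k164 k33 by (simp; (simp add: field_simps)?)
  have k168: "h [3,2,Suc 0,0] = 0" using XXe6_0[OF B[of 3 0] alpm] k165 k35 by (simp; (simp add: field_simps)?)
  have k169: "h [0,3,Suc 0,0] = 0" using XXe7_0[OF A[of 1 0] alpm] k166 k168 by (simp; (simp add: field_simps)?)
  have k170: "h [0,Suc 0,3,0] = 0" using XXe5_0[OF B[of 0 0] alpm] k169 by (simp; (simp add: field_simps)?)
  have k171: "h [3,0,3,0] = 0" using XXe7_0[OF B[of 3 0] alpm] k165 k35 by (simp; (simp add: field_simps)?)
  have k172: "h [0,Suc 0,0,Suc 0] = 0" using XXe8_0[OF C[of 0 1] alpm] k170 k76 by (simp; (simp add: field_simps)?)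
  have k173: "h [0,Suc 0,2,3] = 0" using XXe9_0[OF C[of 0 1] alpm] k170 k76 by (simp; (simp add: field_simps)?)
  have k174: "h [0,3,2,Suc 0] = 0" using XXe6_0[OF C[of 0 3] alpm] k169 k79 by (simp; (simp add: field_simps)?)
  have k175: "h [0,3,0,3] = 0" using XXe7_0[OF C[of 0 3] alpm] k169 k79 by (simp; (simp add: field_simps)?)
  have k176: "h [Suc 0,3,2,2] = 0" using XXe2_0[OF C[of 1 3] alpm]  by (simp; (simp add: field_simps)?)
  have k177: "h [3,Suc 0,2,2] = 0" using XXe5_1[OF A[of 2 2] alpm] k176 by (simp; (simp add: field_simps)?)
  have k178: "h [Suc 0,2,Suc 0,2] = 0" using XXe6_0[OF B[of 1 2] alpm] k9 k176 by (simp; (simp add: field_simps)?)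
  have k179: "h [Suc 0,0,3,2] = 0" using XXe7_0[OF B[of 1 2] alpm] k9 k176 by (simp; (simp add: field_simps)?)
  have k180: "h [3,0,Suc 0,2] = 0" using XXe8_0[OF B[of 3 2] alpm] k11 k177 by (simp; (simp add: field_simps)?)
  have k181: "h [2,3,Suc 0,2] = 0" using XXe9_0[OF A[of 1 2] alpm] k180 k178 by (simp; (simp add: field_simps)?)
  have k182: "h [2,Suc 0,3,2] = 0" using XXe5_0[OF B[of 2 2] alpm] k181 by (simp; (simp add: field_simps)?)
  have k183: "h [3,2,3,2] = 0" using XXe9_0[OF B[of 3 2] alpm] k11 k177 by (simp; (simp add: field_simps)?)
  have k184: "h [Suc 0,0,2,Suc 0] = 0" using XXe6_0[OF C[of 1 0] alpm] k166 k179 by (simp; (simp add: field_simps)?)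
  have k185: "h [2,Suc 0,2,Suc 0] = 0" using XXe6_0[OF A[of 2 1] alpm] k184 k123 by (simp; (simp add: field_simps)?)
  have k186: "h [Suc 0,2,0,Suc 0] = 0" using XXe4_1[OF B[of 1 1] alpm] k184 by (simp; (simp add: field_simps)?)
  have k187: "h [2,3,0,Suc 0] = 0" using XXe9_0[OF A[of 0 1] alpm] k122 k186 by (simp; (simp add: field_simps)?)
  have k188: "h [Suc 0,3,2,Suc 0] = 0" using XXe6_0[OF C[of 1 3] alpm] k92 k102 by (simp; (simp add: field_simps)?)
  have k189: "h [3,Suc 0,2,Suc 0] = 0" using XXe5_1[OF A[of 2 1] alpm] k188 by (simp; (simp add: field_simps)?)
  have k190: "h [Suc 0,0,3,Suc 0] = 0" using XXe7_0[OF B[of 1 1] alpm] k5 k188 by (simp; (simp add: field_simps)?)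
  have k191: "h [3,0,Suc 0,Suc 0] = 0" using XXe8_0[OF B[of 3 1] alpm] k7 k189 by (simp; (simp add: field_simps)?)
  have k192: "h [2,3,Suc 0,Suc 0] = 0" using XXe9_0[OF A[of 1 1] alpm] k191 k162 by (simp; (simp add: field_simps)?)
  have k193: "h [2,Suc 0,3,Suc 0] = 0" using XXe5_0[OF B[of 2 1] alpm] k192 by (simp; (simp add: field_simps)?)
  have k194: "h [3,2,3,Suc 0] = 0" using XXe9_0[OF B[of 3 1] alpm] k7 k189 by (simp; (simp add: field_simps)?)
  have k195: "h [Suc 0,0,Suc 0,3] = 0" using XXe5_0[OF C[of 1 0] alpm] k190 by (simp; (simp add: field_simps)?)
  have k196: "h [Suc 0,3,0,3] = 0" using XXe7_0[OF C[of 1 3] alpm] k92 k102 by (simp; (simp add: field_simps)?)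
  have k197: "h [3,Suc 0,0,3] = 0" using XXe5_1[OF A[of 0 3] alpm] k196 by (simp; (simp add: field_simps)?)
  have k198: "h [3,2,Suc 0,3] = 0" using XXe6_0[OF B[of 3 3] alpm] k197 k47 by (simp; (simp add: field_simps)?)
  have k199: "h [3,0,3,3] = 0" using XXe7_0[OF B[of 3 3] alpm] k197 k47 by (simp; (simp add: field_simps)?)
  have k200: "h [Suc 0,3,0,Suc 0] = 0" using XXe8_0[OF C[of 1 3] alpm] k90 k104 by (simp; (simp add: field_simps)?)
  have k201: "h [3,Suc 0,0,Suc 0] = 0" using XXe5_1[OF A[of 0 1] alpm] k200 by (simp; (simp add: field_simps)?)
  have k202: "h [Suc 0,2,3,Suc 0] = 0" using XXe9_0[OF B[of 1 1] alpm] k200 k37 by (simp; (simp add: field_simps)?)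
  have k203: "h [3,2,Suc 0,Suc 0] = 0" using XXe6_0[OF B[of 3 1] alpm] k201 k39 by (simp; (simp add: field_simps)?)
  have k204: "h [3,0,3,Suc 0] = 0" using XXe7_0[OF B[of 3 1] alpm] k201 k39 by (simp; (simp add: field_simps)?)
  have k205: "h [Suc 0,2,Suc 0,3] = 0" using XXe5_0[OF C[of 1 2] alpm] k202 by (simp; (simp add: field_simps)?)
  have k206: "h [Suc 0,3,2,3] = 0" using XXe9_0[OF C[of 1 3] alpm] k90 k104 by (simp; (simp add: field_simps)?)
  have k207: "h [3,Suc 0,2,3] = 0" using XXe5_1[OF A[of 2 3] alpm] k206 by (simp; (simp add: field_simps)?)
  have k208: "h [3,0,Suc 0,3] = 0" using XXe8_0[OF B[of 3 3] alpm] k15 k207 by (simp; (simp add: field_simps)?)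
  have k209: "h [2,3,Suc 0,3] = 0" using XXe9_0[OF A[of 1 3] alpm] k208 k205 by (simp; (simp add: field_simps)?)
  have k210: "h [2,Suc 0,3,3] = 0" using XXe5_0[OF B[of 2 3] alpm] k209 by (simp; (simp add: field_simps)?)
  have k211: "h [3,2,3,3] = 0" using XXe9_0[OF B[of 3 3] alpm] k15 k207 by (simp; (simp add: field_simps)?)
  have k212: "h [2,Suc 0,0,0] = 0" using XXe0_0[OF C[of 2 1] alpm]  by (simp; (simp add: field_simps)?)
  have k213: "h [2,Suc 0,0,2] = 0" using XXe4_0[OF C[of 2 1] alpm] k153 by (simp; (simp add: field_simps)?)
  have k214: "h [2,Suc 0,0,3] = 0" using XXe7_0[OF C[of 2 1] alpm] k112 k182 by (simp; (simp add: field_simps)?)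
  have k215: "h [2,3,2,2] = 0" using XXe2_0[OF C[of 2 3] alpm]  by (simp; (simp add: field_simps)?)
  have k216: "h [2,3,2,0] = 0" using XXe4_1[OF C[of 2 3] alpm] k145 by (simp; (simp add: field_simps)?)
  have k217: "h [2,3,2,3] = 0" using XXe9_0[OF C[of 2 3] alpm] k113 k181 by (simp; (simp add: field_simps)?)
  have k218: "h [3,0,2,2] = 0" using XXe2_0[OF C[of 3 0] alpm]  by (simp; (simp add: field_simps)?)
  have k219: "h [3,2,0,2] = 0" using XXe4_1[OF B[of 3 2] alpm] k218 by (simp; (simp add: field_simps)?)
  have k220: "h [3,0,2,0] = 0" using XXe4_1[OF C[of 3 0] alpm] k124 by (simp; (simp add: field_simps)?)
  have k221: "h [3,2,0,0] = 0" using XXe4_1[OF B[of 3 0] alpm] k220 by (simp; (simp add: field_simps)?)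
  have k222: "h [3,0,2,3] = 0" using XXe9_0[OF C[of 3 0] alpm] k171 k180 by (simp; (simp add: field_simps)?)
  have k223: "h [3,2,0,3] = 0" using XXe4_1[OF B[of 3 3] alpm] k222 by (simp; (simp add: field_simps)?)
  have k224: "h [3,0,Suc 0,0] = ((0) + (-1) * \<i>) * h [Suc 0,2,Suc 0,0]" using XXe8_1[OF A[of 1 0] alpm] k64 by (simp; (simp add: field_simps)?)
  have k225: "h [2,3,Suc 0,0] = ((-1) + (-1) * \<i>) * h [Suc 0,2,Suc 0,0]" using XXe9_0[OF A[of 1 0] alpm] k224 by (simp; (simp add: field_simps)?)
  have k226: "h [2,Suc 0,3,0] = ((-1) + (-1) * \<i>) * h [Suc 0,2,Suc 0,0]" using XXe5_0[OF B[of 2 0] alpm] k225 by (simp; (simp add: field_simps)?)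
  have k227: "h [2,Suc 0,0,Suc 0] = ((0) + (-1) * \<i>) * h [Suc 0,2,Suc 0,0]" using XXe8_0[OF C[of 2 1] alpm] k226 k116 by (simp; (simp add: field_simps)?)
  have k228: "h [2,Suc 0,2,3] = ((-1) + (0) * \<i>) * h [Suc 0,2,Suc 0,0]" using XXe9_0[OF C[of 2 1] alpm] k226 k116 by (simp; (simp add: field_simps)?)
  have k229: "h [2,3,2,Suc 0] = ((1) + (0) * \<i>) * h [Suc 0,2,Suc 0,0]" using XXe6_0[OF C[of 2 3] alpm] k225 k117 by (simp; (simp add: field_simps)?)
  have k230: "h [2,0,3,Suc 0] = ((1) + (-1) * \<i>) * h [Suc 0,2,Suc 0,0]" using XXe7_0[OF B[of 2 1] alpm] k227 k229 by (simp; (simp add: field_simps)?)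
  have k231: "h [0,2,3,Suc 0] = ((1) + (-1) * \<i>) * h [Suc 0,2,Suc 0,0]" using XXe4_0[OF A[of 3 1] alpm] k230 by (simp; (simp add: field_simps)?)
  have k232: "h [0,2,Suc 0,3] = ((1) + (-1) * \<i>) * h [Suc 0,2,Suc 0,0]" using XXe5_0[OF C[of 0 2] alpm] k231 by (simp; (simp add: field_simps)?)
  have k233: "h [2,0,Suc 0,3] = ((1) + (-1) * \<i>) * h [Suc 0,2,Suc 0,0]" using XXe4_1[OF A[of 1 3] alpm] k232 by (simp; (simp add: field_simps)?)
  have k234: "h [2,3,0,3] = ((0) + (-1) * \<i>) * h [Suc 0,2,Suc 0,0]" using XXe7_0[OF C[of 2 3] alpm] k225 k117 by (simp; (simp add: field_simps)?)
  have k235: "h [3,2,0,Suc 0] = ((1) + (1) * \<i>) * h [Suc 0,2,Suc 0,0]" using XXe6_2[OF A[of 0 1] alpm] k227 k94 by (simp; (simp add: field_simps)?)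
  have k236: "h [0,3,0,Suc 0] = ((1) + (0) * \<i>) * h [Suc 0,2,Suc 0,0]" using XXe7_0[OF A[of 0 1] alpm] k94 k235 by (simp; (simp add: field_simps)?)
  have k237: "h [3,0,2,Suc 0] = ((1) + (1) * \<i>) * h [Suc 0,2,Suc 0,0]" using XXe4_0[OF B[of 3 1] alpm] k235 by (simp; (simp add: field_simps)?)
  have k238: "h [0,Suc 0,2,Suc 0] = ((0) + (1) * \<i>) * h [Suc 0,2,Suc 0,0]" using XXe8_0[OF A[of 2 1] alpm] k237 k95 by (simp; (simp add: field_simps)?)
  have k239: "h [Suc 0,2,0,3] = ((1) + (1) * \<i>) * h [Suc 0,2,Suc 0,0]" using XXe9_2[OF A[of 0 3] alpm] k234 k126 by (simp; (simp add: field_simps)?)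
  have k240: "h [0,Suc 0,0,3] = ((-1) + (0) * \<i>) * h [Suc 0,2,Suc 0,0]" using XXe8_0[OF A[of 0 3] alpm] k126 k239 by (simp; (simp add: field_simps)?)
  have k241: "h [Suc 0,0,2,3] = ((1) + (1) * \<i>) * h [Suc 0,2,Suc 0,0]" using XXe4_0[OF B[of 1 3] alpm] k239 by (simp; (simp add: field_simps)?)
  have k242: "h [0,3,2,3] = ((0) + (1) * \<i>) * h [Suc 0,2,Suc 0,0]" using XXe7_0[OF A[of 2 3] alpm] k241 k127 by (simp; (simp add: field_simps)?)
  have k243: "h [Suc 0,3,2,0] = ((-1) + (1) * \<i>) * h [Suc 0,2,Suc 0,0]" using XXe6_2[OF B[of 1 0] alpm] k1 by (simp; (simp add: field_simps)?)
  have k244: "h [3,Suc 0,2,0] = ((-1) + (1) * \<i>) * h [Suc 0,2,Suc 0,0]" using XXe5_1[OF A[of 2 0] alpm] k243 by (simp; (simp add: field_simps)?)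
  have k245: "h [Suc 0,0,3,0] = ((0) + (1) * \<i>) * h [Suc 0,2,Suc 0,0]" using XXe7_0[OF B[of 1 0] alpm] k1 k243 by (simp; (simp add: field_simps)?)
  have k246: "h [3,2,3,0] = ((1) + (0) * \<i>) * h [Suc 0,2,Suc 0,0]" using XXe9_0[OF B[of 3 0] alpm] k3 k244 by (simp; (simp add: field_simps)?)
  have k247: "h [Suc 0,3,0,2] = ((-1) + (1) * \<i>) * h [Suc 0,2,Suc 0,0]" using XXe4_0[OF C[of 1 3] alpm] k243 by (simp; (simp add: field_simps)?)
  have k248: "h [3,Suc 0,0,2] = ((-1) + (1) * \<i>) * h [Suc 0,2,Suc 0,0]" using XXe5_1[OF A[of 0 2] alpm] k247 by (simp; (simp add: field_simps)?)
  have k249: "h [Suc 0,0,Suc 0,2] = ((-1) + (0) * \<i>) * h [Suc 0,2,Suc 0,0]" using XXe8_0[OF B[of 1 2] alpm] k247 k41 by (simp; (simp add: field_simps)?)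
  have k250: "h [Suc 0,2,3,2] = ((0) + (1) * \<i>) * h [Suc 0,2,Suc 0,0]" using XXe9_0[OF B[of 1 2] alpm] k247 k41 by (simp; (simp add: field_simps)?)
  have k251: "h [3,2,Suc 0,2] = ((0) + (-1) * \<i>) * h [Suc 0,2,Suc 0,0]" using XXe6_0[OF B[of 3 2] alpm] k248 k43 by (simp; (simp add: field_simps)?)
  have k252: "h [0,3,Suc 0,2] = ((-1) + (-1) * \<i>) * h [Suc 0,2,Suc 0,0]" using XXe7_0[OF A[of 1 2] alpm] k249 k251 by (simp; (simp add: field_simps)?)
  have k253: "h [0,Suc 0,3,2] = ((-1) + (-1) * \<i>) * h [Suc 0,2,Suc 0,0]" using XXe5_0[OF B[of 0 2] alpm] k252 by (simp; (simp add: field_simps)?)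
  have k254: "h [3,0,3,2] = ((-1) + (0) * \<i>) * h [Suc 0,2,Suc 0,0]" using XXe7_0[OF B[of 3 2] alpm] k248 k43 by (simp; (simp add: field_simps)?)
  show ?thesis unfolding less4 by (simp add: k0 k1 k2 k3 k4 k5 k6 k7 k8 k9 k10 k11 k12 k13 k14 k15 k16 k17 k18 k19 k20 k21 k22 k23 k24 k25 k26 k27 k28 k29 k30 k31 k32 k33 k34 k35 k36 k37 k38 k39 k40 k41 k42 k43 k44 k45 k46 k47 k48 k49 k50 k51 k52 k53 k54 k55 k56 k57 k58 k59 k60 k61 k62 k63 k64 k65 k66 k67 k68 k69 k70 k71 k72 k73 k74 k75 k76 k77 k78 k79 k80 k81 k82 k83 k84 k85 k86 k87 k88 k89 k90 k91 k92 k93 k94 k95 k96 k97 k98 k99 k100 k101 k102 k103 k104 k105 k106 k107 k108 k109 k110 k111 k112 k113 k114 k115 k116 k117 k118 k119 k120 k121 k122 k123 k124 k125 k126 k127 k128 k129 k130 k131 k132 k133 k134 k135 k136 k137 k138 k139 k140 k141 k142 k143 k144 k145 k146 k147 k148 k149 k150 k151 k152 k153 k154 k155 k156 k157 k158 k159 k160 k161 k162 k163 k164 k165 k166 k167 k168 k169 k170 k171 k172 k173 k174 k175 k176 k177 k178 k179 k180 k181 k182 k183 k184 k185 k186 k187 k188 k189 k190 k191 k192 k193 k194 k195 k196 k197 k198 k199 k200 k201 k202 k203 k204 k205 k206 k207 k208 k209 k210 k211 k212 k213 k214 k215 k216 k217 k218 k219 k220 k221 k222 k223 k224 k225 k226 k227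 k228 k229 k230 k231 k232 k233 k234 k235 k236 k237 k238 k239 k240 k241 k242 k243 k244 k245 k246 k247 k248 k249 k250 k251 k252 k253 k254 X0_def X0tab_def; (simp add: field_simps)?)
qed


definition rk :: "nat \<Rightarrow> nat" where "rk a = (if a < 4 then 0 else if a < 6 then 1 else 2)"

fun inv :: "nat list \<Rightarrow> nat" where
  "inv [] = 0"
| "inv (a # r) = length (filter (\<lambda>b. rk b < rk a) r) + inv r"

lemma inv_swap:
  assumes "rk b < rk a" "rk a' = rk a"
  shows "inv (p @ b # a' # q) < inv (p @ a # b # q)"
proof (induction p)
  case Nil
  have "length (filter (\<lambda>x. rk x < rk b) (a' # q)) = length (filter (\<lambda>x. rk x < rk b) q)" using assms by simp
  moreover have "length (filter (\<lambda>x. rk x < rk a) (b # q)) = Suc (length (filter (\<lambda>x. rk x < rk a) q))" using assms by simp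
  ultimately show ?case using assms by simp
next
  case (Cons c p)
  have "length (filter (\<lambda>x. rk x < rk c) (p @ b # a' # q)) = length (filter (\<lambda>x. rk x < rk c) (p @ a # b # q))"
    using assms by simp
  then show ?case using Cons by simp
qed

lemma sorted_adj: "(\<And>p a b q. xs = p @ a # b # q \<Longrightarrow> rk a \<le> rk b) \<Longrightarrow> sorted (map rk xs)"
proof (induction xs)
  case Nil then show ?case by simp
next
  case (Cons x xs)
  have "sorted (map rk xs)"
  proof (rule Cons.IH)
    fix p a b q assume "xs = p @ a # b # q"
    then have "x # xs = (x # p) @ a # b # q" by simp
    then show "rk a \<le> rk b" using Cons.prems by blast
  qed
  moreover have "rk x \<le> rk (hd xs)" if "xs \<noteq> []"
    using Cons.prems[of "[]" x "hd xs" "tl xs"] that by simp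
  ultimately show ?case by (cases xs) auto
qed

lemma sorted_blocks: "sorted (map rk xs) \<Longrightarrow>
  xs = filter (\<lambda>a. rk a = 0) xs @ filter (\<lambda>a. rk a = 1) xs @ filter (\<lambda>a. rk a = 2) xs"
proof (induction xs)
  case Nil then show ?case by simp
next
  case (Cons x xs)
  have s: "sorted (map rk xs)" and ge: "\<forall>y\<in>set xs. rk x \<le> rk y" using Cons.prems by auto
  have IH: "xs = filter (\<lambda>a. rk a = 0) xs @ filter (\<lambda>a. rk a = 1) xs @ filter (\<lambda>a. rk a = 2) xs"
    using Cons.IH[OF s] .
  have r: "rk x = 0 \<or> rk x = 1 \<or> rk x = 2" by (auto simp: rk_def)
  show ?case
  proof -
    consider "rk x = 0" | "rk x = 1" | "rk x = 2" using r by (elim disjE) auto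
    then show ?thesis
    proof cases
      case 1 then show ?thesis using IH by simp
    next
      case 2
      then have "filter (\<lambda>a. rk a = 0) xs = []" using ge by (auto simp: filter_empty_conv)
      then show ?thesis using IH 2 by simp
    next
      case 3
      then have "filter (\<lambda>a. rk a = 0) xs = []" "filter (\<lambda>a. rk a = 1) xs = []" using ge by (auto simp: filter_empty_conv)
      then show ?thesis using IH 3 by simp
    qed
  qed
qed

context wz begin

lemma Sp_out: "Sp al be ga u1 u2 u3 u4 w \<Longrightarrow> xs \<notin> words 8 \<Longrightarrow> w xs = 0"
  unfolding Sp_def by blast

lemma Sp_EQ: "Sp al be ga u1 u2 u3 u4 w \<Longrightarrow> set p \<subseteq> {..<8} \<Longrightarrow> set q \<subseteq> {..<8} \<Longrightarrow> length p + length q = 6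
   \<Longrightarrow> EQ al be ga u1 u2 u3 u4 (\<lambda>x y. w (p @ [x,y] @ q))"
  unfolding Sp_def by blast

lemma Sp_XX: assumes "Sp al be ga u1 u2 u3 u4 w" "length p + length q = 6"
  shows "XXeq al (\<lambda>x y. w (p @ [x,y] @ q))"
proof (cases "set p \<subseteq> {..<8} \<and> set q \<subseteq> {..<8}")
  case True then show ?thesis using Sp_EQ[OF assms(1)] assms(2) by (simp add: EQ_def)
next
  case False
  then have "\<And>x y. w (p @ [x,y] @ q) = 0" by (intro Sp_out[OF assms(1)]) (auto simp: words_def)
  then show ?thesis by (simp add: XXeq_zero)
qed

lemma Sp_O: assumes "Sp al be ga u1 u2 u3 u4 w" "length p + length q = 6"
  shows "OEq be ga u1 u2 u3 u4 (\<lambda>x y. w (p @ [x,y] @ q))"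
proof (cases "set p \<subseteq> {..<8} \<and> set q \<subseteq> {..<8}")
  case True then show ?thesis using Sp_EQ[OF assms(1)] assms(2) by (simp add: EQ_def)
next
  case False
  then have "\<And>x y. w (p @ [x,y] @ q) = 0" by (intro Sp_out[OF assms(1)]) (auto simp: words_def)
  then show ?thesis by (simp add: OEq_def)
qed

lemma XU: assumes w: "Sp al be ga u1 u2 u3 u4 w" and l: "length P + length R = 4"
    and x: "a < 4" "b < 4" "c < 4" "d < 4"
  shows "w (P @ [a,b,c,d] @ R) = X0 al [a,b,c,d] * w (P @ [1,2,1,0] @ R)"
proof -
  define h where "h xs = w (P @ xs @ R)" for xs
  have A: "XXeq al (\<lambda>x y. h [x,y,a',b'])" for a' b'
    using Sp_XX[OF w, of P "[a',b'] @ R"] l by (simp add: h_def)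
  have B: "XXeq al (\<lambda>x y. h [a',x,y,b'])" for a' b'
    using Sp_XX[OF w, of "P @ [a']" "[b'] @ R"] l by (simp add: h_def)
  have C: "XXeq al (\<lambda>x y. h [a',b',x,y])" for a' b'
    using Sp_XX[OF w, of "P @ [a',b']" R] l by (simp add: h_def)
  have "al = 1 \<or> al = -1" using al by auto
  then have "h [a,b,c,d] = X0 al [a,b,c,d] * h [1,2,1,0]"
  proof
    assume a1: "al = 1"
    show ?thesis using XU_core_p[of h] A B C x unfolding a1 by blast
  next
    assume a1: "al = -1"
    show ?thesis using XU_core_m[of h] A B C x unfolding a1 by blast
  qed
  then show ?thesis by (simp add: h_def)
qed

end


context wz begin

lemma W5: assumes w: "Sp al be ga u1 u2 u3 u4 w" and l: "length R = 3"
    and x: "x1 < 4" "x2 < 4" "x3 < 4" "x4 < 4" "x5 < 4"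
  shows "w ([x1,x2,x3,x4,x5] @ R) = 0"
proof -
  have e1: "w ([] @ [x1,x2,x3,x4] @ (x5 # R)) = X0 al [x1,x2,x3,x4] * w ([] @ [1,2,1,0] @ (x5 # R))"
    by (rule XU[OF w]) (use l x in auto)
  have e2: "w ([1] @ [2,1,0,x5] @ R) = X0 al [2,1,0,x5] * w ([1] @ [1,2,1,0] @ R)"
    by (rule XU[OF w]) (use l x in auto)
  have e3: "w ([] @ [1,1] @ ([2,1,0] @ R)) = 0"
    using Sp_XX[OF w, of "[]" "[2,1,0] @ R"] l unfolding XXeq_def by simp
  show ?thesis using e1 e2 e3 by simp
qed

lemma Y3: assumes w: "Sp al be ga u1 u2 u3 u4 w" and l: "length P + length Q = 5"
    and abc: "a \<in> {4,5}" "b \<in> {4,5}" "c \<in> {4,5}"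
  shows "w (P @ a # b # c # Q) = 0"
proof -
  have o1: "OEq be ga u1 u2 u3 u4 (\<lambda>x y. w (P @ [x,y] @ (z # Q)))" for z
    using Sp_O[OF w, of P "z # Q"] l by simp
  have o2: "OEq be ga u1 u2 u3 u4 (\<lambda>x y. w ((P @ [z]) @ [x,y] @ Q))" for z
    using Sp_O[OF w, of "P @ [z]" Q] l by simp
  have d1: "w (P @ x # x # z # Q) = 0" if "x \<in> {4,5}" for x z using o1[of z] that unfolding OEq_def by auto
  have d2: "w (P @ z # x # x # Q) = 0" if "x \<in> {4,5}" for x z using o2[of z] that unfolding OEq_def by auto
  have s1: "w (P @ 5 # 4 # z # Q) = - be * w (P @ 4 # 5 # z # Q)" for z using o1[of z] unfolding OEq_def by simp
  have s2: "w (P @ z # 5 # 4 # Q) = - be * w (P @ z # 4 # 5 # Q)" for z using o2[of z] unfolding OEq_def by simp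
  show ?thesis using abc d1 d2 s1 s2 by auto
qed

lemma Z3: assumes w: "Sp al be ga u1 u2 u3 u4 w" and l: "length P + length Q = 5"
    and abc: "a \<in> {6,7}" "b \<in> {6,7}" "c \<in> {6,7}"
  shows "w (P @ a # b # c # Q) = 0"
proof -
  have o1: "OEq be ga u1 u2 u3 u4 (\<lambda>x y. w (P @ [x,y] @ (z # Q)))" for z
    using Sp_O[OF w, of P "z # Q"] l by simp
  have o2: "OEq be ga u1 u2 u3 u4 (\<lambda>x y. w ((P @ [z]) @ [x,y] @ Q))" for z
    using Sp_O[OF w, of "P @ [z]" Q] l by simp
  have d1: "w (P @ x # x # z # Q) = 0" if "x \<in> {6,7}" for x z using o1[of z] that unfolding OEq_def by auto
  have d2: "w (P @ z # x # x # Q) = 0" if "x \<in> {6,7}" for x z using o2[of z] that unfolding OEq_def by auto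
  have s1: "w (P @ 7 # 6 # z # Q) = - ga * w (P @ 6 # 7 # z # Q)" for z using o1[of z] unfolding OEq_def by simp
  have s2: "w (P @ z # 7 # 6 # Q) = - ga * w (P @ z # 6 # 7 # Q)" for z using o2[of z] unfolding OEq_def by simp
  show ?thesis using abc d1 d2 s1 s2 by auto
qed

lemma swap_vanish: assumes w: "Sp al be ga u1 u2 u3 u4 w" and l: "length p + length q = 6"
    and ab: "a < 8" "b < 8" "rk b < rk a"
  shows "\<exists>a'. a' < 8 \<and> rk a' = rk a \<and> (w (p @ b # a' # q) = 0 \<longrightarrow> w (p @ a # b # q) = 0)"
proof -
  have o: "OEq be ga u1 u2 u3 u4 (\<lambda>x y. w (p @ [x,y] @ q))" using Sp_O[OF w l] .
  have c: "(a \<in> {4,5,6,7} \<and> b < 4) \<or> (a \<in> {6,7} \<and> b \<in> {4,5})" using ab by (auto simp: rk_def split: if_splits)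
  show ?thesis
  proof (cases "a \<in> {4,5,6,7} \<and> b < 4")
    case True
    have "w (p @ b # flip a # q) = 0 \<longrightarrow> w (p @ a # b # q) = 0"
      using True o u3 u4 unfolding OEq_def less4 by (auto simp: flip_def)
    moreover have "flip a < 8" "rk (flip a) = rk a" using True by (auto simp: flip_def rk_def)
    ultimately show ?thesis by blast
  next
    case False
    then have "a \<in> {6,7} \<and> b \<in> {4,5}" using c by blast
    then have "w (p @ b # a # q) = 0 \<longrightarrow> w (p @ a # b # q) = 0"
      using o u1 u2 unfolding OEq_def by auto
    then show ?thesis using ab by blast
  qed
qed

lemma len3_obtain: "3 \<le> length l \<Longrightarrow> \<exists>a b c r. l = a # b # c # r"
  by (cases l; cases "tl l"; cases "tl (tl l)") auto

lemma base_b0: assumes w: "Sp al be ga u1 u2 u3 u4 w" and z: "w [1,2,1,0,4,5,6,7] = 0"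
    and y: "y1 \<in> {4,5}" "y2 \<in> {4,5}" and zz: "z1 \<in> {6,7}" "z2 \<in> {6,7}"
  shows "w [1,2,1,0,y1,y2,z1,z2] = 0"
proof -
  have oy: "OEq be ga u1 u2 u3 u4 (\<lambda>x y. w ([1,2,1,0] @ [x,y] @ [z1,z2]))" using Sp_O[OF w, of "[1,2,1,0]" "[z1,z2]"] by simp
  have oz: "OEq be ga u1 u2 u3 u4 (\<lambda>x y. w ([1,2,1,0,4,5] @ [x,y] @ []))" using Sp_O[OF w, of "[1,2,1,0,4,5]" "[]"] by simp
  have zz0: "w [1,2,1,0,4,5,z1,z2] = 0" using oz zz z unfolding OEq_def by auto
  have yz: "w [1,2,1,0,4,5,z1,z2] = 0 \<Longrightarrow> w [1,2,1,0,y1,y2,z1,z2] = 0" using oy y unfolding OEq_def by auto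
  show ?thesis using yz zz0 by blast
qed

lemma inj_b0: assumes w: "Sp al be ga u1 u2 u3 u4 w" and z: "w [1,2,1,0,4,5,6,7] = 0"
  shows "w xs = 0"
proof (induction "inv xs" arbitrary: xs rule: less_induct)
  case less
  show ?case
  proof (cases "xs \<in> words 8")
    case False then show ?thesis using Sp_out[OF w] by blast
  next
    case xw: True
    then have xl: "length xs = 8" and xs8: "set xs \<subseteq> {..<8}" by (auto simp: words_def)
    show ?thesis
    proof (cases "\<exists>p a b q. xs = p @ a # b # q \<and> rk b < rk a")
      case True
      then obtain p a b q where d: "xs = p @ a # b # q" "rk b < rk a" by blast
      have ab: "a < 8" "b < 8" using xs8 d by auto
      have l: "length p + length q = 6" using xl d by simp
      obtain a' where a': "a' < 8" "rk a' = rk a" "w (p @ b # a' # q) = 0 \<longrightarrow> w (p @ a # b # q) = 0"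
        using swap_vanish[OF w l ab(1,2) d(2)] by blast
      have "inv (p @ b # a' # q) < inv xs" using inv_swap[OF d(2) a'(2)] d(1) by simp
      then have "w (p @ b # a' # q) = 0" by (rule less.hyps)
      then show ?thesis using a'(3) d(1) by simp
    next
      case False
      then have "sorted (map rk xs)" by (intro sorted_adj) (metis not_le)
      note bl = sorted_blocks[OF this]
      define X where "X = filter (\<lambda>a. rk a = 0) xs"
      define Y where "Y = filter (\<lambda>a. rk a = 1) xs"
      define Z where "Z = filter (\<lambda>a. rk a = 2) xs"
      have xyz: "xs = X @ Y @ Z" using bl by (simp add: X_def Y_def Z_def)
      have Xs: "set X \<subseteq> {..<4}" using xs8 by (auto simp: X_def rk_def split: if_splits)
      have Ys: "set Y \<subseteq> {4,5}" using xs8 by (auto simp: Y_def rk_def split: if_splits)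
      have Zs: "set Z \<subseteq> {6,7}" using xs8 by (auto simp: Z_def rk_def split: if_splits)
      have len: "length X + length Y + length Z = 8" using xl xyz by (metis length_append add.assoc)
      show ?thesis
      proof (cases "3 \<le> length Y")
        case True
        then obtain a b c r where Yd: "Y = a # b # c # r" using len3_obtain by blast
        have "w (X @ a # b # c # (r @ Z)) = 0"
          by (rule Y3[OF w]) (use len Yd Ys in auto)
        then show ?thesis using xyz Yd by simp
      next
        case Y2: False
        show ?thesis
        proof (cases "3 \<le> length Z")
          case True
          then obtain a b c r where Zd: "Z = a # b # c # r" using len3_obtain by blast
          have "w ((X @ Y) @ a # b # c # r) = 0"
            by (rule Z3[OF w]) (use len Zd Zs in auto)
          then show ?thesis using xyz Zd by simp
        next
          case Z2: False
          show ?thesis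
          proof (cases "5 \<le> length X")
            case True
            then obtain x1 x2 x3 x4 x5 r where Xd: "X = x1 # x2 # x3 # x4 # x5 # r"
              by (cases X; cases "tl X"; cases "tl (tl X)"; cases "tl (tl (tl X))"; cases "tl (tl (tl (tl X)))") auto
            have "w ([x1,x2,x3,x4,x5] @ (r @ Y @ Z)) = 0"
              by (rule W5[OF w]) (use len Xd Xs in auto)
            then show ?thesis using xyz Xd by simp
          next
            case X4: False
            have lx: "length X = 4" and ly: "length Y = 2" and lz: "length Z = 2" using len Y2 Z2 X4 by auto
            obtain x1 x2 x3 x4 where Xd: "X = [x1,x2,x3,x4]" using lx
              by (cases X; cases "tl X"; cases "tl (tl X)"; cases "tl (tl (tl X))") auto
            obtain y1 y2 where Yd: "Y = [y1,y2]" using ly by (cases Y; cases "tl Y") auto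
            obtain z1 z2 where Zd: "Z = [z1,z2]" using lz by (cases Z; cases "tl Z") auto
            have "w ([] @ [x1,x2,x3,x4] @ [y1,y2,z1,z2]) = X0 al [x1,x2,x3,x4] * w ([] @ [1,2,1,0] @ [y1,y2,z1,z2])"
              by (rule XU[OF w]) (use Xd Xs in auto)
            moreover have "w [1,2,1,0,y1,y2,z1,z2] = 0"
              by (rule base_b0[OF w z]) (use Yd Ys Zd Zs in auto)
            ultimately show ?thesis using xyz Xd Yd Zd by simp
          qed
        qed
      qed
    qed
  qed
qed

end


lemma omega_mult: "omega * omega = \<i>" using omega_sq by (simp add: power2_eq_square)
lemma phi_homog: "phi_act g (\<lambda>xs. c * f xs) = (\<lambda>xs. c * phi_act g f xs)"
  by (simp add: phi_act_def fun_eq_iff)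
context wz begin
abbreviation "b0 \<equiv> [1,2,1,0,4,5,6,7::nat]"
lemma Sp_zero: "Sp al be ga u1 u2 u3 u4 (\<lambda>_. 0)"
  unfolding Sp_def EQ_def XXeq_def OEq_def by simp
lemma Sp_scale: assumes "Sp al be ga u1 u2 u3 u4 w" shows "Sp al be ga u1 u2 u3 u4 (\<lambda>xs. c * w xs)"
  using Sp_lin[OF Sp_zero assms, of "-c"] by simp
lemma S_span: assumes "Sp al be ga u1 u2 u3 u4 w" shows "w = (\<lambda>xs. w b0 * w0 xs)"
proof -
  have s: "Sp al be ga u1 u2 u3 u4 (\<lambda>xs. w xs - w b0 * w0 xs)" by (rule Sp_lin[OF assms w0_Sp])
  have h: "(\<lambda>xs. w xs - w b0 * w0 xs) b0 = 0" using w0_b0 by simp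
  have e: "(\<lambda>xs. w xs - w b0 * w0 xs) xs' = 0" for xs'
    using inj_b0[OF s h] .
  show ?thesis
  proof
    fix xs show "w xs = w b0 * w0 xs" using e[of xs] by simp
  qed
qed

lemma eigen:
  assumes T1: "\<And>f. Sp al be ga u1 u2 u3 u4 f \<Longrightarrow> Sp al be ga u1 u2 u3 u4 (T f)"
    and T2: "\<And>c f. T (\<lambda>xs. c * f xs) = (\<lambda>xs. c * T f xs)"
    and w: "Sp al be ga u1 u2 u3 u4 w"
  shows "T w = (\<lambda>xs. T w0 b0 * w xs)"
proof -
  have c: "w = (\<lambda>xs. w b0 * w0 xs)" by (rule S_span[OF w])
  have a: "T w = (\<lambda>xs. w b0 * T w0 xs)"
  proof -
    have "T w = T (\<lambda>xs. w b0 * w0 xs)" using c by (rule arg_cong)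
    also have "\<dots> = (\<lambda>xs. w b0 * T w0 xs)" by (rule T2)
    finally show ?thesis .
  qed
  have b: "T w0 = (\<lambda>xs. T w0 b0 * w0 xs)" by (rule S_span[OF T1[OF w0_Sp]])
  show ?thesis
  proof
    fix xs
    have "T w xs = w b0 * (T w0 b0 * w0 xs)" using a b by (metis)
    also have "\<dots> = T w0 b0 * (w b0 * w0 xs)" by simp
    also have "w b0 * w0 xs = w xs" using c by metis
    finally show "T w xs = T w0 b0 * w xs" .
  qed
qed

end

lemma tact_homog: "tact M (\<lambda>xs. c * f xs) = (\<lambda>xs. c * tact M f xs)"
  unfolding tact_def by (simp add: fun_eq_iff sum_distrib_left mult.assoc)

lemma funpow_homog:
  fixes T :: "(nat list \<Rightarrow> complex) \<Rightarrow> (nat list \<Rightarrow> complex)"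
  assumes "\<And>c f. T (\<lambda>xs. c * f xs) = (\<lambda>xs. c * T f xs)"
  shows "(T ^^ n) (\<lambda>xs. c * f xs) = (\<lambda>xs. c * (T ^^ n) f xs)"
proof (induction n)
  case 0 then show ?case by (simp only: funpow.simps id_def)
next
  case (Suc n)
  have "(T ^^ Suc n) (\<lambda>xs. c * f xs) = T ((T ^^ n) (\<lambda>xs. c * f xs))" by simp
  also have "\<dots> = T (\<lambda>xs. c * (T ^^ n) f xs)" using Suc by simp
  also have "\<dots> = (\<lambda>xs. c * T ((T ^^ n) f) xs)" by (rule assms)
  finally show ?case by simp
qed

context wz begin

lemma r_val: "tact Mr w0 b0 = 1"
proof -
  have p: "omega ^ 2 * omega ^ 6 * (omega ^ 7 * omega) = 1"
  proof -
    have "omega ^ 2 * omega ^ 6 * (omega ^ 7 * omega) = omega ^ 16" by (simp flip: power_add power_Suc2)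
    also have "\<dots> = (omega ^ 8) ^ 2" by (simp flip: power_mult)
    finally show ?thesis by (simp add: omega_pows)
  qed
  have "tact Mr w0 b0 = w0 [0,1,0,3,4,5,6,7] * (- (omega ^ 2 * omega ^ 6 * (omega ^ 7 * omega)))"
    by (simp add: tact_Mr words_def pr_def Mr_def)
  also have "w0 [0,1,0,3,4,5,6,7] = -1"
    by (simp add: w0_def words_def isX_def isY_def isZ_def X0_def X0tab_def Yv_def Zv_def par_def kap_def mu_def)
  finally show ?thesis using p by simp
qed

lemma s_val: "tact Ms w0 b0 = be * ga"
proof -
  have "tact Ms w0 b0 = w0 [2,1,2,3,5,4,7,6] * (- (\<i> * \<i> * (\<i> * \<i>)))"
    by (simp add: tact_Ms words_def ps_def Ms_def)
  also have "w0 [2,1,2,3,5,4,7,6] = - (be * ga)"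
    by (simp add: w0_def words_def isX_def isY_def isZ_def X0_def X0tab_def Yv_def Zv_def par_def kap_def mu_def)
  finally show ?thesis by simp
qed

lemma grade_b0: "word_grade b0 = (0,0)"
  by (simp add: word_grade_def gen_grade_def d8_e_def)

lemma phi_val: "phi_act g w0 b0 = (if g = (0,0) then 1 else 0)"
  using grade_b0 w0_b0 unfolding phi_act_def by simp

lemma r_eig: "Sp al be ga u1 u2 u3 u4 w \<Longrightarrow> tact Mr w = w"
  using eigen[of "tact Mr" w] Sp_r[OF _ al be ga] tact_homog r_val by simp

lemma s_eig: "Sp al be ga u1 u2 u3 u4 w \<Longrightarrow> tact Ms w = (\<lambda>xs. (be * ga) * w xs)"
  using eigen[of "tact Ms" w] Sp_s[OF _ al be ga] tact_homog s_val by simp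

lemma phi_eig: "Sp al be ga u1 u2 u3 u4 w \<Longrightarrow> phi_act g w = (\<lambda>xs. (if g = (0,0) then 1 else 0) * w xs)"
  using eigen[of "phi_act g" w] Sp_phi phi_homog phi_val by simp

lemma r_pow: "Sp al be ga u1 u2 u3 u4 w \<Longrightarrow> (tact Mr ^^ n) w = w"
  by (induction n) (simp_all add: r_eig)

lemma s_pow: "Sp al be ga u1 u2 u3 u4 w \<Longrightarrow> (tact Ms ^^ n) w = (\<lambda>xs. (be * ga) ^ n * w xs)"
proof (induction n)
  case 0 then show ?case by simp
next
  case (Suc n)
  have "(tact Ms ^^ Suc n) w = tact Ms ((tact Ms ^^ n) w)" by simp
  also have "\<dots> = tact Ms (\<lambda>xs. (be * ga) ^ n * w xs)" using Suc by simp
  also have "\<dots> = (\<lambda>xs. (be * ga) ^ n * tact Ms w xs)" by (rule tact_homog)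
  also have "\<dots> = (\<lambda>xs. (be * ga) ^ Suc n * w xs)" using s_eig[OF Suc.prems] by (simp add: fun_eq_iff)
  finally show ?case .
qed

lemma DG_eig: assumes w: "Sp al be ga u1 u2 u3 u4 w"
  shows "DG_act (g,(a,b)) w = (\<lambda>xs. ((be * ga) ^ b * (if g = (0,0) then 1 else 0)) * w xs)"
proof -
  let ?c = "if g = (0,0) then (1::complex) else 0"
  have p: "phi_act g w = (\<lambda>xs. ?c * w xs)" by (rule phi_eig[OF w])
  have sp: "Sp al be ga u1 u2 u3 u4 (\<lambda>xs. ?c * w xs)" by (rule Sp_scale[OF w])
  have "DG_act (g,(a,b)) w = (tact Ms ^^ b) ((tact Mr ^^ a) (\<lambda>xs. ?c * w xs))"
    by (simp add: DG_act_def p)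
  also have "\<dots> = (tact Ms ^^ b) (\<lambda>xs. ?c * w xs)" by (simp add: r_pow[OF sp])
  also have "\<dots> = (\<lambda>xs. (be * ga) ^ b * (?c * w xs))" by (rule s_pow[OF sp])
  finally show ?thesis by (simp add: fun_eq_iff)
qed

lemma hdet_val: "hdet al be ga u1 u2 u3 u4 (g,(a,b)) = (be * ga) ^ b * (if g = (0,0) then 1 else 0)"
  unfolding hdet_def
proof (rule the_equality)
  show "\<forall>w\<in>superpot_space 8 (rels al be ga u1 u2 u3 u4).
      DG_act (g, a, b) w = (\<lambda>xs. (be * ga) ^ b * (if g = (0, 0) then 1 else 0) * w xs)"
    using DG_eig S_iff by blast
next
  fix c assume h: "\<forall>w\<in>superpot_space 8 (rels al be ga u1 u2 u3 u4). DG_act (g, a, b) w = (\<lambda>xs. c * w xs)"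
  have w0S: "w0 \<in> superpot_space 8 (rels al be ga u1 u2 u3 u4)" using w0_Sp S_iff by blast
  have "DG_act (g, a, b) w0 = (\<lambda>xs. c * w0 xs)" using h w0S by blast
  moreover have "DG_act (g, a, b) w0 = (\<lambda>xs. ((be * ga) ^ b * (if g = (0,0) then 1 else 0)) * w0 xs)"
    by (rule DG_eig[OF w0_Sp])
  ultimately have "c * w0 b0 = ((be * ga) ^ b * (if g = (0,0) then 1 else 0)) * w0 b0" by metis
  then show "c = (be * ga) ^ b * (if g = (0,0) then 1 else 0)" using w0_b0 by simp
qed

end

theorem mainTheorem15:
  fixes \<alpha> \<beta> \<gamma> u1 u2 u3 u4 :: complex
  assumes "\<alpha> \<in> {1, -1}" and "\<beta> \<in> {1, -1}" and "\<gamma> \<in> {1, -1}"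
    and "u1 \<noteq> 0" and "u2 \<noteq> 0" and "u3 \<noteq> 0" and "u4 \<noteq> 0"
  shows "(\<forall>g\<in>D8. hdet \<alpha> \<beta> \<gamma> u1 u2 u3 u4 (g, d8_e) = (if g = d8_e then 1 else 0))
    \<and> hdet \<alpha> \<beta> \<gamma> u1 u2 u3 u4 (d8_e, d8_r) = 1
    \<and> hdet \<alpha> \<beta> \<gamma> u1 u2 u3 u4 (d8_e, d8_s) = \<beta> * \<gamma>
    \<and> ((\<forall>g\<in>D8. \<forall>h\<in>D8. hdet \<alpha> \<beta> \<gamma> u1 u2 u3 u4 (g, h) = (if g = d8_e then 1 else 0))
        \<longleftrightarrow> \<beta> = \<gamma>)"
proof -
  interpret wz \<alpha> \<beta> \<gamma> u1 u2 u3 u4 by unfold_locales (use assms in auto)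
  have hv: "hdet \<alpha> \<beta> \<gamma> u1 u2 u3 u4 (g, h) = (\<beta> * \<gamma>) ^ snd h * (if g = d8_e then 1 else 0)" for g h
    using hdet_val[of g "fst h" "snd h"] by (simp add: d8_e_def)
  have bg: "\<beta> * \<gamma> = 1 \<longleftrightarrow> \<beta> = \<gamma>" using assms(2,3) by auto
  have sD: "d8_s \<in> D8" "d8_e \<in> D8" by (auto simp: d8_s_def d8_e_def D8_def)
  show ?thesis
  proof (intro conjI)
    show "\<forall>g\<in>D8. hdet \<alpha> \<beta> \<gamma> u1 u2 u3 u4 (g, d8_e) = (if g = d8_e then 1 else 0)"
      by (simp add: hv d8_e_def)
    show "hdet \<alpha> \<beta> \<gamma> u1 u2 u3 u4 (d8_e, d8_r) = 1" by (simp add: hv d8_r_def)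
    show "hdet \<alpha> \<beta> \<gamma> u1 u2 u3 u4 (d8_e, d8_s) = \<beta> * \<gamma>" by (simp add: hv d8_s_def)
    show "(\<forall>g\<in>D8. \<forall>h\<in>D8. hdet \<alpha> \<beta> \<gamma> u1 u2 u3 u4 (g, h) = (if g = d8_e then 1 else 0)) \<longleftrightarrow> \<beta> = \<gamma>"
    proof
      assume "\<forall>g\<in>D8. \<forall>h\<in>D8. hdet \<alpha> \<beta> \<gamma> u1 u2 u3 u4 (g, h) = (if g = d8_e then 1 else 0)"
      then have "hdet \<alpha> \<beta> \<gamma> u1 u2 u3 u4 (d8_e, d8_s) = 1" using sD by simp
      then have "\<beta> * \<gamma> = 1" by (simp add: hv d8_s_def)
      then show "\<beta> = \<gamma>" using bg by simp
    next
      assume "\<beta> = \<gamma>"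
      then have "\<beta> * \<gamma> = 1" using bg by simp
      then show "\<forall>g\<in>D8. \<forall>h\<in>D8. hdet \<alpha> \<beta> \<gamma> u1 u2 u3 u4 (g, h) = (if g = d8_e then 1 else 0)"
        by (simp add: hv)
    qed
  qed
qed


end
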